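(* Let $k$ be a field of characteristic $0$ or of characteristic greater than $7$. Let $E_1=\sum_{\nu=0}^{6}\frac{\beta^\nu}{\nu!}$ and $E_3=\sum_{\nu=0}^6\frac{3^\nu\beta^\nu}{\nu!}$ in $k[\beta]$. Then the $k$-algebra $$\Lambda=kQ/\big(\beta^7,\ \alpha\gamma,\ \alpha E_1\gamma,\ \alpha E_3\gamma\big)$$ has dimension $27$, has ordinary quiver $Q$ (which contains the loop $\beta$), and satisfies $\mathrm{HH}^1(\Lambda)=0$.
   Context: $Q$ is the quiver with vertices $1,2,3$ and arrows $\alpha\colon 2\to1$, $\beta\colon 2\to 2$, $\gamma\colon 3\to 2$; $kQ$ is generated by pairwise orthogonal idempotents $e_1,e_2,e_3$ (sum $1$) and $\alpha,\beta,\gamma$ with $e_1\alpha=\alpha=\alpha e_2$, $e_2\beta=\beta=\beta e_2$, $e_3\gamma=\gamma=\gamma e_2$, $\gamma\alpha=\beta\alpha=\gamma\beta=0$; for $v=\sum_iv_i\beta^i\in k[\beta]$, $\alpha v\gamma=\sum_iv_i\alpha\beta^i\gamma$. The displayed ideal is the two-sided ideal generated by the listed elements. $\mathrm{HH}^1(\Lambda)=\mathrm{Der}_k(\Lambda,\Lambda)/\mathrm{Inn}(\Lambda)$. *)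

theory Defs
  imports Main
begin

datatype vert = V1 | V2 | V3
datatype arr = Alpha | Beta | Gamma

fun arr_src :: "arr \<Rightarrow> vert" where
  "arr_src Alpha = V2" | "arr_src Beta = V2" | "arr_src Gamma = V3"
fun arr_tgt :: "arr \<Rightarrow> vert" where
  "arr_tgt Alpha = V1" | "arr_tgt Beta = V2" | "arr_tgt Gamma = V2"

text \<open>A nontrivial path is a list of arrows written as in the paper,
  i.e. composition from right to left: [a1,...,an] means first an, ..., last a1
  (so alpha beta^i gamma goes 3 -> 2 -> ... -> 2 -> 1).\<close>
datatype path = Triv vert | Nontriv "arr list"

fun valid_path :: "path \<Rightarrow> bool" where
  "valid_path (Triv v) = True"
| "valid_path (Nontriv xs) =
     (xs \<noteq> [] \<and> (\<forall>i. Suc i < length xs \<longrightarrow> arr_src (xs ! i) = arr_tgt (xs ! Suc i)))"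

fun path_src :: "path \<Rightarrow> vert" where
  "path_src (Triv v) = v" | "path_src (Nontriv xs) = arr_src (last xs)"
fun path_tgt :: "path \<Rightarrow> vert" where
  "path_tgt (Triv v) = v" | "path_tgt (Nontriv xs) = arr_tgt (hd xs)"

fun path_len :: "path \<Rightarrow> nat" where
  "path_len (Triv v) = 0" | "path_len (Nontriv xs) = length xs"

text \<open>Product of paths p q (q first, then p); None means the product is 0.\<close>
definition path_mult :: "path \<Rightarrow> path \<Rightarrow> path option" where
  "path_mult p q =
     (if path_src p \<noteq> path_tgt q then None
      else (case (p, q) of
              (Triv v, _) \<Rightarrow> Some q
            | (_, Triv w) \<Rightarrow> Some p
            | (Nontriv xs, Nontriv ys) \<Rightarrow> Some (Nontriv (xs @ ys))))"

text \<open>Elements of kQ: finitely supported k-valued functions on valid paths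
  (coefficients with respect to the path basis).\<close>
definition supp :: "(path \<Rightarrow> 'k::zero) \<Rightarrow> path set" where
  "supp f = {p. f p \<noteq> 0}"

definition KQ :: "(path \<Rightarrow> 'k::field) set" where
  "KQ = {f. finite (supp f) \<and> (\<forall>p. f p \<noteq> 0 \<longrightarrow> valid_path p)}"

definition kq_add :: "(path \<Rightarrow> 'k::field) \<Rightarrow> (path \<Rightarrow> 'k) \<Rightarrow> (path \<Rightarrow> 'k)" where
  "kq_add f g = (\<lambda>p. f p + g p)"
definition kq_diff :: "(path \<Rightarrow> 'k::field) \<Rightarrow> (path \<Rightarrow> 'k) \<Rightarrow> (path \<Rightarrow> 'k)" where
  "kq_diff f g = (\<lambda>p. f p - g p)"
definition kq_smult :: "'k::field \<Rightarrow> (path \<Rightarrow> 'k) \<Rightarrow> (path \<Rightarrow> 'k)" where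
  "kq_smult c f = (\<lambda>p. c * f p)"
definition kq_zero :: "path \<Rightarrow> 'k::field" where
  "kq_zero = (\<lambda>p. 0)"

definition kq_mult :: "(path \<Rightarrow> 'k::field) \<Rightarrow> (path \<Rightarrow> 'k) \<Rightarrow> (path \<Rightarrow> 'k)" where
  "kq_mult f g = (\<lambda>r. \<Sum>p\<in>supp f. \<Sum>q\<in>supp g.
                      (if path_mult p q = Some r then f p * g q else 0))"

definition bpath :: "path \<Rightarrow> (path \<Rightarrow> 'k::field)" where
  "bpath p = (\<lambda>q. if q = p then 1 else 0)"

text \<open>For v = sum_i v_i beta^i (coefficients v_0..v_n), the element alpha v gamma.\<close>
definition alpha_poly_gamma :: "(nat \<Rightarrow> 'k::field) \<Rightarrow> nat \<Rightarrow> (path \<Rightarrow> 'k)" where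
  "alpha_poly_gamma v n =
     (\<lambda>r. \<Sum>i\<le>n. v i * bpath (Nontriv (Alpha # replicate i Beta @ [Gamma])) r)"

inductive_set gen_ideal :: "(path \<Rightarrow> 'k::field) set \<Rightarrow> (path \<Rightarrow> 'k) set"
  for S :: "(path \<Rightarrow> 'k) set" where
  gi_zero: "kq_zero \<in> gen_ideal S"
| gi_gen: "s \<in> S \<Longrightarrow> s \<in> gen_ideal S"
| gi_add: "x \<in> gen_ideal S \<Longrightarrow> y \<in> gen_ideal S \<Longrightarrow> kq_add x y \<in> gen_ideal S"
| gi_lmult: "a \<in> KQ \<Longrightarrow> x \<in> gen_ideal S \<Longrightarrow> kq_mult a x \<in> gen_ideal S"
| gi_rmult: "a \<in> KQ \<Longrightarrow> x \<in> gen_ideal S \<Longrightarrow> kq_mult x a \<in> gen_ideal S"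

text \<open>dim_k (kQ/I) = n: there are n elements of kQ whose classes form a k-basis of kQ/I.\<close>
definition quot_dim_eq :: "(path \<Rightarrow> 'k::field) set \<Rightarrow> nat \<Rightarrow> bool" where
  "quot_dim_eq I n \<longleftrightarrow>
     (\<exists>b :: nat \<Rightarrow> (path \<Rightarrow> 'k). (\<forall>i<n. b i \<in> KQ) \<and>
        (\<forall>c. (\<lambda>p. \<Sum>i<n. c i * b i p) \<in> I \<longrightarrow> (\<forall>i<n. c i = 0)) \<and>
        (\<forall>f\<in>KQ. \<exists>c. kq_diff f (\<lambda>p. \<Sum>i<n. c i * b i p) \<in> I))"

text \<open>R^m: the m-th power of the arrow ideal = elements supported on paths of length >= m.\<close>
definition arrow_ideal_pow :: "nat \<Rightarrow> (path \<Rightarrow> 'k::field) set" where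
  "arrow_ideal_pow m = {f \<in> KQ. \<forall>p. f p \<noteq> 0 \<longrightarrow> m \<le> path_len p}"

text \<open>Admissible ideal: R^m contained in I contained in R^2 for some m >= 2.
  For such I, the ordinary (Gabriel) quiver of kQ/I is Q.\<close>
definition admissible_ideal :: "(path \<Rightarrow> 'k::field) set \<Rightarrow> bool" where
  "admissible_ideal I \<longleftrightarrow> I \<subseteq> arrow_ideal_pow 2 \<and> (\<exists>m\<ge>2. arrow_ideal_pow m \<subseteq> I)"

text \<open>A k-derivation of kQ/I, given on representatives: a map d on kQ that is
  well defined modulo I, k-linear modulo I and satisfies the Leibniz rule modulo I.
  Every k-derivation of kQ/I arises in this way (compose with a set-theoretic section).\<close>
definition quot_derivation :: "(path \<Rightarrow> 'k::field) set \<Rightarrow> ((path \<Rightarrow> 'k) \<Rightarrow> (path \<Rightarrow> 'k)) \<Rightarrow> bool" where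
  "quot_derivation I d \<longleftrightarrow>
     (\<forall>x\<in>KQ. d x \<in> KQ) \<and>
     (\<forall>x\<in>KQ. \<forall>y\<in>KQ. kq_diff x y \<in> I \<longrightarrow> kq_diff (d x) (d y) \<in> I) \<and>
     (\<forall>x\<in>KQ. \<forall>y\<in>KQ. kq_diff (d (kq_add x y)) (kq_add (d x) (d y)) \<in> I) \<and>
     (\<forall>c. \<forall>x\<in>KQ. kq_diff (d (kq_smult c x)) (kq_smult c (d x)) \<in> I) \<and>
     (\<forall>x\<in>KQ. \<forall>y\<in>KQ. kq_diff (d (kq_mult x y)) (kq_add (kq_mult (d x) y) (kq_mult x (d y))) \<in> I)"

definition quot_inner :: "(path \<Rightarrow> 'k::field) set \<Rightarrow> ((path \<Rightarrow> 'k) \<Rightarrow> (path \<Rightarrow> 'k)) \<Rightarrow> bool" where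
  "quot_inner I d \<longleftrightarrow>
     (\<exists>a\<in>KQ. \<forall>x\<in>KQ. kq_diff (d x) (kq_diff (kq_mult a x) (kq_mult x a)) \<in> I)"

definition HH1_vanishes :: "(path \<Rightarrow> 'k::field) set \<Rightarrow> bool" where
  "HH1_vanishes I \<longleftrightarrow> (\<forall>d. quot_derivation I d \<longrightarrow> quot_inner I d)"

end

theory Submission
  imports Defs
begin

section \<open>Paths\<close>

fun chain :: "arr list \<Rightarrow> bool" where
  "chain [] = True"
| "chain [x] = True"
| "chain (x # y # ys) = (arr_src x = arr_tgt y \<and> chain (y # ys))"

lemma chainI_iff:
  "(\<forall>i. Suc i < length xs \<longrightarrow> arr_src (xs ! i) = arr_tgt (xs ! Suc i)) \<longleftrightarrow> chain xs"
proof (induction xs rule: chain.induct)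
  case (3 x y ys)
  have "(\<forall>i. Suc i < length (x # y # ys) \<longrightarrow> arr_src ((x # y # ys) ! i) = arr_tgt ((x # y # ys) ! Suc i))
     \<longleftrightarrow> arr_src x = arr_tgt y \<and> (\<forall>i. Suc i < length (y # ys) \<longrightarrow> arr_src ((y # ys) ! i) = arr_tgt ((y # ys) ! Suc i))"
    apply (rule iffI)
     apply (intro conjI allI impI)
      apply (drule spec[of _ 0], simp)
     apply (drule_tac x="Suc i" in spec, simp)
    apply clarify
    apply (case_tac i, auto)
    done
  then show ?case using 3 by simp
qed auto

lemma valid_Nontriv: "valid_path (Nontriv xs) \<longleftrightarrow> xs \<noteq> [] \<and> chain xs"
  using chainI_iff by auto

declare valid_path.simps(2)[simp del]

definition bp :: "nat \<Rightarrow> path" where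
  "bp n = (if n = 0 then Triv V2 else Nontriv (replicate n Beta))"
definition aN :: "nat \<Rightarrow> path" where
  "aN n = Nontriv (Alpha # replicate n Beta)"
definition gN :: "nat \<Rightarrow> path" where
  "gN n = Nontriv (replicate n Beta @ [Gamma])"
definition abg :: "nat \<Rightarrow> path" where
  "abg n = Nontriv (Alpha # replicate n Beta @ [Gamma])"

lemma chain_rep_Beta: "chain (replicate n Beta)"
  by (induction n rule: nat_less_induct) (case_tac n; case_tac "n - 1"; auto)

lemma chain_rep_Beta_Gamma: "chain (replicate n Beta @ [Gamma])"
  apply (induction n)
   apply simp
  apply (case_tac n, auto)
  done

lemma chain_Cons: "chain (x # xs) \<longleftrightarrow> (xs = [] \<or> arr_src x = arr_tgt (hd xs)) \<and> chain xs"
  by (cases xs) auto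

lemma valid_bp[simp]: "valid_path (bp n)"
  by (simp add: bp_def valid_Nontriv chain_rep_Beta)
lemma valid_aN[simp]: "valid_path (aN n)"
  apply (cases n)
   apply (simp_all add: aN_def valid_Nontriv)
  apply (metis chain_rep_Beta replicate_Suc)
  done
lemma valid_gN[simp]: "valid_path (gN n)"
  by (simp add: gN_def valid_Nontriv chain_rep_Beta_Gamma)
lemma valid_abg[simp]: "valid_path (abg n)"
  apply (simp add: abg_def valid_Nontriv chain_Cons chain_rep_Beta_Gamma)
  apply (cases n, auto)
  done

lemma chain_classify:
  assumes "chain xs" "xs \<noteq> []"
  shows "(\<exists>n. n \<ge> 1 \<and> xs = replicate n Beta) \<or> (\<exists>n. xs = Alpha # replicate n Beta)
       \<or> (\<exists>n. xs = replicate n Beta @ [Gamma]) \<or> (\<exists>n. xs = Alpha # replicate n Beta @ [Gamma])"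
  using assms
proof (induction xs rule: chain.induct)
  case (2 x)
  then show ?case
    apply (cases x)
      apply (rule disjI2, rule disjI1, rule exI[of _ 0], simp)
     apply (rule disjI1, rule exI[of _ 1], simp)
    apply (rule disjI2, rule disjI2, rule disjI1, rule exI[of _ 0], simp)
    done
next
  case (3 x y ys)
  then have IH: "(\<exists>n. n \<ge> 1 \<and> y # ys = replicate n Beta) \<or> (\<exists>n. y # ys = Alpha # replicate n Beta)
       \<or> (\<exists>n. y # ys = replicate n Beta @ [Gamma]) \<or> (\<exists>n. y # ys = Alpha # replicate n Beta @ [Gamma])"
    by simp
  have sx: "arr_src x = arr_tgt y" using 3 by simp
  from IH show ?case
  proof (elim disjE exE conjE)
    fix n assume n: "n \<ge> 1" "y # ys = replicate n Beta"
    then have "y = Beta" by (cases n) auto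
    then show ?thesis using sx n
      apply (cases x)
        apply (rule disjI2, rule disjI1, rule exI[of _ n], simp)
       apply (rule disjI1, rule exI[of _ "Suc n"], simp)
      apply simp
      done
  next
    fix n assume n: "y # ys = Alpha # replicate n Beta"
    then show ?thesis using sx by (cases x) auto
  next
    fix n assume n: "y # ys = replicate n Beta @ [Gamma]"
    then have "arr_tgt y = V2" by (cases n) auto
    then show ?thesis using sx n
      apply (cases x)
        apply (rule disjI2, rule disjI2, rule disjI2, rule exI[of _ n], simp)
       apply (rule disjI2, rule disjI2, rule disjI1, rule exI[of _ "Suc n"], simp)
      apply simp
      done
  next
    fix n assume n: "y # ys = Alpha # replicate n Beta @ [Gamma]"
    then show ?thesis using sx by (cases x) auto
  qed
qed simp

lemma valid_classify:
  assumes "valid_path p"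
  shows "(\<exists>v. p = Triv v) \<or> (\<exists>n. p = bp n) \<or> (\<exists>n. p = aN n) \<or> (\<exists>n. p = gN n) \<or> (\<exists>n. p = abg n)"
proof (cases p)
  case (Nontriv xs)
  then have "chain xs" "xs \<noteq> []" using assms valid_Nontriv by auto
  from chain_classify[OF this] show ?thesis
    unfolding Nontriv bp_def aN_def gN_def abg_def
    apply (elim disjE exE conjE)
       apply (rule disjI2, rule disjI1, rule_tac x=n in exI, simp)
      apply auto
    done
qed simp

lemma pm_Triv_left[simp]: "path_mult (Triv v) q = (if v = path_tgt q then Some q else None)"
  by (auto simp: path_mult_def)
lemma pm_Triv_right[simp]: "path_mult (Nontriv xs) (Triv w) = (if arr_src (last xs) = w then Some (Nontriv xs) else None)"
  by (auto simp: path_mult_def)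
lemma pm_NN[simp]: "path_mult (Nontriv xs) (Nontriv ys) =
   (if arr_src (last xs) = arr_tgt (hd ys) then Some (Nontriv (xs @ ys)) else None)"
  by (auto simp: path_mult_def)

lemma chain_append: "chain (xs @ ys) \<longleftrightarrow> chain xs \<and> chain ys \<and> (xs = [] \<or> ys = [] \<or> arr_src (last xs) = arr_tgt (hd ys))"
  by (induction xs rule: chain.induct) (auto simp: chain_Cons)

lemma pm_valid:
  assumes "valid_path p" "valid_path q" "path_mult p q = Some r"
  shows "valid_path r"
  using assms by (cases p; cases q) (auto simp: valid_Nontriv chain_append split: if_splits)

lemma pm_src: "valid_path q \<Longrightarrow> path_mult p q = Some r \<Longrightarrow> path_src r = path_src q"
  by (cases p; cases q) (auto simp: valid_Nontriv split: if_splits)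

lemma pm_tgt: "valid_path p \<Longrightarrow> path_mult p q = Some r \<Longrightarrow> path_tgt r = path_tgt p"
  by (cases p; cases q) (auto simp: valid_Nontriv split: if_splits)

lemma pm_assoc:
  assumes "valid_path p" "valid_path q" "valid_path t"
  shows "Option.bind (path_mult p q) (\<lambda>u. path_mult u t) = Option.bind (path_mult q t) (path_mult p)"
  using assms by (cases p; cases q; cases t) (auto simp: valid_Nontriv split: if_splits)

lemma pm_cancel_left:
  assumes "valid_path q" "valid_path q'" "path_mult p q = Some r" "path_mult p q' = Some r"
  shows "q = q'"
  using assms by (cases p; cases q; cases q') (auto simp: valid_Nontriv split: if_splits)

lemma pm_cancel_right:
  assumes "valid_path p" "valid_path p'" "path_mult p q = Some r" "path_mult p' q = Some r"
  shows "p = p'"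
  using assms by (cases p; cases p'; cases q) (auto simp: valid_Nontriv split: if_splits)

definition nb :: "path \<Rightarrow> nat" where
  "nb p = (case p of Triv v \<Rightarrow> 0 | Nontriv xs \<Rightarrow> count_list xs Beta)"

lemma pm_nb: "path_mult p q = Some r \<Longrightarrow> nb r = nb p + nb q"
  by (cases p; cases q) (auto simp: nb_def split: if_splits)

lemma nb_simps[simp]: "nb (bp n) = n" "nb (aN n) = n" "nb (gN n) = n" "nb (abg n) = n" "nb (Triv v) = 0"
  by (induction n) (auto simp: nb_def bp_def aN_def gN_def abg_def)

lemma KQ_iff: "f \<in> KQ \<longleftrightarrow> finite (supp f) \<and> (\<forall>p. f p \<noteq> 0 \<longrightarrow> valid_path p)"
  by (simp add: KQ_def)

lemma if0_mult: "(if c then a else 0) * b = (if c then a * b else (0::'a::mult_zero))"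
  by simp

lemma mult_if0: "a * (if c then b else 0) = (if c then a * b else (0::'a::mult_zero))"
  by simp

lemma kq_mult_sup:
  assumes "finite A" "finite B" "supp f \<subseteq> A" "supp g \<subseteq> B"
  shows "kq_mult f g r = (\<Sum>p\<in>A. \<Sum>q\<in>B. if path_mult p q = Some r then f p * g q else 0)"
proof -
  have "kq_mult f g r = (\<Sum>p\<in>A. \<Sum>q\<in>supp g. if path_mult p q = Some r then f p * g q else 0)"
    unfolding kq_mult_def
    by (rule sum.mono_neutral_left[OF assms(1) assms(3)]) (auto simp: supp_def intro!: sum.neutral split: if_splits)
  also have "\<dots> = (\<Sum>p\<in>A. \<Sum>q\<in>B. if path_mult p q = Some r then f p * g q else 0)"
    by (rule sum.cong[OF refl], rule sum.mono_neutral_left[OF assms(2) assms(4)]) (auto simp: supp_def)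
  finally show ?thesis .
qed

lemma mult_nz:
  assumes "kq_mult f g r \<noteq> 0"
  shows "\<exists>p q. f p \<noteq> 0 \<and> g q \<noteq> 0 \<and> path_mult p q = Some r"
proof -
  from assms obtain p where "p \<in> supp f" and
    "(\<Sum>q\<in>supp g. if path_mult p q = Some r then f p * g q else 0) \<noteq> 0"
    unfolding kq_mult_def using sum.not_neutral_contains_not_neutral by blast
  then obtain q where "q \<in> supp g" "(if path_mult p q = Some r then f p * g q else 0) \<noteq> 0"
    using sum.not_neutral_contains_not_neutral by blast
  then show ?thesis by (auto split: if_splits)
qed

lemma mult_zero_coef:
  assumes "\<And>p q. f p \<noteq> 0 \<Longrightarrow> g q \<noteq> 0 \<Longrightarrow> path_mult p q \<noteq> Some r"
  shows "kq_mult f g r = 0"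
  using mult_nz assms by blast

lemma mult_single:
  assumes "finite (supp f)" "finite (supp g)" "path_mult p0 q0 = Some r"
    "\<And>p q. f p \<noteq> 0 \<Longrightarrow> g q \<noteq> 0 \<Longrightarrow> path_mult p q = Some r \<Longrightarrow> p = p0 \<and> q = q0"
  shows "kq_mult f g r = f p0 * g q0"
proof -
  have "kq_mult f g r = (\<Sum>p\<in>insert p0 (supp f). \<Sum>q\<in>insert q0 (supp g).
          if path_mult p q = Some r then f p * g q else 0)"
    by (rule kq_mult_sup) (use assms in auto)
  also have "\<dots> = (\<Sum>p\<in>insert p0 (supp f). \<Sum>q\<in>insert q0 (supp g).
          if p = p0 then (if q = q0 then f p0 * g q0 else 0) else 0)"
    apply (rule sum.cong[OF refl], rule sum.cong[OF refl])
    using assms(3,4) by (auto simp: supp_def)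
  also have "\<dots> = (\<Sum>p\<in>insert p0 (supp f). if p = p0 then f p0 * g q0 else 0)"
    by (rule sum.cong[OF refl]) (simp add: sum.delta assms(2))
  also have "\<dots> = f p0 * g q0"
    using assms(1,2) by (simp add: sum.delta)
  finally show ?thesis .
qed

definition prodset :: "path set \<Rightarrow> path set \<Rightarrow> path set" where
  "prodset A B = {u. \<exists>p\<in>A. \<exists>q\<in>B. path_mult p q = Some u}"

lemma finite_prodset: "finite A \<Longrightarrow> finite B \<Longrightarrow> finite (prodset A B)"
proof -
  assume "finite A" "finite B"
  have "prodset A B \<subseteq> (\<lambda>(p,q). the (path_mult p q)) ` (A \<times> B)"
    unfolding prodset_def by force
  then show ?thesis using \<open>finite A\<close> \<open>finite B\<close> finite_subset by blast
qed

lemma supp_mult: "supp (kq_mult f g) \<subseteq> prodset (supp f) (supp g)"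
  using mult_nz unfolding supp_def prodset_def by fastforce

lemma kq_mult_KQ: "f \<in> KQ \<Longrightarrow> g \<in> KQ \<Longrightarrow> kq_mult f g \<in> KQ"
  unfolding KQ_iff
proof (intro conjI allI impI; elim conjE)
  assume a: "finite (supp f)" "finite (supp g)"
  show "finite (supp (kq_mult f g))"
    using supp_mult finite_prodset[OF a] finite_subset by blast
next
  fix r assume "kq_mult f g r \<noteq> 0" "\<forall>p. f p \<noteq> 0 \<longrightarrow> valid_path p" "\<forall>p. g p \<noteq> 0 \<longrightarrow> valid_path p"
  then show "valid_path r" using mult_nz pm_valid by metis
qed

lemma sum_collapse:
  assumes "finite U" "\<And>u. path_mult p q = Some u \<Longrightarrow> u \<in> U"
  shows "(\<Sum>u\<in>U. if path_mult p q = Some u \<and> path_mult u t = Some r then X else 0)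
         = (if Option.bind (path_mult p q) (\<lambda>u. path_mult u t) = Some r then X else 0)"
proof (cases "path_mult p q")
  case None
  then show ?thesis by simp
next
  case (Some u0)
  then have "(\<Sum>u\<in>U. if path_mult p q = Some u \<and> path_mult u t = Some r then X else 0)
      = (\<Sum>u\<in>U. if u = u0 then (if path_mult u0 t = Some r then X else 0) else 0)"
    by (intro sum.cong) auto
  also have "\<dots> = (if path_mult u0 t = Some r then X else 0)"
    using assms Some by (simp add: sum.delta)
  finally show ?thesis using Some by simp
qed

lemma sum_collapse2:
  assumes "finite V" "\<And>v. path_mult q t = Some v \<Longrightarrow> v \<in> V"
  shows "(\<Sum>v\<in>V. if path_mult q t = Some v \<and> path_mult p v = Some r then X else 0)
         = (if Option.bind (path_mult q t) (path_mult p) = Some r then X else 0)"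
proof (cases "path_mult q t")
  case None
  then show ?thesis by simp
next
  case (Some v0)
  then have "(\<Sum>v\<in>V. if path_mult q t = Some v \<and> path_mult p v = Some r then X else 0)
      = (\<Sum>v\<in>V. if v = v0 then (if path_mult p v0 = Some r then X else 0) else 0)"
    by (intro sum.cong) auto
  also have "\<dots> = (if path_mult p v0 = Some r then X else 0)"
    using assms Some by (simp add: sum.delta)
  finally show ?thesis using Some by simp
qed

lemma sum4_reorder:
  "(\<Sum>u\<in>U. \<Sum>t\<in>C. \<Sum>p\<in>A. \<Sum>q\<in>B. F u t p q) = (\<Sum>p\<in>A. \<Sum>q\<in>B. \<Sum>t\<in>C. \<Sum>u\<in>U. F u t p q)"
proof -
  have "(\<Sum>u\<in>U. \<Sum>t\<in>C. \<Sum>p\<in>A. \<Sum>q\<in>B. F u t p q) = (\<Sum>u\<in>U. \<Sum>p\<in>A. \<Sum>t\<in>C. \<Sum>q\<in>B. F u t p q)"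
    by (rule sum.cong[OF refl], rule sum.swap)
  also have "\<dots> = (\<Sum>u\<in>U. \<Sum>p\<in>A. \<Sum>q\<in>B. \<Sum>t\<in>C. F u t p q)"
    by (rule sum.cong[OF refl], rule sum.cong[OF refl], rule sum.swap)
  also have "\<dots> = (\<Sum>p\<in>A. \<Sum>u\<in>U. \<Sum>q\<in>B. \<Sum>t\<in>C. F u t p q)"
    by (rule sum.swap)
  also have "\<dots> = (\<Sum>p\<in>A. \<Sum>q\<in>B. \<Sum>u\<in>U. \<Sum>t\<in>C. F u t p q)"
    by (rule sum.cong[OF refl], rule sum.swap)
  also have "\<dots> = (\<Sum>p\<in>A. \<Sum>q\<in>B. \<Sum>t\<in>C. \<Sum>u\<in>U. F u t p q)"
    by (rule sum.cong[OF refl], rule sum.cong[OF refl], rule sum.swap)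
  finally show ?thesis .
qed

lemma sum3_reorder:
  "(\<Sum>q\<in>B. \<Sum>t\<in>C. \<Sum>v\<in>V. F q t v) = (\<Sum>v\<in>V. \<Sum>q\<in>B. \<Sum>t\<in>C. F q t v)"
proof -
  have "(\<Sum>q\<in>B. \<Sum>t\<in>C. \<Sum>v\<in>V. F q t v) = (\<Sum>q\<in>B. \<Sum>v\<in>V. \<Sum>t\<in>C. F q t v)"
    by (rule sum.cong[OF refl], rule sum.swap)
  also have "\<dots> = (\<Sum>v\<in>V. \<Sum>q\<in>B. \<Sum>t\<in>C. F q t v)"
    by (rule sum.swap)
  finally show ?thesis .
qed

lemma kq_assoc:
  assumes f: "f \<in> KQ" and g: "g \<in> KQ" and h: "h \<in> KQ"
  shows "kq_mult (kq_mult f g) h = kq_mult f (kq_mult g h)"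
proof
  fix r
  define A where "A = supp f"
  define B where "B = supp g"
  define C where "C = supp h"
  have fA: "finite A" "finite B" "finite C" using f g h by (auto simp: KQ_iff A_def B_def C_def)
  define U where "U = prodset A B"
  define V where "V = prodset B C"
  have fU: "finite U" "finite V" using fA finite_prodset by (auto simp: U_def V_def)
  let ?T = "\<lambda>p q t. f p * g q * h t"
  have "kq_mult (kq_mult f g) h r =
     (\<Sum>u\<in>U. \<Sum>t\<in>C. if path_mult u t = Some r then kq_mult f g u * h t else 0)"
    by (rule kq_mult_sup) (use fU fA supp_mult in \<open>auto simp: U_def A_def B_def C_def\<close>)
  also have "\<dots> = (\<Sum>u\<in>U. \<Sum>t\<in>C. \<Sum>p\<in>A. \<Sum>q\<in>B.
        if path_mult p q = Some u \<and> path_mult u t = Some r then ?T p q t else 0)"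
    apply (rule sum.cong[OF refl], rule sum.cong[OF refl])
    apply (subst kq_mult_sup[OF fA(1,2)], simp add: A_def, simp add: B_def)
    apply (simp add: sum_distrib_right if0_mult)
    done
  also have "\<dots> = (\<Sum>p\<in>A. \<Sum>q\<in>B. \<Sum>t\<in>C. \<Sum>u\<in>U.
        if path_mult p q = Some u \<and> path_mult u t = Some r then ?T p q t else 0)"
    by (rule sum4_reorder)
  also have "\<dots> = (\<Sum>p\<in>A. \<Sum>q\<in>B. \<Sum>t\<in>C.
        if Option.bind (path_mult p q) (\<lambda>u. path_mult u t) = Some r then ?T p q t else 0)"
    apply (intro sum.cong refl)
    apply (rule sum_collapse[OF fU(1)])
    apply (auto simp: U_def prodset_def)
    done
  also have "\<dots> = (\<Sum>p\<in>A. \<Sum>q\<in>B. \<Sum>t\<in>C.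
        if Option.bind (path_mult q t) (path_mult p) = Some r then ?T p q t else 0)"
    apply (intro sum.cong refl)
    apply (subst pm_assoc)
    using f g h by (auto simp: A_def B_def C_def KQ_iff supp_def)
  also have "\<dots> = (\<Sum>p\<in>A. \<Sum>q\<in>B. \<Sum>t\<in>C. \<Sum>v\<in>V.
        if path_mult q t = Some v \<and> path_mult p v = Some r then ?T p q t else 0)"
    apply (intro sum.cong refl)
    apply (rule sum_collapse2[OF fU(2), symmetric])
    apply (auto simp: V_def prodset_def)
    done
  also have "\<dots> = (\<Sum>p\<in>A. \<Sum>v\<in>V. \<Sum>q\<in>B. \<Sum>t\<in>C.
        if path_mult q t = Some v \<and> path_mult p v = Some r then ?T p q t else 0)"
    by (rule sum.cong[OF refl], rule sum3_reorder)
  also have "\<dots> = (\<Sum>p\<in>A. \<Sum>v\<in>V. if path_mult p v = Some r then f p * kq_mult g h v else 0)"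
    apply (rule sum.cong[OF refl], rule sum.cong[OF refl])
    apply (subst kq_mult_sup[OF fA(2,3)], simp add: B_def, simp add: C_def)
    apply (simp add: sum_distrib_left mult.assoc mult_if0 cong: if_cong)
    done
  also have "\<dots> = kq_mult f (kq_mult g h) r"
    by (rule kq_mult_sup[symmetric]) (use fU fA supp_mult in \<open>auto simp: V_def A_def B_def C_def\<close>)
  finally show "kq_mult (kq_mult f g) h r = kq_mult f (kq_mult g h) r" .
qed

definition kq_one :: "path \<Rightarrow> 'k::field" where
  "kq_one p = (case p of Triv v \<Rightarrow> 1 | Nontriv xs \<Rightarrow> 0)"

lemma UNIV_vert: "(UNIV :: vert set) = {V1, V2, V3}"
  using vert.exhaust by auto

lemma supp_one: "supp (kq_one :: path \<Rightarrow> 'k::field) \<subseteq> {Triv V1, Triv V2, Triv V3}"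
proof
  fix p assume "p \<in> supp (kq_one :: path \<Rightarrow> 'k)"
  then show "p \<in> {Triv V1, Triv V2, Triv V3}"
    unfolding supp_def kq_one_def
    by (cases p) (auto intro: vert.exhaust[of "path_src p"])
qed

lemma one_KQ: "(kq_one :: path \<Rightarrow> 'k::field) \<in> KQ"
  unfolding KQ_iff
  using supp_one finite_subset by (auto simp: kq_one_def split: path.splits)

lemma zero_KQ: "(kq_zero :: path \<Rightarrow> 'k::field) \<in> KQ"
  by (simp add: KQ_iff kq_zero_def supp_def)

lemma supp_add: "supp (kq_add f g) \<subseteq> supp f \<union> supp g"
  by (auto simp: supp_def kq_add_def)

lemma add_KQ: "f \<in> KQ \<Longrightarrow> g \<in> KQ \<Longrightarrow> kq_add f g \<in> KQ"
  unfolding KQ_iff using supp_add finite_subset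
  by (metis (no_types, lifting) add.right_neutral finite_Un kq_add_def)

lemma neg_KQ: "f \<in> KQ \<Longrightarrow> (\<lambda>p. - f p) \<in> KQ"
  by (simp add: KQ_iff supp_def)

lemma diff_KQ: "f \<in> KQ \<Longrightarrow> g \<in> KQ \<Longrightarrow> kq_diff f g \<in> KQ"
proof -
  assume "f \<in> KQ" "g \<in> KQ"
  then have "kq_add f (\<lambda>p. - g p) \<in> KQ" using add_KQ neg_KQ by blast
  moreover have "kq_add f (\<lambda>p. - g p) = kq_diff f g" by (simp add: kq_add_def kq_diff_def)
  ultimately show ?thesis by simp
qed

lemma smult_KQ: "f \<in> KQ \<Longrightarrow> kq_smult c f \<in> KQ"
proof -
  assume "f \<in> KQ"
  moreover have "supp (kq_smult c f) \<subseteq> supp f" by (auto simp: supp_def kq_smult_def)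
  ultimately show ?thesis unfolding KQ_iff using finite_subset by (auto simp: kq_smult_def)
qed

lemma bpath_KQ: "valid_path p \<Longrightarrow> (bpath p :: path \<Rightarrow> 'k::field) \<in> KQ"
proof -
  assume "valid_path p"
  moreover have "supp (bpath p :: path \<Rightarrow> 'k) \<subseteq> {p}" by (auto simp: supp_def bpath_def)
  ultimately show ?thesis unfolding KQ_iff using finite_subset by (auto simp: bpath_def)
qed

lemma pm_TR: "path_mult p (Triv w) = Some r \<Longrightarrow> r = p \<and> w = path_src p"
  by (cases p) (auto split: if_splits)

lemma pm_TL: "path_mult (Triv v) q = Some r \<Longrightarrow> r = q \<and> v = path_tgt q"
  by (auto split: if_splits)

lemma pm_self_src: "path_mult r (Triv (path_src r)) = Some r"
  by (cases r) auto

lemma one_mult: "f \<in> KQ \<Longrightarrow> kq_mult kq_one f = f"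
proof
  fix r assume f: "f \<in> KQ"
  have "kq_mult kq_one f r = kq_one (Triv (path_tgt r)) * f r"
    apply (rule mult_single)
    using f supp_one finite_subset apply (auto simp: KQ_iff)[2]
     apply simp
    apply (auto simp: kq_one_def split: path.splits if_splits)
    done
  then show "kq_mult kq_one f r = f r" by (simp add: kq_one_def)
qed

lemma mult_one: "f \<in> KQ \<Longrightarrow> kq_mult f kq_one = f"
proof
  fix r assume f: "f \<in> KQ"
  have "kq_mult f kq_one r = f r * kq_one (Triv (path_src r))"
    apply (rule mult_single)
    using f supp_one finite_subset apply (auto simp: KQ_iff)[2]
     apply (rule pm_self_src)
    apply (auto simp: kq_one_def split: path.splits dest: pm_TR)
    done
  then show "kq_mult f kq_one r = f r" by (simp add: kq_one_def)
qed

lemma if_plus0: "(if c then a else 0) + (if c then b else 0) = (if c then a + b else (0::'a::monoid_add))"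
  by simp

lemma add_mult:
  assumes "f \<in> KQ" "g \<in> KQ" "h \<in> KQ"
  shows "kq_mult (kq_add f g) h = kq_add (kq_mult f h) (kq_mult g h)"
proof
  fix r
  have fin: "finite (supp f \<union> supp g)" "finite (supp h)" using assms by (auto simp: KQ_iff)
  have "kq_mult (kq_add f g) h r = (\<Sum>p\<in>supp f \<union> supp g. \<Sum>q\<in>supp h.
      if path_mult p q = Some r then (f p + g p) * h q else 0)"
    by (subst kq_mult_sup[OF fin]) (use supp_add in \<open>auto simp: kq_add_def cong: if_cong\<close>)
  moreover have "kq_mult f h r = (\<Sum>p\<in>supp f \<union> supp g. \<Sum>q\<in>supp h.
      if path_mult p q = Some r then f p * h q else 0)"
    by (subst kq_mult_sup[OF fin]) auto
  moreover have "kq_mult g h r = (\<Sum>p\<in>supp f \<union> supp g. \<Sum>q\<in>supp h.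
      if path_mult p q = Some r then g p * h q else 0)"
    by (subst kq_mult_sup[OF fin]) auto
  ultimately show "kq_mult (kq_add f g) h r = kq_add (kq_mult f h) (kq_mult g h) r"
    by (simp add: kq_add_def sum.distrib[symmetric] if_plus0 distrib_right cong: if_cong)
qed

lemma mult_add:
  assumes "f \<in> KQ" "g \<in> KQ" "h \<in> KQ"
  shows "kq_mult h (kq_add f g) = kq_add (kq_mult h f) (kq_mult h g)"
proof
  fix r
  have fin: "finite (supp h)" "finite (supp f \<union> supp g)" using assms by (auto simp: KQ_iff)
  have "kq_mult h (kq_add f g) r = (\<Sum>p\<in>supp h. \<Sum>q\<in>supp f \<union> supp g.
      if path_mult p q = Some r then h p * (f q + g q) else 0)"
    by (subst kq_mult_sup[OF fin]) (use supp_add in \<open>auto simp: kq_add_def cong: if_cong\<close>)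
  moreover have "kq_mult h f r = (\<Sum>p\<in>supp h. \<Sum>q\<in>supp f \<union> supp g.
      if path_mult p q = Some r then h p * f q else 0)"
    by (subst kq_mult_sup[OF fin]) auto
  moreover have "kq_mult h g r = (\<Sum>p\<in>supp h. \<Sum>q\<in>supp f \<union> supp g.
      if path_mult p q = Some r then h p * g q else 0)"
    by (subst kq_mult_sup[OF fin]) auto
  ultimately show "kq_mult h (kq_add f g) r = kq_add (kq_mult h f) (kq_mult h g) r"
    by (simp add: kq_add_def sum.distrib[symmetric] if_plus0 distrib_left cong: if_cong)
qed

typedef (overloaded) 'k kqt = "KQ :: (path \<Rightarrow> 'k::field) set"
  morphisms R A
  using zero_KQ by blast

setup_lifting type_definition_kqt

instantiation kqt :: (field) ring_1
begin

lift_definition zero_kqt :: "'a kqt" is kq_zero by (rule zero_KQ)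
lift_definition one_kqt :: "'a kqt" is kq_one by (rule one_KQ)
lift_definition plus_kqt :: "'a kqt \<Rightarrow> 'a kqt \<Rightarrow> 'a kqt" is kq_add by (rule add_KQ)
lift_definition minus_kqt :: "'a kqt \<Rightarrow> 'a kqt \<Rightarrow> 'a kqt" is kq_diff by (rule diff_KQ)
lift_definition uminus_kqt :: "'a kqt \<Rightarrow> 'a kqt" is "\<lambda>f p. - f p" by (rule neg_KQ)
lift_definition times_kqt :: "'a kqt \<Rightarrow> 'a kqt \<Rightarrow> 'a kqt" is kq_mult by (rule kq_mult_KQ)

instance
proof
  fix a b c :: "'a kqt"
  show "a + b + c = a + (b + c)" by transfer (simp add: kq_add_def add.assoc)
  show "a + b = b + a" by transfer (simp add: kq_add_def add.commute)
  show "0 + a = a" by transfer (simp add: kq_add_def kq_zero_def)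
  show "- a + a = 0" by transfer (simp add: kq_add_def kq_zero_def)
  show "a - b = a + - b" by transfer (simp add: kq_add_def kq_diff_def)
  show "a * b * c = a * (b * c)" by transfer (rule kq_assoc)
  show "(a + b) * c = a * c + b * c" by transfer (rule add_mult)
  show "a * (b + c) = a * b + a * c" by transfer (rule mult_add)
  show "1 * a = a" by transfer (rule one_mult)
  show "a * 1 = a" by transfer (rule mult_one)
  show "(0::'a kqt) \<noteq> 1"
    by transfer (simp add: kq_zero_def kq_one_def fun_eq_iff, rule exI[of _ "Triv V1"], simp)
qed

end

lemma rep_Beta_last: "n > 0 \<Longrightarrow> last (replicate n Beta) = Beta"
  by (simp add: last_replicate)
lemma rep_Beta_hd: "n > 0 \<Longrightarrow> hd (replicate n Beta) = Beta"
  by (cases n) auto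

lemma pm_bp_bp: "path_mult (bp i) (bp j) = Some (bp (i + j))"
  by (cases "i = 0"; cases "j = 0")
     (auto simp: bp_def rep_Beta_last rep_Beta_hd replicate_add)

lemma pm_aN_bp: "path_mult (aN i) (bp j) = Some (aN (i + j))"
  by (cases "i = 0"; cases "j = 0")
     (auto simp: bp_def aN_def rep_Beta_last rep_Beta_hd replicate_add)

lemma pm_bp_gN: "path_mult (bp i) (gN j) = Some (gN (i + j))"
  by (cases "i = 0"; cases "j = 0")
     (auto simp: bp_def gN_def rep_Beta_last rep_Beta_hd replicate_add)

lemma pm_aN_gN: "path_mult (aN i) (gN j) = Some (abg (i + j))"
  by (cases "i = 0"; cases "j = 0")
     (auto simp: aN_def gN_def abg_def rep_Beta_last rep_Beta_hd replicate_add)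

lemma abg_split: "abg n = (case path_mult (aN 0) (gN n) of Some r \<Rightarrow> r)"
  using pm_aN_gN[of 0 n] by simp

lemma tgt_simps[simp]: "path_tgt (bp n) = V2" "path_tgt (aN n) = V1" "path_tgt (gN n) = V2"
   "path_tgt (abg n) = V1"
  by (cases n; simp add: bp_def aN_def gN_def abg_def)+

lemma src_simps[simp]: "path_src (bp n) = V2" "path_src (aN n) = V2" "path_src (gN n) = V3"
   "path_src (abg n) = V3"
  by (cases n; simp add: bp_def aN_def gN_def abg_def rep_Beta_last)+

lemma inj_simps[simp]: "bp n = bp m \<longleftrightarrow> n = m" "aN n = aN m \<longleftrightarrow> n = m" "gN n = gN m \<longleftrightarrow> n = m"
  "abg n = abg m \<longleftrightarrow> n = m"
  by (metis nb_simps)+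

lemma distinct_simps[simp]:
  "bp n \<noteq> aN m" "bp n \<noteq> gN m" "bp n \<noteq> abg m" "aN n \<noteq> gN m" "aN n \<noteq> abg m" "gN n \<noteq> abg m"
  "aN n \<noteq> bp m" "gN n \<noteq> bp m" "abg n \<noteq> bp m" "gN n \<noteq> aN m" "abg n \<noteq> aN m" "abg n \<noteq> gN m"
  by (metis src_simps tgt_simps vert.distinct)+

lemma abg_ne_Triv[simp]: "abg n \<noteq> Triv v" "aN n \<noteq> Triv v" "gN n \<noteq> Triv v"
  by (auto simp: abg_def aN_def gN_def)

lemma bp_Triv: "bp n = Triv v \<longleftrightarrow> n = 0 \<and> v = V2"
  by (auto simp: bp_def)

lemma pm_into_abg_left:
  assumes "valid_path p" "path_mult p (abg n) = Some r"
  shows "r = abg n \<and> p = Triv V1"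
proof (cases p)
  case (Triv v) then show ?thesis using assms by (auto split: if_splits)
next
  case (Nontriv xs)
  then have "xs \<noteq> []" using assms valid_Nontriv by auto
  then show ?thesis using assms Nontriv by (cases "last xs") (auto simp: abg_def split: if_splits)
qed

lemma pm_into_abg_right:
  assumes "valid_path q" "path_mult (abg n) q = Some r"
  shows "r = abg n \<and> q = Triv V3"
proof (cases q)
  case (Triv v) then show ?thesis using assms by (auto simp: abg_def split: if_splits)
next
  case (Nontriv ys)
  then have "ys \<noteq> []" using assms valid_Nontriv by auto
  then show ?thesis using assms Nontriv by (cases "hd ys") (auto simp: abg_def split: if_splits)
qed

lemma KQ_fin: "f \<in> KQ \<Longrightarrow> finite (supp f)"
  by (simp add: KQ_iff)
lemma KQ_valid: "f \<in> KQ \<Longrightarrow> f p \<noteq> 0 \<Longrightarrow> valid_path p"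
  by (simp add: KQ_iff)

lemma finite_supp_bpath: "finite (supp (bpath p))"
proof -
  have "supp (bpath p) \<subseteq> {p}" by (auto simp: supp_def bpath_def)
  then show ?thesis using finite_subset by blast
qed

lemma bpath_left:
  assumes "x \<in> KQ" "valid_path q" "path_mult p q = Some r"
  shows "kq_mult (bpath p) x r = x q"
proof -
  have "kq_mult (bpath p) x r = bpath p p * x q"
  proof (rule mult_single[OF finite_supp_bpath KQ_fin[OF assms(1)] assms(3)])
    fix p' q' assume "bpath p p' \<noteq> 0" "x q' \<noteq> 0" "path_mult p' q' = Some r"
    then show "p' = p \<and> q' = q"
      using assms pm_cancel_left[of q' q p r] KQ_valid[OF assms(1)]
      by (auto simp: bpath_def split: if_splits)
  qed
  then show ?thesis by (simp add: bpath_def)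
qed

lemma bpath_right:
  assumes "x \<in> KQ" "valid_path p" "path_mult p q = Some r"
  shows "kq_mult x (bpath q) r = x p"
proof -
  have "kq_mult x (bpath q) r = x p * bpath q q"
  proof (rule mult_single[OF KQ_fin[OF assms(1)] finite_supp_bpath assms(3)])
    fix p' q' assume "x p' \<noteq> 0" "bpath q q' \<noteq> 0" "path_mult p' q' = Some r"
    then show "p' = p \<and> q' = q"
      using assms pm_cancel_right[of p' p q r] KQ_valid[OF assms(1)]
      by (auto simp: bpath_def split: if_splits)
  qed
  then show ?thesis by (simp add: bpath_def)
qed

lemma bpath_left_zero:
  assumes "x \<in> KQ" "\<And>q. valid_path q \<Longrightarrow> path_mult p q \<noteq> Some r"
  shows "kq_mult (bpath p) x r = 0"
  by (rule mult_zero_coef) (use assms KQ_valid in \<open>auto simp: bpath_def split: if_splits\<close>)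

lemma bpath_right_zero:
  assumes "x \<in> KQ" "\<And>p. valid_path p \<Longrightarrow> path_mult p q \<noteq> Some r"
  shows "kq_mult x (bpath q) r = 0"
  by (rule mult_zero_coef) (use assms KQ_valid in \<open>auto simp: bpath_def split: if_splits\<close>)

lemma bpath_mult:
  assumes "valid_path p" "valid_path q" "path_mult p q = Some r"
  shows "kq_mult (bpath p) (bpath q) = bpath r"
proof
  fix s
  show "kq_mult (bpath p) (bpath q) s = bpath r s"
  proof (cases "s = r")
    case True
    then show ?thesis using bpath_left[OF bpath_KQ[OF assms(2)] assms(2) assms(3)]
      by (simp add: bpath_def)
  next
    case False
    have "kq_mult (bpath p) (bpath q) s = 0"
      by (rule mult_zero_coef) (use assms False in \<open>auto simp: bpath_def split: if_splits\<close>)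
    then show ?thesis using False by (simp add: bpath_def)
  qed
qed

lemma bpath_mult_none:
  assumes "path_mult p q = None"
  shows "kq_mult (bpath p) (bpath q) = kq_zero"
proof
  fix s
  show "kq_mult (bpath p) (bpath q) s = kq_zero s"
    by (simp add: kq_zero_def, rule mult_zero_coef) (use assms in \<open>auto simp: bpath_def split: if_splits\<close>)
qed

lemma smult_one_KQ: "kq_smult c kq_one \<in> KQ"
  by (rule smult_KQ[OF one_KQ])

lemma smult_one_mult:
  assumes "g \<in> KQ"
  shows "kq_mult (kq_smult c kq_one) g = kq_smult c g"
proof
  fix r
  have "kq_mult (kq_smult c kq_one) g r = kq_smult c kq_one (Triv (path_tgt r)) * g r"
    apply (rule mult_single[OF KQ_fin[OF smult_one_KQ] KQ_fin[OF assms]])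
     apply simp
    apply (auto simp: kq_one_def kq_smult_def split: path.splits if_splits)
    done
  then show "kq_mult (kq_smult c kq_one) g r = kq_smult c g r"
    by (simp add: kq_one_def kq_smult_def)
qed

lemma mult_smult_one:
  assumes "g \<in> KQ"
  shows "kq_mult g (kq_smult c kq_one) = kq_smult c g"
proof
  fix r
  have "kq_mult g (kq_smult c kq_one) r = g r * kq_smult c kq_one (Triv (path_src r))"
    apply (rule mult_single[OF KQ_fin[OF assms] KQ_fin[OF smult_one_KQ]])
     apply (rule pm_self_src)
    apply (auto simp: kq_one_def kq_smult_def split: path.splits dest: pm_TR)
    done
  then show "kq_mult g (kq_smult c kq_one) r = kq_smult c g r"
    by (simp add: kq_one_def kq_smult_def)
qed


lemma KQ_expand:
  assumes "f \<in> KQ"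
  shows "f = (\<lambda>r. \<Sum>p\<in>supp f. f p * bpath p r)"
proof
  fix r
  show "f r = (\<Sum>p\<in>supp f. f p * bpath p r)"
  proof (cases "r \<in> supp f")
    case True
    then have "(\<Sum>p\<in>supp f. f p * bpath p r) = (\<Sum>p\<in>supp f. if p = r then f r else 0)"
      by (intro sum.cong) (auto simp: bpath_def)
    also have "\<dots> = f r" using True KQ_fin[OF assms] by (simp add: sum.delta')
    finally show ?thesis by simp
  next
    case False
    then show ?thesis by (auto simp: bpath_def supp_def intro!: sum.neutral)
  qed
qed


definition chr_ok :: "'k::field itself \<Rightarrow> bool" where
  "chr_ok TYPE('k) \<longleftrightarrow> (\<forall>n::nat. 0 < n \<longrightarrow> n \<le> 7 \<longrightarrow> (of_nat n :: 'k) \<noteq> 0)"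

lemma chr_ok_nums:
  assumes "chr_ok TYPE('k::field)"
  shows "(2::'k) \<noteq> 0" "(3::'k) \<noteq> 0" "(5::'k) \<noteq> 0" "(7::'k) \<noteq> 0" "(6::'k) \<noteq> 0"
    "(24::'k) \<noteq> 0" "(120::'k) \<noteq> 0" "(720::'k) \<noteq> 0" "(4::'k) \<noteq> 0"
proof -
  have h: "\<And>n::nat. 0 < n \<Longrightarrow> n \<le> 7 \<Longrightarrow> (of_nat n :: 'k) \<noteq> 0"
    using assms by (simp add: chr_ok_def)
  show t2: "(2::'k) \<noteq> 0" using h[of 2] by simp
  show t3: "(3::'k) \<noteq> 0" using h[of 3] by simp
  show t5: "(5::'k) \<noteq> 0" using h[of 5] by simp
  show "(7::'k) \<noteq> 0" using h[of 7] by simp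
  show "(6::'k) \<noteq> 0" using h[of 6] by simp
  show "(4::'k) \<noteq> 0" using h[of 4] by simp
  have t4: "(4::'k) \<noteq> 0" using h[of 4] by simp
  have t6: "(6::'k) \<noteq> 0" using h[of 6] by simp
  have "(4::'k) * 6 \<noteq> 0" by (rule no_zero_divisors[OF t4 t6])
  then show t24: "(24::'k) \<noteq> 0" by simp
  have "(24::'k) * 5 \<noteq> 0" by (rule no_zero_divisors[OF t24 t5])
  then show t120: "(120::'k) \<noteq> 0" by simp
  have "(120::'k) * 6 \<noteq> 0" by (rule no_zero_divisors[OF t120 t6])
  then show "(720::'k) \<noteq> 0" by simp
qed

lemma nz_smooth:
  assumes "chr_ok TYPE('k::field)"
  shows "(of_nat (2 ^ a * 3 ^ b * 5 ^ c * 7 ^ d) :: 'k) \<noteq> 0"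
  using chr_ok_nums[OF assms] by (simp only: of_nat_mult of_nat_power of_nat_numeral) simp

function smooth :: "nat \<Rightarrow> bool" where
  "smooth n = (if n \<le> 1 then n = 1 else if 2 dvd n then smooth (n div 2)
     else if 3 dvd n then smooth (n div 3) else if 5 dvd n then smooth (n div 5)
     else if 7 dvd n then smooth (n div 7) else False)"
  by auto
termination by (relation "measure id") auto
declare smooth.simps[simp del]

lemma smooth_nz:
  assumes chr: "chr_ok TYPE('k::field)"
  shows "smooth n \<Longrightarrow> (of_nat n :: 'k) \<noteq> 0"
proof (induction n rule: smooth.induct)
  case (1 n)
  note nz = chr_ok_nums[OF chr]
  show ?case
  proof (cases "n \<le> 1")
    case True then show ?thesis using "1.prems" by (simp add: smooth.simps)
  next
    case n: False
    show ?thesis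
    proof (cases "2 dvd n")
      case True
      then have "n = 2 * (n div 2)" by simp
      then have "(of_nat n :: 'k) = 2 * of_nat (n div 2)" by (metis of_nat_mult of_nat_numeral)
      then show ?thesis using "1.IH"(1)[OF n True] "1.prems" n True nz by (simp add: smooth.simps[of n])
    next
      case n2: False
      show ?thesis
      proof (cases "3 dvd n")
        case True
        then have "n = 3 * (n div 3)" by simp
        then have "(of_nat n :: 'k) = 3 * of_nat (n div 3)" by (metis of_nat_mult of_nat_numeral)
        then show ?thesis using "1.IH"(2)[OF n n2 True] "1.prems" n n2 True nz by (simp add: smooth.simps[of n])
      next
        case n3: False
        show ?thesis
        proof (cases "5 dvd n")
          case True
          then have "n = 5 * (n div 5)" by simp
          then have "(of_nat n :: 'k) = 5 * of_nat (n div 5)" by (metis of_nat_mult of_nat_numeral)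
          then show ?thesis using "1.IH"(3)[OF n n2 n3 True] "1.prems" n n2 n3 True nz by (simp add: smooth.simps[of n])
        next
          case n5: False
          show ?thesis
          proof (cases "7 dvd n")
            case True
            then have "n = 7 * (n div 7)" by simp
            then have "(of_nat n :: 'k) = 7 * of_nat (n div 7)" by (metis of_nat_mult of_nat_numeral)
            then show ?thesis using "1.IH"(4)[OF n n2 n3 n5 True] "1.prems" n n2 n3 n5 True nz by (simp add: smooth.simps[of n])
          next
            case False
            then show ?thesis using "1.prems" n n2 n3 n5 by (simp add: smooth.simps[of n])
          qed
        qed
      qed
    qed
  qed
qed

lemma numeral_nz:
  assumes "chr_ok TYPE('k::field)" "smooth (numeral k)"
  shows "(numeral k :: 'k) \<noteq> 0"
  using smooth_nz[OF assms(1) assms(2)] by simp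


lemma fact_nz:
  assumes chr: "chr_ok TYPE('k::field)" and m: "m \<le> 7"
  shows "(of_nat (fact m) :: 'k) \<noteq> 0"
  using m
proof (induction m)
  case 0 then show ?case by simp
next
  case (Suc m)
  have "(of_nat (Suc m) :: 'k) \<noteq> 0" using chr Suc.prems by (simp add: chr_ok_def del: of_nat_Suc)
  moreover have "(of_nat (fact m) :: 'k) \<noteq> 0" using Suc by simp
  ultimately have "(of_nat (Suc m) :: 'k) * of_nat (fact m) \<noteq> 0" by simp
  then show ?case by (simp only: fact_Suc of_nat_mult of_nat_id) simp
qed

definition shortp :: "path \<Rightarrow> bool" where
  "shortp p \<longleftrightarrow> valid_path p \<and> nb p \<le> 6 \<and> (\<forall>n. p \<noteq> abg n)"

definition FF :: "nat \<Rightarrow> (path \<Rightarrow> 'k::field) \<Rightarrow> 'k" where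
  "FF m f = 6 * of_nat (fact m) * f (abg m) - (9 - 3 ^ m) * f (abg 1) - 2 * (3 ^ m - 3) * f (abg 2)"

definition Jset :: "(path \<Rightarrow> 'k::field) set" where
  "Jset = {f \<in> KQ. (\<forall>p. shortp p \<longrightarrow> f p = 0) \<and> (\<forall>m\<in>{3..6}. FF m f = 0)}"

lemma FF_add: "FF m (kq_add f g) = FF m f + FF m g"
  by (simp add: FF_def kq_add_def algebra_simps)
lemma FF_diff: "FF m (kq_diff f g) = FF m f - FF m g"
  by (simp add: FF_def kq_diff_def algebra_simps)
lemma FF_neg: "FF m (\<lambda>p. - f p) = - FF m f"
  by (simp add: FF_def algebra_simps)

lemma FF_solve:
  assumes chr: "chr_ok TYPE('k::field)" and m: "m \<le> 7" and F: "FF m (f :: path \<Rightarrow> 'k) = 0"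
  shows "f (abg m) = ((9 - 3 ^ m) * f (abg 1) + 2 * (3 ^ m - 3) * f (abg 2)) / (6 * of_nat (fact m))"
proof -
  have c: "(6 * of_nat (fact m) :: 'k) \<noteq> 0"
    using fact_nz[OF chr m] chr_ok_nums[OF chr] by simp
  have "6 * of_nat (fact m) * f (abg m) = (9 - 3 ^ m) * f (abg 1) + 2 * (3 ^ m - 3) * f (abg 2)"
    using F by (simp add: FF_def algebra_simps)
  then show ?thesis using c by (simp add: eq_divide_eq mult.commute)
qed

lemma J_KQ: "f \<in> Jset \<Longrightarrow> f \<in> KQ"
  by (simp add: Jset_def)

lemma J_zero: "kq_zero \<in> Jset"
  using zero_KQ by (simp add: Jset_def kq_zero_def FF_def)

lemma J_add: "f \<in> Jset \<Longrightarrow> g \<in> Jset \<Longrightarrow> kq_add f g \<in> Jset"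
proof -
  assume a: "f \<in> Jset" "g \<in> Jset"
  then have "kq_add f g \<in> KQ" using add_KQ J_KQ by blast
  then show ?thesis using a unfolding Jset_def by (auto simp: FF_add, auto simp: kq_add_def)
qed

lemma J_diff: "f \<in> Jset \<Longrightarrow> g \<in> Jset \<Longrightarrow> kq_diff f g \<in> Jset"
proof -
  assume a: "f \<in> Jset" "g \<in> Jset"
  then have "kq_diff f g \<in> KQ" using diff_KQ J_KQ by blast
  then show ?thesis using a unfolding Jset_def by (auto simp: FF_diff, auto simp: kq_diff_def)
qed

lemma J_neg: "f \<in> Jset \<Longrightarrow> (\<lambda>p. - f p) \<in> Jset"
proof -
  assume a: "f \<in> Jset"
  then have "(\<lambda>p. - f p) \<in> KQ" using neg_KQ J_KQ by blast
  then show ?thesis using a unfolding Jset_def by (auto simp: FF_neg)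
qed

lemma J_smult: "f \<in> Jset \<Longrightarrow> kq_smult c f \<in> Jset"
proof -
  assume f: "f \<in> Jset"
  have "FF m (kq_smult c f) = c * FF m f" for m
    by (simp add: FF_def kq_smult_def algebra_simps)
  moreover have "kq_smult c f \<in> KQ" using f J_KQ smult_KQ by blast
  ultimately show ?thesis using f unfolding Jset_def by (auto simp: kq_smult_def)
qed

lemma short_coef_left:
  assumes a: "a \<in> KQ" and x: "x \<in> Jset" and r: "shortp r"
  shows "kq_mult a x r = 0"
proof (rule mult_zero_coef)
  fix p q assume ap: "a p \<noteq> 0" and xq: "x q \<noteq> 0"
  show "path_mult p q \<noteq> Some r"
  proof
    assume pq: "path_mult p q = Some r"
    have vp: "valid_path p" using KQ_valid[OF a ap] .
    have vq: "valid_path q" using KQ_valid[OF J_KQ[OF x] xq] .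
    have "\<not> shortp q" using x xq by (auto simp: Jset_def)
    moreover have "nb q \<le> 6" using pm_nb[OF pq] r by (simp add: shortp_def)
    ultimately obtain n where "q = abg n" using vq by (auto simp: shortp_def)
    then have "r = abg n" using pm_into_abg_left[OF vp] pq by simp
    then show False using r by (simp add: shortp_def)
  qed
qed

lemma short_coef_right:
  assumes a: "a \<in> KQ" and x: "x \<in> Jset" and r: "shortp r"
  shows "kq_mult x a r = 0"
proof (rule mult_zero_coef)
  fix p q assume xp: "x p \<noteq> 0" and aq: "a q \<noteq> 0"
  show "path_mult p q \<noteq> Some r"
  proof
    assume pq: "path_mult p q = Some r"
    have vq: "valid_path q" using KQ_valid[OF a aq] .
    have vp: "valid_path p" using KQ_valid[OF J_KQ[OF x] xp] .
    have "\<not> shortp p" using x xp by (auto simp: Jset_def)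
    moreover have "nb p \<le> 6" using pm_nb[OF pq] r by (simp add: shortp_def)
    ultimately obtain n where "p = abg n" using vp by (auto simp: shortp_def)
    then have "r = abg n" using pm_into_abg_right[OF vq] pq by simp
    then show False using r by (simp add: shortp_def)
  qed
qed

lemma abg_coef_left:
  assumes a: "a \<in> KQ" and x: "x \<in> Jset" and k: "k \<le> 6"
  shows "kq_mult a x (abg k) = a (Triv V1) * x (abg k)"
proof (rule mult_single[OF KQ_fin[OF a] KQ_fin[OF J_KQ[OF x]]])
  show "path_mult (Triv V1) (abg k) = Some (abg k)" by simp
next
  fix p q assume ap: "a p \<noteq> 0" and xq: "x q \<noteq> 0" and pq: "path_mult p q = Some (abg k)"
  have vp: "valid_path p" using KQ_valid[OF a ap] .
  have vq: "valid_path q" using KQ_valid[OF J_KQ[OF x] xq] .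
  have "\<not> shortp q" using x xq by (auto simp: Jset_def)
  moreover have "nb q \<le> 6" using pm_nb[OF pq] k by simp
  ultimately obtain n where "q = abg n" using vq by (auto simp: shortp_def)
  moreover have "abg k = abg n \<and> p = Triv V1" using pm_into_abg_left[OF vp] pq calculation by blast
  ultimately show "p = Triv V1 \<and> q = abg k" by simp
qed

lemma abg_coef_right:
  assumes a: "a \<in> KQ" and x: "x \<in> Jset" and k: "k \<le> 6"
  shows "kq_mult x a (abg k) = x (abg k) * a (Triv V3)"
proof (rule mult_single[OF KQ_fin[OF J_KQ[OF x]] KQ_fin[OF a]])
  show "path_mult (abg k) (Triv V3) = Some (abg k)" by (simp add: abg_def)
next
  fix p q assume xp: "x p \<noteq> 0" and aq: "a q \<noteq> 0" and pq: "path_mult p q = Some (abg k)"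
  have vq: "valid_path q" using KQ_valid[OF a aq] .
  have vp: "valid_path p" using KQ_valid[OF J_KQ[OF x] xp] .
  have "\<not> shortp p" using x xp by (auto simp: Jset_def)
  moreover have "nb p \<le> 6" using pm_nb[OF pq] k by simp
  ultimately obtain n where "p = abg n" using vp by (auto simp: shortp_def)
  moreover have "abg k = abg n \<and> q = Triv V3" using pm_into_abg_right[OF vq] pq calculation by blast
  ultimately show "p = abg k \<and> q = Triv V3" by simp
qed

lemma J_lmult:
  assumes a: "a \<in> KQ" and x: "x \<in> Jset"
  shows "kq_mult a x \<in> Jset"
proof -
  have "FF m (kq_mult a x) = a (Triv V1) * FF m x" if "m \<in> {3..6}" for m
    using that abg_coef_left[OF a x] by (simp add: FF_def algebra_simps)
  then show ?thesis using x short_coef_left[OF a x] kq_mult_KQ[OF a J_KQ[OF x]]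
    unfolding Jset_def by auto
qed

lemma J_rmult:
  assumes a: "a \<in> KQ" and x: "x \<in> Jset"
  shows "kq_mult x a \<in> Jset"
proof -
  have "FF m (kq_mult x a) = FF m x * a (Triv V3)" if "m \<in> {3..6}" for m
    using that abg_coef_right[OF a x] by (simp add: FF_def algebra_simps)
  then show ?thesis using x short_coef_right[OF a x] kq_mult_KQ[OF J_KQ[OF x] a]
    unfolding Jset_def by auto
qed

definition v1 :: "nat \<Rightarrow> 'k::field" where "v1 = (\<lambda>\<nu>. 1 / of_nat (fact \<nu>))"
definition v3 :: "nat \<Rightarrow> 'k::field" where "v3 = (\<lambda>\<nu>. 3 ^ \<nu> / of_nat (fact \<nu>))"

definition Sgen :: "(path \<Rightarrow> 'k::field) set" where
  "Sgen = { bpath (Nontriv (replicate 7 Beta)),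
          bpath (Nontriv [Alpha, Gamma]),
          alpha_poly_gamma (\<lambda>\<nu>. 1 / of_nat (fact \<nu>)) 6,
          alpha_poly_gamma (\<lambda>\<nu>. 3 ^ \<nu> / of_nat (fact \<nu>)) 6 }"

lemma bp7: "Nontriv (replicate 7 Beta) = bp 7" by (simp add: bp_def)
lemma abg0: "Nontriv [Alpha, Gamma] = abg 0" by (simp add: abg_def)

lemma apg_eq: "alpha_poly_gamma v n = (\<lambda>r. \<Sum>i\<le>n. v i * bpath (abg i) r)"
  by (simp add: alpha_poly_gamma_def abg_def)

lemma apg_val: "j \<le> n \<Longrightarrow> alpha_poly_gamma v n (abg j) = v j"
proof -
  assume j: "j \<le> n"
  have "(\<Sum>i\<le>n. v i * bpath (abg i) (abg j)) = (\<Sum>i\<le>n. if i = j then v j else 0)"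
    by (intro sum.cong) (auto simp: bpath_def)
  also have "\<dots> = v j" using j by (simp add: sum.delta')
  finally show ?thesis by (simp add: apg_eq)
qed

lemma apg_zero: "(\<And>i. i \<le> n \<Longrightarrow> r \<noteq> abg i) \<Longrightarrow> alpha_poly_gamma v n r = 0"
  by (simp add: apg_eq bpath_def)

lemma apg_KQ: "alpha_poly_gamma v n \<in> KQ"
proof -
  have "supp (alpha_poly_gamma v n) \<subseteq> abg ` {..n}"
  proof
    fix p assume "p \<in> supp (alpha_poly_gamma v n)"
    then have "alpha_poly_gamma v n p \<noteq> 0" by (simp add: supp_def)
    then obtain i where "i \<le> n" "p = abg i" using apg_zero[of n p v] by auto
    then show "p \<in> abg ` {..n}" by auto
  qed
  then have "finite (supp (alpha_poly_gamma v n))" using finite_subset by blast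
  moreover have "valid_path r" if nz: "alpha_poly_gamma v n r \<noteq> 0" for r
  proof -
    obtain i where "r = abg i" using apg_zero[of n r v] nz by auto
    then show ?thesis by simp
  qed
  ultimately show ?thesis by (simp add: KQ_iff)
qed

lemma Sgen_KQ: "Sgen \<subseteq> KQ"
  unfolding Sgen_def bp7 abg0 by (auto intro!: bpath_KQ apg_KQ)

lemma apg_J:
  assumes "\<And>m. m \<in> {3..6} \<Longrightarrow> 6 * of_nat (fact m) * v m - (9 - 3 ^ m) * v 1 - 2 * (3 ^ m - 3) * v 2 = 0"
  shows "alpha_poly_gamma v 6 \<in> Jset"
proof -
  have "alpha_poly_gamma v 6 p = 0" if "shortp p" for p
    using that by (intro apg_zero) (auto simp: shortp_def)
  moreover have "FF m (alpha_poly_gamma v 6) = 0" if "m \<in> {3..6}" for m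
    using that assms[OF that] by (simp add: FF_def apg_val)
  ultimately show ?thesis using apg_KQ by (simp add: Jset_def)
qed

lemma Sgen_J:
  assumes chr: "chr_ok TYPE('k::field)"
  shows "(Sgen :: (path \<Rightarrow> 'k) set) \<subseteq> Jset"
proof -
  note nz = chr_ok_nums[OF chr]
  have g1: "bpath (bp 7) \<in> (Jset :: (path \<Rightarrow> 'k) set)"
    using bpath_KQ[of "bp 7"] by (auto simp: Jset_def shortp_def bpath_def FF_def)
  have g2: "bpath (abg 0) \<in> (Jset :: (path \<Rightarrow> 'k) set)"
    using bpath_KQ[of "abg 0"] by (auto simp: Jset_def shortp_def bpath_def FF_def)
  have m36: "m \<in> {3..6} \<Longrightarrow> m = 3 \<or> m = 4 \<or> m = 5 \<or> m = 6" for m :: nat by auto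
  have g3: "alpha_poly_gamma (\<lambda>\<nu>. 1 / of_nat (fact \<nu>)) 6 \<in> (Jset :: (path \<Rightarrow> 'k) set)"
    apply (rule apg_J)
    apply (drule m36)
    apply (elim disjE)
    using nz by (simp_all add: fact_numeral divide_simps)
  have g4: "alpha_poly_gamma (\<lambda>\<nu>. 3 ^ \<nu> / of_nat (fact \<nu>)) 6 \<in> (Jset :: (path \<Rightarrow> 'k) set)"
    apply (rule apg_J)
    apply (drule m36)
    apply (elim disjE)
    using nz by (simp_all add: fact_numeral divide_simps)
  show ?thesis unfolding Sgen_def bp7 abg0 using g1 g2 g3 g4 by auto
qed

lemma I_sub_J:
  assumes chr: "chr_ok TYPE('k::field)" and x: "x \<in> gen_ideal (Sgen :: (path \<Rightarrow> 'k) set)"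
  shows "x \<in> Jset"
  using x
proof (induction rule: gen_ideal.induct)
  case gi_zero then show ?case by (rule J_zero)
next
  case (gi_gen s) then show ?case using Sgen_J[OF chr] by auto
next
  case (gi_add x y) then show ?case using J_add by blast
next
  case (gi_lmult a x) then show ?case using J_lmult by blast
next
  case (gi_rmult a x) then show ?case using J_rmult by blast
qed

lemma gi_KQ: "x \<in> gen_ideal S \<Longrightarrow> S \<subseteq> KQ \<Longrightarrow> x \<in> KQ"
  by (induction rule: gen_ideal.induct) (auto simp: zero_KQ add_KQ kq_mult_KQ)

lemma gi_smult:
  assumes "x \<in> gen_ideal S" "S \<subseteq> KQ"
  shows "kq_smult c x \<in> gen_ideal S"
proof -
  have "kq_mult (kq_smult c kq_one) x \<in> gen_ideal S"
    by (rule gi_lmult[OF smult_one_KQ assms(1)])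
  then show ?thesis using smult_one_mult[OF gi_KQ[OF assms]] by simp
qed

lemma gi_sum:
  assumes "finite F" "\<And>p. p \<in> F \<Longrightarrow> g p \<in> gen_ideal S"
  shows "(\<lambda>r. \<Sum>p\<in>F. g p r) \<in> gen_ideal S"
  using assms
proof (induction F rule: finite_induct)
  case empty
  then show ?case using gi_zero[of S] by (simp add: kq_zero_def)
next
  case (insert x F)
  then have "kq_add (g x) (\<lambda>r. \<Sum>p\<in>F. g p r) \<in> gen_ideal S"
    by (intro gi_add) auto
  then show ?case using insert by (simp add: kq_add_def)
qed

lemma bp_in_I: "n \<ge> 7 \<Longrightarrow> bpath (bp n) \<in> gen_ideal (Sgen :: (path \<Rightarrow> 'k::field) set)"
proof -
  assume n: "n \<ge> 7"
  have "bpath (bp 7) \<in> gen_ideal (Sgen :: (path \<Rightarrow> 'k) set)" by (rule gi_gen) (simp add: Sgen_def bp7)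
  then have "kq_mult (bpath (bp 7)) (bpath (bp (n - 7))) \<in> gen_ideal (Sgen :: (path \<Rightarrow> 'k) set)"
    by (rule gi_rmult[OF bpath_KQ, rotated]) simp
  moreover have "kq_mult (bpath (bp 7)) (bpath (bp (n - 7))) = (bpath (bp n) :: path \<Rightarrow> 'k)"
    using bpath_mult[OF valid_bp valid_bp pm_bp_bp[of 7 "n - 7"]] n by simp
  ultimately show ?thesis by simp
qed

lemma long_in_I:
  assumes "valid_path p" "nb p \<ge> 7"
  shows "bpath p \<in> gen_ideal (Sgen :: (path \<Rightarrow> 'k::field) set)"
proof -
  have cases: "(\<exists>v. p = Triv v) \<or> (\<exists>n. p = bp n) \<or> (\<exists>n. p = aN n) \<or> (\<exists>n. p = gN n) \<or> (\<exists>n. p = abg n)"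
    using valid_classify[OF assms(1)] .
  have gN_I: "bpath (gN n) \<in> gen_ideal (Sgen :: (path \<Rightarrow> 'k) set)" if "n \<ge> 7" for n
  proof -
    have "kq_mult (bpath (bp n)) (bpath (gN 0)) \<in> gen_ideal (Sgen :: (path \<Rightarrow> 'k) set)"
      by (rule gi_rmult[OF bpath_KQ bp_in_I[OF that]]) simp
    moreover have "kq_mult (bpath (bp n)) (bpath (gN 0)) = (bpath (gN n) :: path \<Rightarrow> 'k)"
      using bpath_mult[OF valid_bp valid_gN pm_bp_gN[of n 0]] by simp
    ultimately show ?thesis by simp
  qed
  show ?thesis
    using cases
  proof (elim disjE exE)
    fix v assume "p = Triv v" then show ?thesis using assms by simp
  next
    fix n assume "p = bp n" then show ?thesis using assms bp_in_I by simp
  next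
    fix n assume p: "p = aN n"
    have "kq_mult (bpath (aN 0)) (bpath (bp n)) \<in> gen_ideal (Sgen :: (path \<Rightarrow> 'k) set)"
      by (rule gi_lmult[OF bpath_KQ bp_in_I]) (use assms p in auto)
    moreover have "kq_mult (bpath (aN 0)) (bpath (bp n)) = (bpath (aN n) :: path \<Rightarrow> 'k)"
      using bpath_mult[OF valid_aN valid_bp pm_aN_bp[of 0 n]] by simp
    ultimately show ?thesis using p by simp
  next
    fix n assume "p = gN n" then show ?thesis using assms gN_I by simp
  next
    fix n assume p: "p = abg n"
    have "kq_mult (bpath (aN 0)) (bpath (gN n)) \<in> gen_ideal (Sgen :: (path \<Rightarrow> 'k) set)"
      by (rule gi_lmult[OF bpath_KQ gN_I]) (use assms p in auto)
    moreover have "kq_mult (bpath (aN 0)) (bpath (gN n)) = (bpath (abg n) :: path \<Rightarrow> 'k)"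
      using bpath_mult[OF valid_aN valid_gN pm_aN_gN[of 0 n]] by simp
    ultimately show ?thesis using p by simp
  qed
qed


lemma J_sub_I:
  assumes chr: "chr_ok TYPE('k::field)" and f: "(f :: path \<Rightarrow> 'k) \<in> Jset"
  shows "f \<in> gen_ideal Sgen"
proof -
  have nzs: "(12::'k) \<noteq> 0" "(18::'k) \<noteq> 0" "(36::'k) \<noteq> 0" "(48::'k) \<noteq> 0" "(72::'k) \<noteq> 0" "(144::'k) \<noteq> 0" "(216::'k) \<noteq> 0" "(240::'k) \<noteq> 0" "(288::'k) \<noteq> 0" "(432::'k) \<noteq> 0" "(864::'k) \<noteq> 0" "(1440::'k) \<noteq> 0" "(1728::'k) \<noteq> 0" "(2880::'k) \<noteq> 0" "(4320::'k) \<noteq> 0" "(5184::'k) \<noteq> 0" "(6912::'k) \<noteq> 0" "(8640::'k) \<noteq> 0" "(10368::'k) \<noteq> 0" "(17280::'k) \<noteq> 0" "(25920::'k) \<noteq> 0" "(51840::'k) \<noteq> 0" "(172800::'k) \<noteq> 0" "(6220800::'k) \<noteq> 0"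
    by (simp_all add: numeral_nz[OF chr] smooth.simps)
  note nz = chr_ok_nums[OF chr] nzs
  have fK: "f \<in> KQ" using f by (simp add: Jset_def)
  have fshort: "\<And>p. shortp p \<Longrightarrow> f p = 0" using f by (simp add: Jset_def)
  have fFF: "\<And>m. m \<in> {3..6} \<Longrightarrow> FF m f = 0" using f by (simp add: Jset_def)
  define fL where "fL = (\<lambda>r. if 7 \<le> nb r then f r else 0)"
  define fA where "fA = (\<lambda>r. if 7 \<le> nb r then 0 else f r)"
  have fsplit: "f = kq_add fL fA" by (auto simp: fL_def fA_def kq_add_def)
  have "supp fL \<subseteq> supp f" by (auto simp: supp_def fL_def)
  then have fLK: "fL \<in> KQ" using fK unfolding KQ_iff by (auto simp: fL_def intro: finite_subset split: if_splits)
  have L: "fL \<in> gen_ideal Sgen"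
  proof -
    have "fL = (\<lambda>r. \<Sum>p\<in>supp fL. kq_smult (fL p) (bpath p) r)"
      using KQ_expand[OF fLK] by (simp add: kq_smult_def)
    moreover have "(\<lambda>r. \<Sum>p\<in>supp fL. kq_smult (fL p) (bpath p) r) \<in> gen_ideal Sgen"
    proof (rule gi_sum[OF KQ_fin[OF fLK]])
      fix p assume "p \<in> supp fL"
      then have "7 \<le> nb p" "f p \<noteq> 0" by (auto simp: supp_def fL_def split: if_splits)
      then have "bpath p \<in> gen_ideal (Sgen :: (path \<Rightarrow> 'k) set)" using long_in_I KQ_valid[OF fK] by blast
      then show "kq_smult (fL p) (bpath p) \<in> gen_ideal Sgen" using gi_smult Sgen_KQ by blast
    qed
    ultimately show ?thesis by simp
  qed
  define f0 where "f0 = f (abg 0)"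
  define f1 where "f1 = f (abg 1)"
  define f2 where "f2 = f (abg 2)"
  define y where "y = (3 * f1 - 2 * f2) / 2"
  define z where "z = (2 * f2 - f1) / 6"
  define x where "x = f0 - y - z"
  have vals: "f (abg n) = x * (if n = 0 then 1 else 0) + y * (1 / of_nat (fact n)) + z * (3 ^ n / of_nat (fact n))"
    if "n \<le> 6" for n
  proof -
    have "n = 0 \<or> n = 1 \<or> n = 2 \<or> n = 3 \<or> n = 4 \<or> n = 5 \<or> n = 6" using that by auto
    then show ?thesis
    proof (elim disjE)
      assume "n = 0" then show ?thesis by (simp add: x_def f0_def)
    next
      assume "n = 1" then show ?thesis using nz by (simp add: y_def z_def f1_def field_simps)
    next
      assume "n = 2" then show ?thesis using nz by (simp add: y_def z_def f2_def fact_numeral field_simps)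
    next
      assume n: "n = 3"
      have e: "f (abg 3) = ((9 - 3 ^ 3) * f (abg 1) + 2 * (3 ^ 3 - 3) * f (abg 2)) / (6 * of_nat (fact 3))"
        by (rule FF_solve[OF chr _ fFF]) simp_all
      show ?thesis unfolding n e using nz
        by (simp add: y_def z_def f1_def f2_def fact_numeral field_simps)
    next
      assume n: "n = 4"
      have e: "f (abg 4) = ((9 - 3 ^ 4) * f (abg 1) + 2 * (3 ^ 4 - 3) * f (abg 2)) / (6 * of_nat (fact 4))"
        by (rule FF_solve[OF chr _ fFF]) simp_all
      show ?thesis unfolding n e using nz
        by (simp add: y_def z_def f1_def f2_def fact_numeral field_simps)
    next
      assume n: "n = 5"
      have e: "f (abg 5) = ((9 - 3 ^ 5) * f (abg 1) + 2 * (3 ^ 5 - 3) * f (abg 2)) / (6 * of_nat (fact 5))"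
        by (rule FF_solve[OF chr _ fFF]) simp_all
      show ?thesis unfolding n e using nz
        by (simp add: y_def z_def f1_def f2_def fact_numeral field_simps)
    next
      assume n: "n = 6"
      have e: "f (abg 6) = ((9 - 3 ^ 6) * f (abg 1) + 2 * (3 ^ 6 - 3) * f (abg 2)) / (6 * of_nat (fact 6))"
        by (rule FF_solve[OF chr _ fFF]) simp_all
      show ?thesis unfolding n e using nz
        by (simp add: y_def z_def f1_def f2_def fact_numeral field_simps)
    qed
  qed
  let ?G1 = "alpha_poly_gamma (\<lambda>\<nu>. 1 / of_nat (fact \<nu>)) 6 :: path \<Rightarrow> 'k"
  let ?G3 = "alpha_poly_gamma (\<lambda>\<nu>. 3 ^ \<nu> / of_nat (fact \<nu>)) 6 :: path \<Rightarrow> 'k"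
  have fAeq: "fA = kq_add (kq_smult x (bpath (abg 0))) (kq_add (kq_smult y ?G1) (kq_smult z ?G3))"
  proof
    fix r
    show "fA r = kq_add (kq_smult x (bpath (abg 0))) (kq_add (kq_smult y ?G1) (kq_smult z ?G3)) r"
    proof (cases "\<exists>n\<le>6. r = abg n")
      case True
      then obtain n where n: "n \<le> 6" "r = abg n" by blast
      then show ?thesis using vals[OF n(1)]
        by (simp add: fA_def kq_add_def kq_smult_def apg_val bpath_def)
    next
      case False
      have "fA r = 0"
      proof (cases "7 \<le> nb r")
        case True then show ?thesis by (simp add: fA_def)
      next
        case nb: False
        show ?thesis
        proof (cases "f r = 0")
          case False
          then have "valid_path r" using KQ_valid[OF fK] by blast
          moreover have "\<forall>n. r \<noteq> abg n"
          proof
            fix n show "r \<noteq> abg n"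
            proof
              assume "r = abg n"
              then have "n \<le> 6" using nb by simp
              then show False using \<open>r = abg n\<close> \<open>\<not> (\<exists>n\<le>6. r = abg n)\<close> by blast
            qed
          qed
          ultimately have "shortp r" using nb by (simp add: shortp_def)
          then show ?thesis using fshort by (simp add: fA_def)
        qed (simp add: fA_def)
      qed
      moreover have "(bpath (abg 0) r :: 'k) = 0" using False by (auto simp: bpath_def)
      moreover have "?G1 r = 0" "?G3 r = 0" using False by (auto intro!: apg_zero)
      ultimately show ?thesis by (simp add: kq_add_def kq_smult_def)
    qed
  qed
  have g0: "bpath (abg 0) \<in> gen_ideal (Sgen :: (path \<Rightarrow> 'k) set)"
    by (rule gi_gen) (simp add: Sgen_def abg0)
  have g1: "?G1 \<in> gen_ideal Sgen" by (rule gi_gen) (simp add: Sgen_def)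
  have g3: "?G3 \<in> gen_ideal Sgen" by (rule gi_gen) (simp add: Sgen_def)
  have A: "fA \<in> gen_ideal Sgen"
    unfolding fAeq using g0 g1 g3 gi_smult[OF _ Sgen_KQ] by (intro gi_add) auto
  show ?thesis using gi_add[OF L A] fsplit by simp
qed

lemma I_eq_J:
  assumes chr: "chr_ok TYPE('k::field)"
  shows "gen_ideal (Sgen :: (path \<Rightarrow> 'k) set) = Jset"
  using I_sub_J[OF chr] J_sub_I[OF chr] by blast

section \<open>The ideal inside kqt\<close>

definition Jk :: "'k::field kqt set" where "Jk = {x. R x \<in> Jset}"

lemma R_KQ: "R x \<in> KQ" using R by blast
lemma RA: "f \<in> KQ \<Longrightarrow> R (A f) = f" by (rule A_inverse)

lemma R_plus: "R (x + y) = kq_add (R x) (R y)" by (rule plus_kqt.rep_eq)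
lemma R_minus: "R (x - y) = kq_diff (R x) (R y)" by (rule minus_kqt.rep_eq)
lemma R_uminus: "R (- x) = (\<lambda>p. - R x p)" by (rule uminus_kqt.rep_eq)
lemma R_times: "R (x * y) = kq_mult (R x) (R y)" by (rule times_kqt.rep_eq)
lemma R_zero: "R 0 = kq_zero" by (rule zero_kqt.rep_eq)
lemma R_one: "R 1 = kq_one" by (rule one_kqt.rep_eq)

lemma Jk_add: "a \<in> Jk \<Longrightarrow> b \<in> Jk \<Longrightarrow> a + b \<in> Jk"
  by (simp add: Jk_def R_plus J_add)
lemma Jk_diff: "a \<in> Jk \<Longrightarrow> b \<in> Jk \<Longrightarrow> a - b \<in> Jk"
  by (simp add: Jk_def R_minus J_diff)
lemma Jk_neg: "a \<in> Jk \<Longrightarrow> - a \<in> Jk"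
  by (simp add: Jk_def R_uminus J_neg)
lemma Jk_zero: "0 \<in> Jk"
  by (simp add: Jk_def R_zero J_zero)
lemma Jk_lmult: "b \<in> Jk \<Longrightarrow> a * b \<in> Jk"
  by (simp add: Jk_def R_times J_lmult R_KQ)
lemma Jk_rmult: "a \<in> Jk \<Longrightarrow> a * b \<in> Jk"
  by (simp add: Jk_def R_times J_rmult R_KQ)

definition crel :: "'k::field kqt \<Rightarrow> 'k kqt \<Rightarrow> bool" where
  "crel x y \<longleftrightarrow> x - y \<in> Jk"

lemma crel_refl[simp]: "crel x x"
  by (simp add: crel_def Jk_zero)

lemma crel_equivp: "equivp crel"
proof (rule equivpI)
  show "reflp crel" by (simp add: reflp_def)
  show "symp crel"
  proof (rule sympI, unfold crel_def)
    fix x y assume "x - y \<in> Jk"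
    then have "- (x - y) \<in> Jk" by (rule Jk_neg)
    then show "y - x \<in> Jk" by simp
  qed
  show "transp crel"
  proof (rule transpI, unfold crel_def)
    fix x y z assume "x - y \<in> Jk" "y - z \<in> Jk"
    then have "(x - y) + (y - z) \<in> Jk" by (rule Jk_add)
    then show "x - z \<in> Jk" by simp
  qed
qed

quotient_type (overloaded) 'k lam = "'k::field kqt" / crel
  morphisms rp ab
  by (rule crel_equivp)

lemma crel_plus: "crel x x' \<Longrightarrow> crel y y' \<Longrightarrow> crel (x + y) (x' + y')"
  unfolding crel_def
proof -
  assume "x - x' \<in> Jk" "y - y' \<in> Jk"
  then have "(x - x') + (y - y') \<in> Jk" by (rule Jk_add)
  then show "x + y - (x' + y') \<in> Jk" by (simp add: algebra_simps)
qed

lemma crel_minus: "crel x x' \<Longrightarrow> crel y y' \<Longrightarrow> crel (x - y) (x' - y')"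
  unfolding crel_def
proof -
  assume "x - x' \<in> Jk" "y - y' \<in> Jk"
  then have "(x - x') - (y - y') \<in> Jk" by (rule Jk_diff)
  then show "x - y - (x' - y') \<in> Jk" by (simp add: algebra_simps)
qed

lemma crel_uminus: "crel x x' \<Longrightarrow> crel (- x) (- x')"
  unfolding crel_def
proof -
  assume "x - x' \<in> Jk"
  then have "- (x - x') \<in> Jk" by (rule Jk_neg)
  then show "- x - - x' \<in> Jk" by (simp add: algebra_simps)
qed

lemma crel_times: "crel x x' \<Longrightarrow> crel y y' \<Longrightarrow> crel (x * y) (x' * y')"
  unfolding crel_def
proof -
  assume "x - x' \<in> Jk" "y - y' \<in> Jk"
  then have "(x - x') * y + x' * (y - y') \<in> Jk" by (intro Jk_add Jk_rmult Jk_lmult)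
  then show "x * y - x' * y' \<in> Jk" by (simp add: algebra_simps)
qed

instantiation lam :: (field) ring_1
begin

lift_definition zero_lam :: "'a lam" is 0 .
lift_definition one_lam :: "'a lam" is 1 .
lift_definition plus_lam :: "'a lam \<Rightarrow> 'a lam \<Rightarrow> 'a lam" is "(+)" by (rule crel_plus)
lift_definition minus_lam :: "'a lam \<Rightarrow> 'a lam \<Rightarrow> 'a lam" is "(-)" by (rule crel_minus)
lift_definition uminus_lam :: "'a lam \<Rightarrow> 'a lam" is "uminus" by (rule crel_uminus)
lift_definition times_lam :: "'a lam \<Rightarrow> 'a lam \<Rightarrow> 'a lam" is "(*)" by (rule crel_times)

instance
proof
  fix a b c :: "'a lam"
  show "a + b + c = a + (b + c)" by transfer (simp add: algebra_simps)
  show "a + b = b + a" by transfer (simp add: algebra_simps)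
  show "0 + a = a" by transfer simp
  show "- a + a = 0" by transfer simp
  show "a - b = a + - b" by transfer simp
  show "a * b * c = a * (b * c)" by transfer (simp add: algebra_simps)
  show "(a + b) * c = a * c + b * c" by transfer (simp add: algebra_simps)
  show "a * (b + c) = a * b + a * c" by transfer (simp add: algebra_simps)
  show "1 * a = a" by transfer simp
  show "a * 1 = a" by transfer simp
  show "(0::'a lam) \<noteq> 1"
  proof transfer
    show "\<not> crel (0::'a kqt) 1"
    proof
      assume "crel (0::'a kqt) 1"
      moreover have "shortp (Triv V1)" unfolding shortp_def using abg_ne_Triv(1) by (auto simp: eq_commute[of "Triv V1"])
      moreover have "R (0 - 1 :: 'a kqt) \<in> Jset"
        using calculation(1) unfolding crel_def Jk_def by simp
      ultimately have "R (0 - 1 :: 'a kqt) (Triv V1) = 0"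
        unfolding Jset_def by simp
      then show False by (simp add: R_uminus R_minus R_zero R_one kq_diff_def kq_zero_def kq_one_def)
    qed
  qed
qed

end

lift_definition of_k :: "'k::field \<Rightarrow> 'k kqt" is "\<lambda>c. kq_smult c kq_one" by (rule smult_one_KQ)

lemma R_inj: "R x = R y \<Longrightarrow> x = y" by (simp add: R_inject)

lemma of_k_mult_R: "R (of_k c * x) = kq_smult c (R x)"
  by (simp add: R_times of_k.rep_eq smult_one_mult R_KQ)
lemma mult_of_k_R: "R (x * of_k c) = kq_smult c (R x)"
  by (simp add: R_times of_k.rep_eq mult_smult_one R_KQ)

lemma of_k_central: "of_k c * x = x * of_k c"
  by (rule R_inj) (simp add: of_k_mult_R mult_of_k_R)

lemma of_k_add: "of_k (c + d) = of_k c + of_k d"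
  by (rule R_inj) (simp add: of_k.rep_eq R_plus kq_smult_def kq_add_def algebra_simps)
lemma of_k_mult: "of_k (c * d) = of_k c * of_k d"
  by (rule R_inj) (simp add: of_k_mult_R of_k.rep_eq kq_smult_def mult.assoc)
lemma of_k_one: "of_k 1 = 1"
  by (rule R_inj) (simp add: of_k.rep_eq R_one kq_smult_def)
lemma of_k_zero: "of_k 0 = 0"
  by (rule R_inj) (simp add: of_k.rep_eq R_zero kq_smult_def kq_zero_def)

lemma R_sum: "finite S \<Longrightarrow> R (\<Sum>i\<in>S. f i) = (\<lambda>r. \<Sum>i\<in>S. R (f i) r)"
  by (induction S rule: finite_induct) (auto simp: R_zero R_plus kq_zero_def kq_add_def)

lift_definition of_kl :: "'k::field \<Rightarrow> 'k lam" is of_k .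

lemma of_kl_central: "of_kl c * x = x * of_kl c"
  by transfer (simp add: of_k_central)
lemma of_kl_add: "of_kl (c + d) = of_kl c + of_kl d"
  by transfer (simp add: of_k_add)
lemma of_kl_mult: "of_kl (c * d) = of_kl c * of_kl d"
  by transfer (simp add: of_k_mult)
lemma of_kl_one[simp]: "of_kl 1 = 1"
  by transfer (simp add: of_k_one)
lemma of_kl_zero[simp]: "of_kl 0 = 0"
  by transfer (simp add: of_k_zero)
lemma of_kl_minus: "of_kl (- c) = - of_kl c"
  using of_kl_add[of c "- c"] by (simp add: eq_neg_iff_add_eq_0 add.commute)
lemma of_kl_diff: "of_kl (c - d) = of_kl c - of_kl d"
  using of_kl_add[of c "- d"] of_kl_minus[of d] by simp
lemma of_kl_of_nat: "of_kl (of_nat n) = of_nat n"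
  by (induction n) (simp_all add: of_kl_add)
lemma of_kl_sum: "of_kl (\<Sum>i\<in>S. f i) = (\<Sum>i\<in>S. of_kl (f i))"
  by (induction S rule: infinite_finite_induct) (simp_all add: of_kl_add)

definition cl :: "path \<Rightarrow> 'k::field lam" where "cl p = ab (A (bpath p))"

lemma A_times: "f \<in> KQ \<Longrightarrow> g \<in> KQ \<Longrightarrow> A f * A g = A (kq_mult f g)"
  by (rule R_inj) (simp add: R_times RA kq_mult_KQ)
lemma A_plus: "f \<in> KQ \<Longrightarrow> g \<in> KQ \<Longrightarrow> A f + A g = A (kq_add f g)"
  by (rule R_inj) (simp add: R_plus RA add_KQ)

lemma cl_mult:
  assumes "valid_path p" "valid_path q" "path_mult p q = Some r"
  shows "cl p * cl q = (cl r :: 'k::field lam)"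
proof -
  have "cl p * cl q = (ab (A (bpath p) * A (bpath q)) :: 'k lam)"
    by (simp add: cl_def times_lam.abs_eq)
  also have "A (bpath p) * A (bpath q) = (A (bpath r) :: 'k kqt)"
    by (simp add: A_times bpath_KQ assms bpath_mult)
  finally show ?thesis by (simp add: cl_def)
qed

lemma cl_mult0:
  assumes "valid_path p" "valid_path q" "path_mult p q = None"
  shows "cl p * cl q = (0 :: 'k::field lam)"
proof -
  have "cl p * cl q = (ab (A (bpath p) * A (bpath q)) :: 'k lam)"
    by (simp add: cl_def times_lam.abs_eq)
  also have "A (bpath p) * A (bpath q) = (0 :: 'k kqt)"
    using A_times[OF bpath_KQ[OF assms(1)] bpath_KQ[OF assms(2)]] bpath_mult_none[OF assms(3)]
    by (metis zero_kqt_def)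
  finally show ?thesis by (simp add: zero_lam_def)
qed

lemma ab_J: "f \<in> Jset \<Longrightarrow> ab (A f) = (0 :: 'k::field lam)"
proof -
  assume f: "f \<in> Jset"
  have "crel (A f) (0 :: 'k kqt)"
    unfolding crel_def Jk_def using f by (simp add: RA J_KQ R_zero kq_diff_def kq_zero_def)
  then show ?thesis by (simp add: zero_lam_def lam.abs_eq_iff)
qed


section \<open>Coefficient functionals\<close>

lemma crel_coef: "crel x y \<Longrightarrow> shortp r \<Longrightarrow> R x r = R y r"
  unfolding crel_def Jk_def Jset_def by (auto simp: R_minus kq_diff_def)

lemma crel_FF: "crel x y \<Longrightarrow> m \<in> {3..6} \<Longrightarrow> FF m (R x) = FF m (R y)"
  unfolding crel_def Jk_def Jset_def by (auto simp: R_minus FF_diff)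

lift_definition coefl :: "path \<Rightarrow> 'k::field lam \<Rightarrow> 'k" is "\<lambda>r x. if shortp r then R x r else 0"
  using crel_coef by auto

lift_definition Fl :: "nat \<Rightarrow> 'k::field lam \<Rightarrow> 'k" is "\<lambda>m x. if m \<in> {3..6} then FF m (R x) else 0"
  using crel_FF by auto

lemma coefl_add: "coefl r (x + y) = coefl r x + coefl r y"
  by transfer (simp add: R_plus kq_add_def)
lemma coefl_diff: "coefl r (x - y) = coefl r x - coefl r y"
  by transfer (simp add: R_minus kq_diff_def)
lemma coefl_zero[simp]: "coefl r 0 = 0"
  by transfer (simp add: R_zero kq_zero_def)
lemma coefl_smult: "coefl r (of_kl c * x) = c * coefl r x"
  by transfer (simp add: of_k_mult_R kq_smult_def)
lemma coefl_sum: "coefl r (\<Sum>i\<in>S. f i) = (\<Sum>i\<in>S. coefl r (f i))"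
  by (induction S rule: infinite_finite_induct) (simp_all add: coefl_add)

lemma Fl_add: "Fl m (x + y) = Fl m x + Fl m y"
  by transfer (simp add: R_plus FF_add)
lemma Fl_diff: "Fl m (x - y) = Fl m x - Fl m y"
  by transfer (simp add: R_minus FF_diff)
lemma Fl_zero[simp]: "Fl m 0 = 0"
  by transfer (simp add: R_zero FF_def kq_zero_def)
lemma Fl_smult: "Fl m (of_kl c * x) = c * Fl m x"
  by transfer (simp add: of_k_mult_R kq_smult_def FF_def algebra_simps)
lemma Fl_sum: "Fl m (\<Sum>i\<in>S. f i) = (\<Sum>i\<in>S. Fl m (f i))"
  by (induction S rule: infinite_finite_induct) (simp_all add: Fl_add)

lemma lam_zero_iff:
  "x = 0 \<longleftrightarrow> (\<forall>r. shortp r \<longrightarrow> coefl r x = 0) \<and> (\<forall>m\<in>{3..6}. Fl m x = 0)"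
proof transfer
  fix x :: "'a::field kqt"
  show "crel x 0 \<longleftrightarrow> (\<forall>r. shortp r \<longrightarrow> (if shortp r then R x r else 0) = 0) \<and>
          (\<forall>m\<in>{3..6}. (if m \<in> {3..6} then FF m (R x) else 0) = 0)"
    unfolding crel_def Jk_def Jset_def
    by (simp add: R_minus R_zero kq_diff_def kq_zero_def R_KQ[of x, unfolded kq_diff_def])
qed

lemma RAb: "valid_path p \<Longrightarrow> R (A (bpath p)) = bpath p"
  by (simp add: RA bpath_KQ)

lemma ab_sum: "ab (\<Sum>i\<in>S. f i) = (\<Sum>i\<in>S. ab (f i) :: 'k::field lam)"
  by (induction S rule: infinite_finite_induct) (simp_all add: zero_lam_def plus_lam.abs_eq[symmetric])

lemma coefl_cl: "valid_path p \<Longrightarrow> shortp r \<Longrightarrow> coefl r (cl p :: 'k::field lam) = (if p = r then 1 else 0)"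
  unfolding cl_def by transfer (simp add: RAb, simp add: bpath_def)

definition Fco :: "nat \<Rightarrow> nat \<Rightarrow> 'k::field" where
  "Fco m n = (if n = m then 6 * of_nat (fact m) else 0) - (if n = 1 then 9 - 3 ^ m else 0)
     - (if n = 2 then 2 * (3 ^ m - 3) else 0)"

lemma Fl_cl_abg: "m \<in> {3..6} \<Longrightarrow> Fl m (cl (abg n) :: 'k::field lam) = Fco m n"
  unfolding cl_def by transfer (simp add: RAb, auto simp: bpath_def FF_def Fco_def)

lemma Fl_cl_other: "m \<in> {3..6} \<Longrightarrow> valid_path p \<Longrightarrow> (\<forall>n. p \<noteq> abg n) \<Longrightarrow> Fl m (cl p :: 'k::field lam) = 0"
  unfolding cl_def by transfer (simp add: RAb, auto simp: bpath_def FF_def)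

lemma ab_expand:
  assumes "w \<in> KQ"
  shows "ab (A w) = (\<Sum>p\<in>supp w. of_kl (w p) * cl p :: 'k::field lam)"
proof -
  have "A w = (\<Sum>p\<in>supp w. of_k (w p) * A (bpath p))"
  proof (rule R_inj)
    have "R (\<Sum>p\<in>supp w. of_k (w p) * A (bpath p)) = (\<lambda>r. \<Sum>p\<in>supp w. R (of_k (w p) * A (bpath p)) r)"
      by (rule R_sum[OF KQ_fin[OF assms]])
    also have "\<dots> = (\<lambda>r. \<Sum>p\<in>supp w. w p * bpath p r)"
      apply (rule ext, rule sum.cong[OF refl])
      using assms by (simp add: of_k_mult_R kq_smult_def RA bpath_KQ KQ_valid supp_def)
    also have "\<dots> = w" using KQ_expand[OF assms] by simp
    finally show "R (A w) = R (\<Sum>p\<in>supp w. of_k (w p) * A (bpath p))" using RA[OF assms] by simp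
  qed
  then have "ab (A w) = (ab (\<Sum>p\<in>supp w. of_k (w p) * A (bpath p)) :: 'k lam)" by simp
  also have "\<dots> = (\<Sum>p\<in>supp w. ab (of_k (w p) * A (bpath p)))"
    by (rule ab_sum)
  also have "\<dots> = (\<Sum>p\<in>supp w. of_kl (w p) * cl p)"
    by (simp add: cl_def of_kl.abs_eq times_lam.abs_eq)
  finally show ?thesis .
qed

definition E1 :: "'k::field lam" where "E1 = cl (Triv V1)"
definition E2 :: "'k::field lam" where "E2 = cl (Triv V2)"
definition E3 :: "'k::field lam" where "E3 = cl (Triv V3)"
definition al :: "'k::field lam" where "al = cl (aN 0)"
definition be :: "'k::field lam" where "be = cl (bp 1)"
definition ga :: "'k::field lam" where "ga = cl (gN 0)"

lemma paths_expl: "aN 0 = Nontriv [Alpha]" "bp 1 = Nontriv [Beta]" "gN 0 = Nontriv [Gamma]"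
  "bp 0 = Triv V2"
  by (simp_all add: aN_def bp_def gN_def)

lemma validT: "valid_path (Triv v)" by simp
lemmas vA = valid_aN[of 0, unfolded paths_expl]
lemmas vB = valid_bp[of 1, unfolded paths_expl]
lemmas vG = valid_gN[of 0, unfolded paths_expl]


lemma rel0: "E1 * E1 = ( E1 :: 'k::field lam)"
  unfolding E1_def E2_def E3_def al_def be_def ga_def paths_expl
  by (rule cl_mult) (simp_all add: valid_Nontriv)
lemma rel1: "E1 * E2 = (0::'k::field lam)"
  unfolding E1_def E2_def E3_def al_def be_def ga_def paths_expl
  by (rule cl_mult0) (simp_all add: valid_Nontriv)
lemma rel2: "E1 * E3 = (0::'k::field lam)"
  unfolding E1_def E2_def E3_def al_def be_def ga_def paths_expl
  by (rule cl_mult0) (simp_all add: valid_Nontriv)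
lemma rel3: "E2 * E1 = (0::'k::field lam)"
  unfolding E1_def E2_def E3_def al_def be_def ga_def paths_expl
  by (rule cl_mult0) (simp_all add: valid_Nontriv)
lemma rel4: "E2 * E2 = ( E2 :: 'k::field lam)"
  unfolding E1_def E2_def E3_def al_def be_def ga_def paths_expl
  by (rule cl_mult) (simp_all add: valid_Nontriv)
lemma rel5: "E2 * E3 = (0::'k::field lam)"
  unfolding E1_def E2_def E3_def al_def be_def ga_def paths_expl
  by (rule cl_mult0) (simp_all add: valid_Nontriv)
lemma rel6: "E3 * E1 = (0::'k::field lam)"
  unfolding E1_def E2_def E3_def al_def be_def ga_def paths_expl
  by (rule cl_mult0) (simp_all add: valid_Nontriv)
lemma rel7: "E3 * E2 = (0::'k::field lam)"
  unfolding E1_def E2_def E3_def al_def be_def ga_def paths_expl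
  by (rule cl_mult0) (simp_all add: valid_Nontriv)
lemma rel8: "E3 * E3 = ( E3 :: 'k::field lam)"
  unfolding E1_def E2_def E3_def al_def be_def ga_def paths_expl
  by (rule cl_mult) (simp_all add: valid_Nontriv)
lemma rel9: "E1 * al = ( al :: 'k::field lam)"
  unfolding E1_def E2_def E3_def al_def be_def ga_def paths_expl
  by (rule cl_mult) (simp_all add: valid_Nontriv)
lemma rel10: "E2 * al = (0::'k::field lam)"
  unfolding E1_def E2_def E3_def al_def be_def ga_def paths_expl
  by (rule cl_mult0) (simp_all add: valid_Nontriv)
lemma rel11: "E3 * al = (0::'k::field lam)"
  unfolding E1_def E2_def E3_def al_def be_def ga_def paths_expl
  by (rule cl_mult0) (simp_all add: valid_Nontriv)
lemma rel12: "al * E1 = (0::'k::field lam)"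
  unfolding E1_def E2_def E3_def al_def be_def ga_def paths_expl
  by (rule cl_mult0) (simp_all add: valid_Nontriv)
lemma rel13: "al * E2 = ( al :: 'k::field lam)"
  unfolding E1_def E2_def E3_def al_def be_def ga_def paths_expl
  by (rule cl_mult) (simp_all add: valid_Nontriv)
lemma rel14: "al * E3 = (0::'k::field lam)"
  unfolding E1_def E2_def E3_def al_def be_def ga_def paths_expl
  by (rule cl_mult0) (simp_all add: valid_Nontriv)
lemma rel15: "E1 * be = (0::'k::field lam)"
  unfolding E1_def E2_def E3_def al_def be_def ga_def paths_expl
  by (rule cl_mult0) (simp_all add: valid_Nontriv)
lemma rel16: "E2 * be = ( be :: 'k::field lam)"
  unfolding E1_def E2_def E3_def al_def be_def ga_def paths_expl
  by (rule cl_mult) (simp_all add: valid_Nontriv)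
lemma rel17: "E3 * be = (0::'k::field lam)"
  unfolding E1_def E2_def E3_def al_def be_def ga_def paths_expl
  by (rule cl_mult0) (simp_all add: valid_Nontriv)
lemma rel18: "be * E1 = (0::'k::field lam)"
  unfolding E1_def E2_def E3_def al_def be_def ga_def paths_expl
  by (rule cl_mult0) (simp_all add: valid_Nontriv)
lemma rel19: "be * E2 = ( be :: 'k::field lam)"
  unfolding E1_def E2_def E3_def al_def be_def ga_def paths_expl
  by (rule cl_mult) (simp_all add: valid_Nontriv)
lemma rel20: "be * E3 = (0::'k::field lam)"
  unfolding E1_def E2_def E3_def al_def be_def ga_def paths_expl
  by (rule cl_mult0) (simp_all add: valid_Nontriv)
lemma rel21: "E1 * ga = (0::'k::field lam)"
  unfolding E1_def E2_def E3_def al_def be_def ga_def paths_expl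
  by (rule cl_mult0) (simp_all add: valid_Nontriv)
lemma rel22: "E2 * ga = ( ga :: 'k::field lam)"
  unfolding E1_def E2_def E3_def al_def be_def ga_def paths_expl
  by (rule cl_mult) (simp_all add: valid_Nontriv)
lemma rel23: "E3 * ga = (0::'k::field lam)"
  unfolding E1_def E2_def E3_def al_def be_def ga_def paths_expl
  by (rule cl_mult0) (simp_all add: valid_Nontriv)
lemma rel24: "ga * E1 = (0::'k::field lam)"
  unfolding E1_def E2_def E3_def al_def be_def ga_def paths_expl
  by (rule cl_mult0) (simp_all add: valid_Nontriv)
lemma rel25: "ga * E2 = (0::'k::field lam)"
  unfolding E1_def E2_def E3_def al_def be_def ga_def paths_expl
  by (rule cl_mult0) (simp_all add: valid_Nontriv)
lemma rel26: "ga * E3 = ( ga :: 'k::field lam)"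
  unfolding E1_def E2_def E3_def al_def be_def ga_def paths_expl
  by (rule cl_mult) (simp_all add: valid_Nontriv)
lemma rel27: "al * al = (0::'k::field lam)"
  unfolding E1_def E2_def E3_def al_def be_def ga_def paths_expl
  by (rule cl_mult0) (simp_all add: valid_Nontriv)
lemma rel28: "be * al = (0::'k::field lam)"
  unfolding E1_def E2_def E3_def al_def be_def ga_def paths_expl
  by (rule cl_mult0) (simp_all add: valid_Nontriv)
lemma rel29: "ga * al = (0::'k::field lam)"
  unfolding E1_def E2_def E3_def al_def be_def ga_def paths_expl
  by (rule cl_mult0) (simp_all add: valid_Nontriv)
lemma rel30: "ga * be = (0::'k::field lam)"
  unfolding E1_def E2_def E3_def al_def be_def ga_def paths_expl
  by (rule cl_mult0) (simp_all add: valid_Nontriv)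
lemma rel31: "ga * ga = (0::'k::field lam)"
  unfolding E1_def E2_def E3_def al_def be_def ga_def paths_expl
  by (rule cl_mult0) (simp_all add: valid_Nontriv)
lemmas rels[simp] = rel0 rel1 rel2 rel3 rel4 rel5 rel6 rel7 rel8 rel9 rel10 rel11 rel12 rel13 rel14 rel15 rel16 rel17 rel18 rel19 rel20 rel21 rel22 rel23 rel24 rel25 rel26 rel27 rel28 rel29 rel30 rel31


lemma E_sum: "E1 + E2 + E3 = (1 :: 'k::field lam)"
proof -
  have "A (bpath (Triv V1)) + A (bpath (Triv V2)) + A (bpath (Triv V3)) = (1 :: 'k kqt)"
  proof (rule R_inj)
    show "R (A (bpath (Triv V1)) + A (bpath (Triv V2)) + A (bpath (Triv V3))) = R (1 :: 'k kqt)"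
      apply (simp add: R_plus RAb R_one)
      apply (rule ext)
      apply (simp add: kq_add_def bpath_def kq_one_def split: path.splits)
      apply (intro allI, case_tac x1, auto)
      done
  qed
  then show ?thesis
    by (simp add: E1_def E2_def E3_def cl_def plus_lam.abs_eq one_lam_def)
qed

lemma bpow_cl: "E2 * be ^ n = (cl (bp n) :: 'k::field lam)"
proof (induction n)
  case 0 then show ?case by (simp add: E2_def bp_def)
next
  case (Suc n)
  have "E2 * be ^ Suc n = (E2 * be ^ n) * (be :: 'k lam)" by (simp add: mult.assoc power_commutes)
  also have "\<dots> = cl (bp n) * cl (bp 1)" using Suc by (simp add: be_def)
  also have "\<dots> = cl (bp (Suc n))" by (rule cl_mult) (simp_all add: pm_bp_bp)
  finally show ?case .
qed

lemma be_E2_comm: "be ^ n * E2 = E2 * (be ^ n :: 'k::field lam)"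
  by (rule power_commuting_commutes) simp

lemma al_bpow: "al * be ^ n = (cl (aN n) :: 'k::field lam)"
proof -
  have "al * be ^ n = al * (E2 * be ^ n :: 'k lam)" by (metis rels(14) mult.assoc)
  also have "\<dots> = cl (aN 0) * cl (bp n)" by (simp add: bpow_cl al_def)
  also have "\<dots> = cl (aN n)" by (rule cl_mult) (simp_all add: pm_aN_bp[of 0 n, simplified])
  finally show ?thesis .
qed

lemma bpow_ga: "be ^ n * ga = (cl (gN n) :: 'k::field lam)"
proof -
  have "be ^ n * ga = be ^ n * (E2 * ga :: 'k lam)" by simp
  also have "\<dots> = (E2 * be ^ n) * ga" by (simp only: be_E2_comm mult.assoc[symmetric])
  also have "\<dots> = cl (bp n) * cl (gN 0)" by (simp add: bpow_cl ga_def)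
  also have "\<dots> = cl (gN n)" by (rule cl_mult) (simp_all add: pm_bp_gN[of n 0, simplified])
  finally show ?thesis .
qed

lemma abg_cl: "al * be ^ n * ga = (cl (abg n) :: 'k::field lam)"
proof -
  have "al * be ^ n * ga = cl (aN n) * (cl (gN 0) :: 'k lam)" by (simp add: al_bpow ga_def)
  also have "\<dots> = cl (abg n)" by (rule cl_mult) (simp_all add: pm_aN_gN[of n 0, simplified])
  finally show ?thesis .
qed

lemma cl_bp7: "cl (bp 7) = (0 :: 'k::field lam)"
  unfolding cl_def
  by (rule ab_J) (use bpath_KQ[of "bp 7"] in \<open>auto simp: Jset_def shortp_def bpath_def FF_def\<close>)

lemma cl_abg0: "cl (abg 0) = (0 :: 'k::field lam)"
  unfolding cl_def
  by (rule ab_J) (use bpath_KQ[of "abg 0"] in \<open>auto simp: Jset_def shortp_def bpath_def FF_def\<close>)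

lemma be_pow_big: "n \<ge> 7 \<Longrightarrow> be ^ n = (0 :: 'k::field lam)"
proof -
  assume n: "n \<ge> 7"
  have b7: "be ^ 7 = be * (be ^ 6 :: 'k lam)" using power_Suc[of be 6] by simp
  have "be ^ 7 = E2 * (be ^ 7 :: 'k lam)"
    unfolding b7 by (simp add: mult.assoc[symmetric])
  also have "\<dots> = 0" by (simp add: bpow_cl cl_bp7)
  finally have "be ^ 7 = (0 :: 'k lam)" .
  then have "be ^ (7 + (n - 7)) = (0 :: 'k lam)" by (simp only: power_add) simp
  then show ?thesis using n by simp
qed

lemma al_ga: "al * ga = (0 :: 'k::field lam)"
proof -
  have "al * be ^ 0 * ga = (cl (abg 0) :: 'k lam)" by (rule abg_cl)
  then show ?thesis by (simp add: cl_abg0)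
qed


lemma G_rel:
  assumes chr: "chr_ok TYPE('k::field)"
    and v: "v = (\<lambda>\<nu>. 1 / of_nat (fact \<nu>)) \<or> v = (\<lambda>\<nu>. 3 ^ \<nu> / of_nat (fact \<nu>))"
  shows "(\<Sum>i\<le>6. of_kl (v i) * (al * be ^ i * ga)) = (0 :: 'k lam)"
proof -
  have J: "alpha_poly_gamma v 6 \<in> (Jset :: (path \<Rightarrow> 'k) set)"
    using Sgen_J[OF chr] v unfolding Sgen_def by auto
  have "A (alpha_poly_gamma v 6) = (\<Sum>i\<le>6. of_k (v i) * A (bpath (abg i)) :: 'k kqt)"
  proof (rule R_inj)
    show "R (A (alpha_poly_gamma v 6)) = R (\<Sum>i\<le>6. of_k (v i) * A (bpath (abg i)) :: 'k kqt)"
      by (subst RA[OF apg_KQ]) (simp add: R_sum of_k_mult_R RAb kq_smult_def apg_eq)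
  qed
  then have "ab (A (alpha_poly_gamma v 6)) = (\<Sum>i\<le>6. of_kl (v i) * cl (abg i) :: 'k lam)"
    by (simp add: ab_sum cl_def of_kl.abs_eq times_lam.abs_eq)
  moreover have "ab (A (alpha_poly_gamma v 6)) = (0 :: 'k lam)" by (rule ab_J[OF J])
  ultimately show ?thesis by (simp add: abg_cl)
qed

lemma left_idem:
  assumes x: "x \<in> KQ"
  shows "kq_mult (bpath (Triv v)) x = (\<lambda>r. if path_tgt r = v then x r else 0)"
proof
  fix r
  show "kq_mult (bpath (Triv v)) x r = (if path_tgt r = v then x r else 0)"
  proof (cases "valid_path r \<and> path_tgt r = v")
    case True
    then show ?thesis using bpath_left[OF x, of r "Triv v" r] by simp
  next
    case False
    have "kq_mult (bpath (Triv v)) x r = 0"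
      by (rule bpath_left_zero[OF x]) (use False in \<open>auto split: if_splits\<close>)
    moreover have "path_tgt r = v \<Longrightarrow> x r = 0" using False KQ_valid[OF x] by blast
    ultimately show ?thesis by simp
  qed
qed

lemma right_idem:
  assumes x: "x \<in> KQ"
  shows "kq_mult x (bpath (Triv v)) = (\<lambda>r. if path_src r = v then x r else 0)"
proof
  fix r
  show "kq_mult x (bpath (Triv v)) r = (if path_src r = v then x r else 0)"
  proof (cases "valid_path r \<and> path_src r = v")
    case True
    then show ?thesis using bpath_right[OF x, of r "Triv v" r] pm_self_src[of r] by simp
  next
    case False
    have "kq_mult x (bpath (Triv v)) r = 0"
      by (rule bpath_right_zero[OF x]) (use False in \<open>auto dest: pm_TR\<close>)
    moreover have "path_src r = v \<Longrightarrow> x r = 0" using False KQ_valid[OF x] by blast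
    ultimately show ?thesis by simp
  qed
qed

lemma expand_family:
  fixes P :: "nat \<Rightarrow> path"
  assumes w: "w \<in> KQ" and inj: "inj P"
    and cov: "\<And>p. w p \<noteq> 0 \<Longrightarrow> \<exists>n. p = P n" and big: "\<And>n. n \<ge> 7 \<Longrightarrow> cl (P n) = (0::'k::field lam)"
  shows "ab (A w) = (\<Sum>n\<le>6. of_kl (w (P n)) * cl (P n) :: 'k lam)"
proof -
  define N where "N = {n. w (P n) \<noteq> 0}"
  have sw: "supp w = P ` N" unfolding N_def supp_def using cov by auto
  have "finite (P ` N)" using KQ_fin[OF w] sw by simp
  then have finN: "finite N" using finite_imageD inj_on_subset[OF inj subset_UNIV] by blast
  have "ab (A w) = (\<Sum>p\<in>supp w. of_kl (w p) * cl p :: 'k lam)" by (rule ab_expand[OF w])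
  also have "\<dots> = (\<Sum>n\<in>N. of_kl (w (P n)) * cl (P n))"
    unfolding sw by (rule sum.reindex_cong[OF inj_on_subset[OF inj subset_UNIV] refl refl])
  also have "\<dots> = (\<Sum>n\<in>N \<union> {..6}. of_kl (w (P n)) * cl (P n))"
    by (rule sum.mono_neutral_left) (use finN in \<open>auto simp: N_def\<close>)
  also have "\<dots> = (\<Sum>n\<in>{..6}. of_kl (w (P n)) * cl (P n))"
    by (rule sum.mono_neutral_right) (auto simp: finN big)
  finally show ?thesis .
qed

lemma lam_rep: "ab (rp y) = y"
  by (rule Quotient3_abs_rep[OF Quotient3_lam])

lemma sandwich:
  "cl (Triv v) * ab z * cl (Triv u) =
     (ab (A (\<lambda>r. if path_tgt r = v \<and> path_src r = u then R z r else 0)) :: 'k::field lam)"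
proof -
  have "A (bpath (Triv v)) * z * A (bpath (Triv u)) = A (\<lambda>r. if path_tgt r = v \<and> path_src r = u then R z r else 0)"
  proof (rule R_inj)
    have k1: "kq_mult (bpath (Triv v)) (R z) \<in> KQ" by (rule kq_mult_KQ[OF bpath_KQ R_KQ]) simp
    have k1': "(\<lambda>r. if path_tgt r = v then R z r else 0) \<in> KQ" using k1 by (simp add: left_idem[OF R_KQ])
    have eq: "kq_mult (kq_mult (bpath (Triv v)) (R z)) (bpath (Triv u)) = (\<lambda>r. if path_tgt r = v \<and> path_src r = u then R z r else 0)"
      unfolding left_idem[OF R_KQ] right_idem[OF k1'] by auto
    have "(\<lambda>r. if path_tgt r = v \<and> path_src r = u then R z r else 0) \<in> KQ"
      using eq kq_mult_KQ[OF k1 bpath_KQ[of "Triv u"]] by simp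
    then show "R (A (bpath (Triv v)) * z * A (bpath (Triv u))) = R (A (\<lambda>r. if path_tgt r = v \<and> path_src r = u then R z r else 0))"
      by (simp add: R_times RAb RA eq)
  qed
  then show ?thesis by (simp add: cl_def times_lam.abs_eq)
qed

lemma classify_12: "valid_path p \<Longrightarrow> path_tgt p = V1 \<Longrightarrow> path_src p = V2 \<Longrightarrow> \<exists>n. p = aN n"
  using valid_classify[of p] by auto
lemma classify_22: "valid_path p \<Longrightarrow> path_tgt p = V2 \<Longrightarrow> path_src p = V2 \<Longrightarrow> \<exists>n. p = bp n"
  using valid_classify[of p] by (auto simp: bp_def)
lemma classify_23: "valid_path p \<Longrightarrow> path_tgt p = V2 \<Longrightarrow> path_src p = V3 \<Longrightarrow> \<exists>n. p = gN n"
  using valid_classify[of p] by auto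

lemma shortp_simps: "n \<le> 6 \<Longrightarrow> shortp (aN n)" "n \<le> 6 \<Longrightarrow> shortp (bp n)" "n \<le> 6 \<Longrightarrow> shortp (gN n)"
  "shortp (Triv v)"
  by (auto simp: shortp_def eq_commute[of "Triv v"])

lemma inj_fams: "inj aN" "inj bp" "inj gN"
  by (auto simp: inj_def)

lemma exp_A:
  assumes y: "E1 * y * E2 = (y :: 'k::field lam)"
  shows "y = (\<Sum>n\<le>6. of_kl (coefl (aN n) y) * (al * be ^ n))"
proof -
  define z where "z = rp y"
  have yz: "y = ab z" by (simp add: z_def lam_rep)
  define w where "w = (\<lambda>r. if path_tgt r = V1 \<and> path_src r = V2 then R z r else (0::'k))"
  have y2: "y = ab (A w)" using y sandwich[of V1 z V2] unfolding w_def E1_def E2_def yz by simp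
  have wK: "w \<in> KQ"
  proof -
    have "supp w \<subseteq> supp (R z)" by (auto simp: w_def supp_def)
    then show ?thesis using R_KQ[of z] unfolding KQ_iff by (auto simp: w_def intro: finite_subset)
  qed
  have "ab (A w) = (\<Sum>n\<le>6. of_kl (w (aN n)) * cl (aN n) :: 'k lam)"
  proof (rule expand_family[OF wK inj_fams(1)])
    fix p assume "w p \<noteq> 0"
    then show "\<exists>n. p = aN n" using KQ_valid[OF R_KQ, of z p] classify_12 by (auto simp: w_def split: if_splits)
  next
    fix n :: nat assume "n \<ge> 7"
    then show "cl (aN n) = (0 :: 'k lam)" using al_bpow[of n] be_pow_big[of n] by (metis mult_zero_right)
  qed
  also have "\<dots> = (\<Sum>n\<le>6. of_kl (coefl (aN n) y) * (al * be ^ n))"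
    by (rule sum.cong[OF refl]) (simp add: yz coefl.abs_eq shortp_simps w_def al_bpow)
  finally show ?thesis using y2 by simp
qed

lemma exp_B:
  assumes y: "E2 * y * E2 = (y :: 'k::field lam)"
  shows "y = (\<Sum>n\<le>6. of_kl (coefl (bp n) y) * (E2 * be ^ n))"
proof -
  define z where "z = rp y"
  have yz: "y = ab z" by (simp add: z_def lam_rep)
  define w where "w = (\<lambda>r. if path_tgt r = V2 \<and> path_src r = V2 then R z r else (0::'k))"
  have y2: "y = ab (A w)" using y sandwich[of V2 z V2] unfolding w_def E2_def yz by simp
  have wK: "w \<in> KQ"
  proof -
    have "supp w \<subseteq> supp (R z)" by (auto simp: w_def supp_def)
    then show ?thesis using R_KQ[of z] unfolding KQ_iff by (auto simp: w_def intro: finite_subset)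
  qed
  have "ab (A w) = (\<Sum>n\<le>6. of_kl (w (bp n)) * cl (bp n) :: 'k lam)"
  proof (rule expand_family[OF wK inj_fams(2)])
    fix p assume "w p \<noteq> 0"
    then show "\<exists>n. p = bp n" using KQ_valid[OF R_KQ, of z p] classify_22 by (auto simp: w_def split: if_splits)
  next
    fix n :: nat assume "n \<ge> 7"
    then show "cl (bp n) = (0 :: 'k lam)" using bpow_cl[of n] be_pow_big[of n] by (metis mult_zero_right)
  qed
  also have "\<dots> = (\<Sum>n\<le>6. of_kl (coefl (bp n) y) * (E2 * be ^ n))"
    by (rule sum.cong[OF refl]) (simp add: yz coefl.abs_eq shortp_simps w_def bpow_cl)
  finally show ?thesis using y2 by simp
qed

lemma exp_C:
  assumes y: "E2 * y * E3 = (y :: 'k::field lam)"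
  shows "y = (\<Sum>n\<le>6. of_kl (coefl (gN n) y) * (be ^ n * ga))"
proof -
  define z where "z = rp y"
  have yz: "y = ab z" by (simp add: z_def lam_rep)
  define w where "w = (\<lambda>r. if path_tgt r = V2 \<and> path_src r = V3 then R z r else (0::'k))"
  have y2: "y = ab (A w)" using y sandwich[of V2 z V3] unfolding w_def E2_def E3_def yz by simp
  have wK: "w \<in> KQ"
  proof -
    have "supp w \<subseteq> supp (R z)" by (auto simp: w_def supp_def)
    then show ?thesis using R_KQ[of z] unfolding KQ_iff by (auto simp: w_def intro: finite_subset)
  qed
  have "ab (A w) = (\<Sum>n\<le>6. of_kl (w (gN n)) * cl (gN n) :: 'k lam)"
  proof (rule expand_family[OF wK inj_fams(3)])
    fix p assume "w p \<noteq> 0"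
    then show "\<exists>n. p = gN n" using KQ_valid[OF R_KQ, of z p] classify_23 by (auto simp: w_def split: if_splits)
  next
    fix n :: nat assume "n \<ge> 7"
    then show "cl (gN n) = (0 :: 'k lam)" using bpow_ga[of n] be_pow_big[of n] by (metis mult_zero_left)
  qed
  also have "\<dots> = (\<Sum>n\<le>6. of_kl (coefl (gN n) y) * (be ^ n * ga))"
    by (rule sum.cong[OF refl]) (simp add: yz coefl.abs_eq shortp_simps w_def bpow_ga)
  finally show ?thesis using y2 by simp
qed

definition is_der :: "('k::field lam \<Rightarrow> 'k lam) \<Rightarrow> bool" where
  "is_der D \<longleftrightarrow> (\<forall>x y. D (x + y) = D x + D y) \<and> (\<forall>x y. D (x * y) = D x * y + x * D y)
     \<and> (\<forall>c x. D (of_kl c * x) = of_kl c * D x)"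

lemma der_add: "is_der D \<Longrightarrow> D (x + y) = D x + D y" unfolding is_der_def by blast
lemma der_mult: "is_der D \<Longrightarrow> D (x * y) = D x * y + x * D y" unfolding is_der_def by blast
lemma der_smult: "is_der D \<Longrightarrow> D (of_kl c * x) = of_kl c * D x" unfolding is_der_def by blast

lemma der_zero: "is_der D \<Longrightarrow> D 0 = 0"
  using der_add[of D 0 0] by simp
lemma der_one: "is_der D \<Longrightarrow> D 1 = 0"
  using der_mult[of D 1 1] by simp
lemma der_of_kl: "is_der D \<Longrightarrow> D (of_kl c) = 0"
  using der_smult[of D c 1] der_one[of D] by simp
lemma der_sum: "is_der D \<Longrightarrow> D (\<Sum>i\<in>S. f i) = (\<Sum>i\<in>S. D (f i))"
  by (induction S rule: infinite_finite_induct) (simp_all add: der_zero der_add)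
lemma der_minus: "is_der D \<Longrightarrow> D (- x) = - D x"
  using der_add[of D x "- x"] der_zero[of D] by (simp add: eq_neg_iff_add_eq_0 add.commute)
lemma der_diff: "is_der D \<Longrightarrow> D (x - y) = D x - D y"
  using der_add[of D x "- y"] der_minus[of D y] by simp

lemma der_sub_inner:
  assumes D: "is_der D"
  shows "is_der (\<lambda>x. D x - (a * x - x * (a :: 'k::field lam)))"
  unfolding is_der_def
proof (intro conjI allI)
  fix x y :: "'k lam"
  show "D (x + y) - (a * (x + y) - (x + y) * a) = D x - (a * x - x * a) + (D y - (a * y - y * a))"
    by (simp add: der_add[OF D] algebra_simps)
  show "D (x * y) - (a * (x * y) - x * y * a) = (D x - (a * x - x * a)) * y + x * (D y - (a * y - y * a))"
    by (simp add: der_mult[OF D] algebra_simps mult.assoc)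
next
  fix c and x :: "'k lam"
  have "a * (of_kl c * x) = of_kl c * (a * x)"
    by (metis mult.assoc of_kl_central)
  then show "D (of_kl c * x) - (a * (of_kl c * x) - of_kl c * x * a) = of_kl c * (D x - (a * x - x * a))"
    by (simp add: der_smult[OF D] algebra_simps mult.assoc)
qed

lemma der_inner: "is_der (\<lambda>x. a * x - x * (a :: 'k::field lam))"
proof -
  have "is_der (\<lambda>x::'k lam. 0)" by (simp add: is_der_def)
  from der_sub_inner[OF this, of "- a"] show ?thesis by (simp add: algebra_simps)
qed

lemma kill_idem:
  fixes e f g X Y Z :: "'a::ring_1"
  assumes "e*e = e" "f*f = f" "g*g = g" "e*f = 0" "e*g = 0" "f*e = 0" "f*g = 0" "g*e = 0" "g*f = 0"
    "e + f + g = 1" "X = X*e + e*X" "X*f + e*Y = 0" "X*g + e*Z = 0"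
  shows "(X*e + Y*f + Z*g) * e - e * (X*e + Y*f + Z*g) = X"
proof -
  have exe: "e * X * e = 0"
  proof -
    have "e * X * e = e * (X*e + e*X) * e" using assms(11) by simp
    also have "\<dots> = e * X * e + e * X * e" using assms(1)
      by (simp add: algebra_simps mult.assoc) (metis mult.assoc)
    finally show ?thesis by simp
  qed
  have eyf: "e * Y * f = - (X * f)"
  proof -
    have "e * Y * f = (X*f + e*Y) * f - X * f * f" by (simp add: algebra_simps)
    also have "\<dots> = - (X * f)" using assms(12) assms(2) by (simp add: mult.assoc)
    finally show ?thesis .
  qed
  have ezg: "e * Z * g = - (X * g)"
  proof -
    have "e * Z * g = (X*g + e*Z) * g - X * g * g" by (simp add: algebra_simps)
    also have "\<dots> = - (X * g)" using assms(13) assms(3) by (simp add: mult.assoc)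
    finally show ?thesis .
  qed
  have "(X*e + Y*f + Z*g) * e = X * e"
    using assms(1,6,8) by (simp add: algebra_simps mult.assoc)
  moreover have "e * (X*e + Y*f + Z*g) = - (X * f) - X * g"
    using exe eyf ezg by (simp add: algebra_simps mult.assoc)
  ultimately have "(X*e + Y*f + Z*g) * e - e * (X*e + Y*f + Z*g) = X * (e + f + g)"
    by (simp add: algebra_simps)
  then show ?thesis using assms(10) by simp
qed

lemma step1:
  assumes D: "is_der D"
  shows "\<exists>a. D E1 = a * E1 - E1 * a \<and> D E2 = a * E2 - E2 * a \<and> D (E3 :: 'k::field lam) = a * E3 - E3 * a"
proof -
  define X1 where "X1 = D E1"
  define X2 where "X2 = D E2"
  define X3 where "X3 = D E3"
  have idem: "X = X * e + e * X" if "e * e = e" "D e = X" for e X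
    using der_mult[OF D, of e e] that by simp
  have orth: "X * f + e * Y = 0" if "e * f = 0" "D e = X" "D f = Y" for e f X Y
    using der_mult[OF D, of e f] der_zero[OF D] that by simp
  have s1: "E1 + E2 + E3 = (1::'k lam)" by (rule E_sum)
  have s2: "E2 + E1 + E3 = (1::'k lam)" using E_sum by (simp add: algebra_simps)
  have s3: "E3 + E1 + E2 = (1::'k lam)" using E_sum by (simp add: algebra_simps)
  define a where "a = X1 * E1 + X2 * E2 + X3 * E3"
  have a2: "a = X2 * E2 + X1 * E1 + X3 * E3" by (simp add: a_def algebra_simps)
  have a3: "a = X3 * E3 + X1 * E1 + X2 * E2" by (simp add: a_def algebra_simps)
  have r1: "a * E1 - E1 * a = X1"
    unfolding a_def
    by (rule kill_idem) (simp_all add: s1 idem orth X1_def X2_def X3_def)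
  have r2: "a * E2 - E2 * a = X2"
    unfolding a2
    by (rule kill_idem) (simp_all add: s2 idem orth X1_def X2_def X3_def)
  have r3: "a * E3 - E3 * a = X3"
    unfolding a3
    by (rule kill_idem) (simp_all add: s3 idem orth X1_def X2_def X3_def)
  show ?thesis using r1 r2 r3 unfolding X1_def X2_def X3_def by (intro exI[of _ a]) simp
qed

lemma of_kl_left0: "x * (of_kl c * y) = of_kl c * (x * (y :: 'k::field lam))"
  by (metis mult.assoc of_kl_central)
lemma of_kl_left: "al * (of_kl c * y) = of_kl c * (al * (y :: 'k::field lam))"
  "be ^ n * (of_kl c * y) = of_kl c * (be ^ n * y)"
  "E2 * (of_kl c * y) = of_kl c * (E2 * y)"
  "E1 * (of_kl c * y) = of_kl c * (E1 * y)"
  "E3 * (of_kl c * y) = of_kl c * (E3 * y)"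
  "ga * (of_kl c * y) = of_kl c * (ga * y)"
  "be * (of_kl c * y) = of_kl c * (be * y)"
  by (rule of_kl_left0)+
lemma bepow_mult: "be ^ n * (be ^ i * y) = be ^ (n + i) * (y :: 'k::field lam)"
  by (simp add: power_add mult.assoc)
lemma bepow_E2: "be ^ j * (E2 * y) = E2 * (be ^ j * (y :: 'k::field lam))"
  by (metis be_E2_comm mult.assoc)
lemma al_E2: "al * (E2 * y) = al * (y :: 'k::field lam)"
  by (metis rels(14) mult.assoc)
lemma al_abg: "al * (be ^ n * ga) = (cl (abg n) :: 'k::field lam)"
  by (metis abg_cl mult.assoc)

lemma of_nat_kl: "(of_nat i :: 'k::field lam) = of_kl (of_nat i)"
  by (simp add: of_kl_of_nat)

lemma Fl_abg_sum:
  assumes m: "m \<in> {3..6}"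
  shows "Fl m (\<Sum>n\<le>6. of_kl (x n) * (cl (abg (f n)) :: 'k::field lam)) = (\<Sum>n\<le>6. x n * Fco m (f n))"
  by (simp add: Fl_sum Fl_smult Fl_cl_abg[OF m])

lemma T1:
  assumes A: "AA = (\<Sum>n\<le>6. of_kl (a n) * (al * be ^ n))"
  shows "AA * (be ^ i * ga) = (\<Sum>n\<le>6. of_kl (a n) * cl (abg (n + i)) :: 'k::field lam)"
  unfolding A by (simp add: sum_distrib_right mult.assoc bepow_mult al_abg)

lemma T3:
  assumes C: "CC = (\<Sum>n\<le>6. of_kl (c n) * (be ^ n * ga))"
  shows "al * (be ^ i * CC) = (\<Sum>n\<le>6. of_kl (c n) * cl (abg (i + n)) :: 'k::field lam)"
  unfolding C by (simp add: sum_distrib_left mult.assoc of_kl_left bepow_mult al_abg)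

lemma T2:
  assumes B: "BB = (\<Sum>n\<le>6. of_kl (b n) * (E2 * be ^ n))"
  shows "al * ((of_nat i * (be ^ j * BB)) * ga) =
     of_kl (of_nat i) * (\<Sum>l\<le>6. of_kl (b l) * cl (abg (j + l)) :: 'k::field lam)"
  unfolding B of_nat_kl
  by (simp add: sum_distrib_left sum_distrib_right mult.assoc of_kl_left bepow_mult al_abg bepow_E2 al_E2)

definition Ffun :: "(nat \<Rightarrow> 'k::field) \<Rightarrow> (nat \<Rightarrow> 'k) \<Rightarrow> nat \<Rightarrow> nat \<Rightarrow> 'k" where
  "Ffun s b m i = (\<Sum>n\<le>6. s n * Fco m (n + i)) + of_nat i * (\<Sum>l\<le>6. b l * Fco m (i - 1 + l))"

lemma fact_vals: "fact 0 = (1::nat)" "fact 1 = (1::nat)" "fact 2 = (2::nat)" "fact 3 = (6::nat)"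
  "fact 4 = (24::nat)" "fact 5 = (120::nat)" "fact 6 = (720::nat)"
  by (simp_all add: fact_numeral)

lemma sum7: "(\<Sum>n::nat\<le>6. f n) = f 0 + f 1 + f 2 + f 3 + f 4 + f 5 + (f 6 :: 'a::comm_monoid_add)"
  by (simp add: numeral_eq_Suc atMost_Suc ac_simps)

lemma scale720:
  assumes chr: "chr_ok TYPE('k::field)" and i: "i \<le> 6"
  shows "(of_nat (720 div fact i) :: 'k) = 720 * (1 / of_nat (fact i))"
proof -
  note nz = chr_ok_nums[OF chr]
  have "i = 0 \<or> i = 1 \<or> i = 2 \<or> i = 3 \<or> i = 4 \<or> i = 5 \<or> i = 6" using i by auto
  then show ?thesis using nz by (elim disjE) (simp_all add: fact_vals field_simps)
qed

lemma LA:
  fixes s b :: "nat \<Rightarrow> 'k::field"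
  assumes chr: "chr_ok TYPE('k)" and h0: "b 0 = 0"
    and h1: "\<And>m. m \<in> {3..6} \<Longrightarrow> Ffun s b m 0 = 0"
    and h2: "\<And>m. m \<in> {3..6} \<Longrightarrow> (\<Sum>i\<le>6. (1 / of_nat (fact i)) * Ffun s b m i) = 0"
    and h3: "\<And>m. m \<in> {3..6} \<Longrightarrow> (\<Sum>i\<le>6. (3 ^ i / of_nat (fact i)) * Ffun s b m i) = 0"
  shows "s 1 = 0 \<and> s 2 = 0 \<and> s 3 = 0 \<and> s 4 = 0 \<and> s 5 = 0 \<and> s 6 = 0 \<and>
         b 1 = 0 \<and> b 2 = 0 \<and> b 3 = 0 \<and> b 4 = 0 \<and> b 5 = 0 \<and> b 6 = 0"
proof -
  have h2': "(\<Sum>i\<le>6. of_nat (720 div fact i) * Ffun s b m i) = 0" if "m \<in> {3..6}" for m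
  proof -
    have "(\<Sum>i\<le>6. of_nat (720 div fact i) * Ffun s b m i) = 720 * (\<Sum>i\<le>6. (1 / of_nat (fact i)) * Ffun s b m i)"
      unfolding sum_distrib_left by (rule sum.cong[OF refl]) (simp add: scale720[OF chr] mult.assoc)
    then show ?thesis using h2[OF that] by simp
  qed
  have h3': "(\<Sum>i\<le>6. of_nat (720 div fact i) * 3 ^ i * Ffun s b m i) = 0" if "m \<in> {3..6}" for m
  proof -
    have "(\<Sum>i\<le>6. of_nat (720 div fact i) * 3 ^ i * Ffun s b m i) = 720 * (\<Sum>i\<le>6. (3 ^ i / of_nat (fact i)) * Ffun s b m i)"
      unfolding sum_distrib_left by (rule sum.cong[OF refl]) (simp add: scale720[OF chr] mult.assoc)
    then show ?thesis using h3[OF that] by simp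
  qed
  have e0: "(18) * s 1 + (- 48) * s 2 + (36) * s 3 = 0"
  proof -
    have "Ffun s b 3 0 = (18) * s 1 + (- 48) * s 2 + (36) * s 3" by (simp add: Ffun_def sum7 Fco_def fact_vals algebra_simps)
    then show ?thesis using h1[of 3] by simp
  qed
  have e1: "(72) * s 1 + (- 156) * s 2 + (144) * s 4 = 0"
  proof -
    have "Ffun s b 4 0 = (72) * s 1 + (- 156) * s 2 + (144) * s 4" by (simp add: Ffun_def sum7 Fco_def fact_vals algebra_simps)
    then show ?thesis using h1[of 4] by simp
  qed
  have e2: "(234) * s 1 + (- 480) * s 2 + (720) * s 5 = 0"
  proof -
    have "Ffun s b 5 0 = (234) * s 1 + (- 480) * s 2 + (720) * s 5" by (simp add: Ffun_def sum7 Fco_def fact_vals algebra_simps)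
    then show ?thesis using h1[of 5] by simp
  qed
  have e3: "(720) * s 1 + (- 1452) * s 2 + (4320) * s 6 = 0"
  proof -
    have "Ffun s b 6 0 = (720) * s 1 + (- 1452) * s 2 + (4320) * s 6" by (simp add: Ffun_def sum7 Fco_def fact_vals algebra_simps)
    then show ?thesis using h1[of 6] by simp
  qed
  have e4: "(- 8640) * s 1 + (- 8640) * s 2 + (25920) * s 3 + (- 8640) * b 1 + (- 8640) * b 2 + (25920) * b 3 = 0"
  proof -
    have "(\<Sum>i\<le>6. of_nat (720 div fact i) * Ffun s b 3 i) = (- 8640) * s 1 + (- 8640) * s 2 + (25920) * s 3 + (- 8640) * b 1 + (- 8640) * b 2 + (25920) * b 3"
      by (simp add: Ffun_def sum7 Fco_def fact_vals algebra_simps h0)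
    then show ?thesis using h2'[of 3] by simp
  qed
  have e5: "(- 43200) * s 1 + (- 60480) * s 2 + (103680) * s 3 + (103680) * s 4 + (- 43200) * b 1 + (- 60480) * b 2 + (103680) * b 3 + (103680) * b 4 = 0"
  proof -
    have "(\<Sum>i\<le>6. of_nat (720 div fact i) * Ffun s b 4 i) = (- 43200) * s 1 + (- 60480) * s 2 + (103680) * s 3 + (103680) * s 4 + (- 43200) * b 1 + (- 60480) * b 2 + (103680) * b 3 + (103680) * b 4"
      by (simp add: Ffun_def sum7 Fco_def fact_vals algebra_simps h0)
    then show ?thesis using h2'[of 4] by simp
  qed
  have e6: "(- 155520) * s 1 + (- 259200) * s 2 + (259200) * s 3 + (518400) * s 4 + (518400) * s 5 + (- 155520) * b 1 + (- 259200) * b 2 + (259200) * b 3 + (518400) * b 4 + (518400) * b 5 = 0"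
  proof -
    have "(\<Sum>i\<le>6. of_nat (720 div fact i) * Ffun s b 5 i) = (- 155520) * s 1 + (- 259200) * s 2 + (259200) * s 3 + (518400) * s 4 + (518400) * s 5 + (- 155520) * b 1 + (- 259200) * b 2 + (259200) * b 3 + (518400) * b 4 + (518400) * b 5"
      by (simp add: Ffun_def sum7 Fco_def fact_vals algebra_simps h0)
    then show ?thesis using h2'[of 5] by simp
  qed
  have e7: "(- 501120) * s 1 + (- 915840) * s 2 + (518400) * s 3 + (1555200) * s 4 + (3110400) * s 5 + (3110400) * s 6 + (- 501120) * b 1 + (- 915840) * b 2 + (518400) * b 3 + (1555200) * b 4 + (3110400) * b 5 + (3110400) * b 6 = 0"
  proof -
    have "(\<Sum>i\<le>6. of_nat (720 div fact i) * Ffun s b 6 i) = (- 501120) * s 1 + (- 915840) * s 2 + (518400) * s 3 + (1555200) * s 4 + (3110400) * s 5 + (3110400) * s 6 + (- 501120) * b 1 + (- 915840) * b 2 + (518400) * b 3 + (1555200) * b 4 + (3110400) * b 5 + (3110400) * b 6"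
      by (simp add: Ffun_def sum7 Fco_def fact_vals algebra_simps h0)
    then show ?thesis using h2'[of 6] by simp
  qed
  have e8: "(25920) * s 1 + (43200) * s 2 + (25920) * s 3 + (77760) * b 1 + (129600) * b 2 + (77760) * b 3 = 0"
  proof -
    have "(\<Sum>i\<le>6. of_nat (720 div fact i) * 3 ^ i * Ffun s b 3 i) = (25920) * s 1 + (43200) * s 2 + (25920) * s 3 + (77760) * b 1 + (129600) * b 2 + (77760) * b 3"
      by (simp add: Ffun_def sum7 Fco_def fact_vals algebra_simps h0)
    then show ?thesis using h3'[of 3] by simp
  qed
  have e9: "(181440) * s 1 + (354240) * s 2 + (311040) * s 3 + (103680) * s 4 + (544320) * b 1 + (1062720) * b 2 + (933120) * b 3 + (311040) * b 4 = 0"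
  proof -
    have "(\<Sum>i\<le>6. of_nat (720 div fact i) * 3 ^ i * Ffun s b 4 i) = (181440) * s 1 + (354240) * s 2 + (311040) * s 3 + (103680) * s 4 + (544320) * b 1 + (1062720) * b 2 + (933120) * b 3 + (311040) * b 4"
      by (simp add: Ffun_def sum7 Fco_def fact_vals algebra_simps h0)
    then show ?thesis using h3'[of 4] by simp
  qed
  have e10: "(881280) * s 1 + (1987200) * s 2 + (2332800) * s 3 + (1555200) * s 4 + (518400) * s 5 + (2643840) * b 1 + (5961600) * b 2 + (6998400) * b 3 + (4665600) * b 4 + (1555200) * b 5 = 0"
  proof -
    have "(\<Sum>i\<le>6. of_nat (720 div fact i) * 3 ^ i * Ffun s b 5 i) = (881280) * s 1 + (1987200) * s 2 + (2332800) * s 3 + (1555200) * s 4 + (518400) * s 5 + (2643840) * b 1 + (5961600) * b 2 + (6998400) * b 3 + (4665600) * b 4 + (1555200) * b 5"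
      by (simp add: Ffun_def sum7 Fco_def fact_vals algebra_simps h0)
    then show ?thesis using h3'[of 5] by simp
  qed
  have e11: "(3680640) * s 1 + (9452160) * s 2 + (13996800) * s 3 + (13996800) * s 4 + (9331200) * s 5 + (3110400) * s 6 + (11041920) * b 1 + (28356480) * b 2 + (41990400) * b 3 + (41990400) * b 4 + (27993600) * b 5 + (9331200) * b 6 = 0"
  proof -
    have "(\<Sum>i\<le>6. of_nat (720 div fact i) * 3 ^ i * Ffun s b 6 i) = (3680640) * s 1 + (9452160) * s 2 + (13996800) * s 3 + (13996800) * s 4 + (9331200) * s 5 + (3110400) * s 6 + (11041920) * b 1 + (28356480) * b 2 + (41990400) * b 3 + (41990400) * b 4 + (27993600) * b 5 + (9331200) * b 6"
      by (simp add: Ffun_def sum7 Fco_def fact_vals algebra_simps h0)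
    then show ?thesis using h3'[of 6] by simp
  qed
  have x0: "s 1 = 0"
  proof -
    have "(1036800::'k) * s 1 = (57600) * ((18) * s 1 + (- 48) * s 2 + (36) * s 3) + (50400) * ((72) * s 1 + (- 156) * s 2 + (144) * s 4) + (- 5760) * ((234) * s 1 + (- 480) * s 2 + (720) * s 5) + (- 4320) * ((720) * s 1 + (- 1452) * s 2 + (4320) * s 6) + (240) * ((- 8640) * s 1 + (- 8640) * s 2 + (25920) * s 3 + (- 8640) * b 1 + (- 8640) * b 2 + (25920) * b 3) + (- 30) * ((- 43200) * s 1 + (- 60480) * s 2 + (103680) * s 3 + (103680) * s 4 + (- 43200) * b 1 + (- 60480) * b 2 + (103680) * b 3 + (103680) * b 4) + (- 42) * ((- 155520) * s 1 + (- 259200) * s 2 + (259200) * s 3 + (518400) * s 4 + (518400) * s 5 + (- 155520) * b 1 + (- 259200) * b 2 + (259200) * b 3 + (518400) * b 4 + (518400) * b 5) + (9) * ((- 501120) * s 1 + (- 915840) * s 2 + (518400) * s 3 + (1555200) * s 4 + (3110400) * s 5 + (3110400) * s 6 + (- 501120) * b 1 + (- 915840) * b 2 + (518400) * b 3 + (1555200) * b 4 + (3110400) * b 5 + (3110400) * b 6) + (880) * ((25920) * s 1 + (43200) * s 2 + (25920) * s 3 + (77760) * b 1 + (129600) * b 2 + (77760) * b 3) + (- 310) * ((181440) * s 1 + (354240) * s 2 + (311040) * s 3 + (103680) * s 4 + (544320) * b 1 + (1062720) * b 2 + (933120) * b 3 + (311040) * b 4) + (50) * ((881280) * s 1 + (1987200)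 * s 2 + (2332800) * s 3 + (1555200) * s 4 + (518400) * s 5 + (2643840) * b 1 + (5961600) * b 2 + (6998400) * b 3 + (4665600) * b 4 + (1555200) * b 5) + (- 3) * ((3680640) * s 1 + (9452160) * s 2 + (13996800) * s 3 + (13996800) * s 4 + (9331200) * s 5 + (3110400) * s 6 + (11041920) * b 1 + (28356480) * b 2 + (41990400) * b 3 + (41990400) * b 4 + (27993600) * b 5 + (9331200) * b 6)" by (simp add: algebra_simps)
    also have "\<dots> = 0" by (simp only: e0 e1 e2 e3 e4 e5 e6 e7 e8 e9 e10 e11 mult_zero_right add_0_right)
    finally have "(1036800::'k) * s 1 = 0" .
    moreover have "(1036800::'k) \<noteq> 0" by (simp add: numeral_nz[OF chr] smooth.simps)
    ultimately show ?thesis by simp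
  qed
  have x1: "s 2 = 0"
  proof -
    have "(2073600::'k) * s 2 = (79200) * ((18) * s 1 + (- 48) * s 2 + (36) * s 3) + (57600) * ((72) * s 1 + (- 156) * s 2 + (144) * s 4) + (- 10080) * ((234) * s 1 + (- 480) * s 2 + (720) * s 5) + (- 5760) * ((720) * s 1 + (- 1452) * s 2 + (4320) * s 6) + (285) * ((- 8640) * s 1 + (- 8640) * s 2 + (25920) * s 3 + (- 8640) * b 1 + (- 8640) * b 2 + (25920) * b 3) + (- 45) * ((- 43200) * s 1 + (- 60480) * s 2 + (103680) * s 3 + (103680) * s 4 + (- 43200) * b 1 + (- 60480) * b 2 + (103680) * b 3 + (103680) * b 4) + (- 51) * ((- 155520) * s 1 + (- 259200) * s 2 + (259200) * s 3 + (518400) * s 4 + (518400) * s 5 + (- 155520) * b 1 + (- 259200) * b 2 + (259200) * b 3 + (518400) * b 4 + (518400) * b 5) + (12) * ((- 501120) * s 1 + (- 915840) * s 2 + (518400) * s 3 + (1555200) * s 4 + (3110400) * s 5 + (3110400) * s 6 + (- 501120) * b 1 + (- 915840) * b 2 + (518400) * b 3 + (1555200) * b 4 + (3110400) * b 5 + (3110400) * b 6) + (1105) * ((25920) * s 1 + (43200) * s 2 + (25920) * s 3 + (77760) * b 1 + (129600) * b 2 + (77760) * b 3) + (- 395) * ((181440) * s 1 + (354240) * s 2 + (311040) * s 3 + (103680) * s 4 + (544320) * b 1 + (1062720) * b 2 + (933120) * b 3 + (311040) * b 4) + (65) * ((881280) * s 1 + (1987200) * s 2 + (2332800) * s 3 +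 (1555200) * s 4 + (518400) * s 5 + (2643840) * b 1 + (5961600) * b 2 + (6998400) * b 3 + (4665600) * b 4 + (1555200) * b 5) + (- 4) * ((3680640) * s 1 + (9452160) * s 2 + (13996800) * s 3 + (13996800) * s 4 + (9331200) * s 5 + (3110400) * s 6 + (11041920) * b 1 + (28356480) * b 2 + (41990400) * b 3 + (41990400) * b 4 + (27993600) * b 5 + (9331200) * b 6)" by (simp add: algebra_simps)
    also have "\<dots> = 0" by (simp only: e0 e1 e2 e3 e4 e5 e6 e7 e8 e9 e10 e11 mult_zero_right add_0_right)
    finally have "(2073600::'k) * s 2 = 0" .
    moreover have "(2073600::'k) \<noteq> 0" by (simp add: numeral_nz[OF chr] smooth.simps)
    ultimately show ?thesis by simp
  qed
  have x2: "s 3 = 0"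
  proof -
    have "(6220800::'k) * s 3 = (316800) * ((18) * s 1 + (- 48) * s 2 + (36) * s 3) + (79200) * ((72) * s 1 + (- 156) * s 2 + (144) * s 4) + (- 23040) * ((234) * s 1 + (- 480) * s 2 + (720) * s 5) + (- 10080) * ((720) * s 1 + (- 1452) * s 2 + (4320) * s 6) + (420) * ((- 8640) * s 1 + (- 8640) * s 2 + (25920) * s 3 + (- 8640) * b 1 + (- 8640) * b 2 + (25920) * b 3) + (- 90) * ((- 43200) * s 1 + (- 60480) * s 2 + (103680) * s 3 + (103680) * s 4 + (- 43200) * b 1 + (- 60480) * b 2 + (103680) * b 3 + (103680) * b 4) + (- 78) * ((- 155520) * s 1 + (- 259200) * s 2 + (259200) * s 3 + (518400) * s 4 + (518400) * s 5 + (- 155520) * b 1 + (- 259200) * b 2 + (259200) * b 3 + (518400) * b 4 + (518400) * b 5) + (21) * ((- 501120) * s 1 + (- 915840) * s 2 + (518400) * s 3 + (1555200) * s 4 + (3110400) * s 5 + (3110400) * s 6 + (- 501120) * b 1 + (- 915840) * b 2 + (518400) * b 3 + (1555200) * b 4 + (3110400) * b 5 + (3110400) * b 6) + (1780) * ((25920) * s 1 + (43200) * s 2 + (25920) * s 3 + (77760) * b 1 + (129600) * b 2 + (77760) * b 3) + (- 650) * ((181440) * s 1 + (354240) * s 2 + (311040) * s 3 + (103680) * s 4 + (544320) * b 1 + (1062720) * b 2 + (933120) * b 3 + (311040) * b 4) + (110) * ((881280) * s 1 + (1987200) * s 2 + (2332800) * s 3 + (1555200) * s 4 + (518400) * s 5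 + (2643840) * b 1 + (5961600) * b 2 + (6998400) * b 3 + (4665600) * b 4 + (1555200) * b 5) + (- 7) * ((3680640) * s 1 + (9452160) * s 2 + (13996800) * s 3 + (13996800) * s 4 + (9331200) * s 5 + (3110400) * s 6 + (11041920) * b 1 + (28356480) * b 2 + (41990400) * b 3 + (41990400) * b 4 + (27993600) * b 5 + (9331200) * b 6)" by (simp add: algebra_simps)
    also have "\<dots> = 0" by (simp only: e0 e1 e2 e3 e4 e5 e6 e7 e8 e9 e10 e11 mult_zero_right add_0_right)
    finally have "(6220800::'k) * s 3 = 0" .
    moreover have "(6220800::'k) \<noteq> 0" by (simp add: numeral_nz[OF chr] smooth.simps)
    ultimately show ?thesis by simp
  qed
  have x3: "s 4 = 0"
  proof -
    have "(24883200::'k) * s 4 = (338400) * ((18) * s 1 + (- 48) * s 2 + (36) * s 3) + (316800) * ((72) * s 1 + (- 156) * s 2 + (144) * s 4) + (- 61920) * ((234) * s 1 + (- 480) * s 2 + (720) * s 5) + (- 23040) * ((720) * s 1 + (- 1452) * s 2 + (4320) * s 6) + (825) * ((- 8640) * s 1 + (- 8640) * s 2 + (25920) * s 3 + (- 8640) * b 1 + (- 8640) * b 2 + (25920) * b 3) + (- 225) * ((- 43200) * s 1 + (- 60480) * s 2 + (103680) * s 3 + (103680) * s 4 + (- 43200) * b 1 + (- 60480) * b 2 + (103680) * b 3 + (103680) * b 4) + (- 159) * ((- 155520) * s 1 + (- 259200) * s 2 + (259200) * s 3 + (518400) * s 4 + (518400) * s 5 + (- 155520) * b 1 + (- 259200)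 * b 2 + (259200) * b 3 + (518400) * b 4 + (518400) * b 5) + (48) * ((- 501120) * s 1 + (- 915840) * s 2 + (518400) * s 3 + (1555200) * s 4 + (3110400) * s 5 + (3110400) * s 6 + (- 501120) * b 1 + (- 915840) * b 2 + (518400) * b 3 + (1555200) * b 4 + (3110400) * b 5 + (3110400) * b 6) + (3805) * ((25920) * s 1 + (43200) * s 2 + (25920) * s 3 + (77760) * b 1 + (129600) * b 2 + (77760) * b 3) + (- 1415) * ((181440) * s 1 + (354240) * s 2 + (311040) * s 3 + (103680) * s 4 + (544320) * b 1 + (1062720) * b 2 + (933120) * b 3 + (311040) * b 4) + (245) * ((881280) * s 1 + (1987200) * s 2 + (2332800) * s 3 + (1555200) * s 4 + (518400) * s 5 + (2643840) * b 1 + (5961600) * b 2 + (6998400) * b 3 + (4665600) * b 4 + (1555200) * b 5) + (- 16) * ((3680640) * s 1 + (9452160) * s 2 + (13996800) * s 3 + (13996800) * s 4 + (9331200) * s 5 + (3110400) * s 6 + (11041920) * b 1 + (28356480) * b 2 + (41990400) * b 3 + (41990400) * b 4 + (27993600) * b 5 + (9331200) * b 6)" by (simp add: algebra_simps)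
    also have "\<dots> = 0" by (simp only: e0 e1 e2 e3 e4 e5 e6 e7 e8 e9 e10 e11 mult_zero_right add_0_right)
    finally have "(24883200::'k) * s 4 = 0" .
    moreover have "(24883200::'k) \<noteq> 0" by (simp add: numeral_nz[OF chr] smooth.simps)
    ultimately show ?thesis by simp
  qed
  have x4: "s 5 = 0"
  proof -
    have "(124416000::'k) * s 5 = (921600) * ((18) * s 1 + (- 48) * s 2 + (36) * s 3) + (338400) * ((72) * s 1 + (- 156) * s 2 + (144) * s 4) + (- 5760) * ((234) * s 1 + (- 480) * s 2 + (720) * s 5) + (- 61920) * ((720) * s 1 + (- 1452) * s 2 + (4320) * s 6) + (2040) * ((- 8640) * s 1 + (- 8640) * s 2 + (25920) * s 3 + (- 8640) * b 1 + (- 8640) * b 2 + (25920) * b 3) + (- 630) * ((- 43200) * s 1 + (- 60480) * s 2 + (103680) * s 3 + (103680) * s 4 + (- 43200) * b 1 + (- 60480) * b 2 + (103680) * b 3 + (103680) * b 4) + (- 402) * ((- 155520) * s 1 + (- 259200) * s 2 + (259200) * s 3 + (518400) * s 4 + (518400) * s 5 + (- 155520) * b 1 + (- 259200) * b 2 + (259200) * b 3 + (518400) * b 4 + (518400) * b 5) + (129) * ((- 501120) * s 1 + (- 915840) * s 2 + (518400) * s 3 + (1555200) * s 4 + (3110400) * s 5 + (3110400) * s 6 + (- 501120) * b 1 + (- 915840) * b 2 + (518400) * b 3 + (1555200) * b 4 + (3110400) * b 5 + (3110400) * b 6) + (9880) * ((25920) * s 1 + (43200) * s 2 + (25920) * s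 3 + (77760) * b 1 + (129600) * b 2 + (77760) * b 3) + (- 3710) * ((181440) * s 1 + (354240) * s 2 + (311040) * s 3 + (103680) * s 4 + (544320) * b 1 + (1062720) * b 2 + (933120) * b 3 + (311040) * b 4) + (650) * ((881280) * s 1 + (1987200) * s 2 + (2332800) * s 3 + (1555200) * s 4 + (518400) * s 5 + (2643840) * b 1 + (5961600) * b 2 + (6998400) * b 3 + (4665600) * b 4 + (1555200) * b 5) + (- 43) * ((3680640) * s 1 + (9452160) * s 2 + (13996800) * s 3 + (13996800) * s 4 + (9331200) * s 5 + (3110400) * s 6 + (11041920) * b 1 + (28356480) * b 2 + (41990400) * b 3 + (41990400) * b 4 + (27993600) * b 5 + (9331200) * b 6)" by (simp add: algebra_simps)
    also have "\<dots> = 0" by (simp only: e0 e1 e2 e3 e4 e5 e6 e7 e8 e9 e10 e11 mult_zero_right add_0_right)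
    finally have "(124416000::'k) * s 5 = 0" .
    moreover have "(124416000::'k) \<noteq> 0" by (simp add: numeral_nz[OF chr] smooth.simps)
    ultimately show ?thesis by simp
  qed
  have x5: "s 6 = 0"
  proof -
    have "(746496000::'k) * s 6 = (2671200) * ((18) * s 1 + (- 48) * s 2 + (36) * s 3) + (921600) * ((72) * s 1 + (- 156) * s 2 + (144) * s 4) + (- 528480) * ((234) * s 1 + (- 480) * s 2 + (720) * s 5) + (- 5760) * ((720) * s 1 + (- 1452) * s 2 + (4320) * s 6) + (5685) * ((- 8640) * s 1 + (- 8640) * s 2 + (25920) * s 3 + (- 8640) * b 1 + (- 8640) * b 2 + (25920) * b 3) + (- 1845) * ((- 43200) * s 1 + (- 60480) * s 2 + (103680) * s 3 + (103680) * s 4 + (- 43200) * b 1 + (- 60480) * b 2 + (103680) * b 3 + (103680) * b 4) + (- 1131) * ((- 155520) * s 1 + (- 259200) * s 2 + (259200) * s 3 + (518400) * s 4 + (518400) * s 5 + (- 155520) * b 1 + (- 259200) * b 2 + (259200) * b 3 + (518400) * b 4 + (518400) * b 5) + (372) * ((- 501120) * s 1 + (- 915840) * s 2 + (518400) * s 3 + (1555200) * s 4 + (3110400) * s 5 + (3110400) * s 6 + (- 501120) * b 1 + (- 915840) * b 2 + (518400) * b 3 + (1555200) * b 4 + (3110400) * b 5 + (3110400) * b 6) + (28105) * ((25920) * s 1 + (43200) * s 2 + (25920) * s 3 + (77760) * b 1 + (129600) * b 2 + (77760) * b 3) + (- 10595) * ((181440) * s 1 + (354240) * s 2 + (311040)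 * s 3 + (103680) * s 4 + (544320) * b 1 + (1062720) * b 2 + (933120) * b 3 + (311040) * b 4) + (1865) * ((881280) * s 1 + (1987200) * s 2 + (2332800) * s 3 + (1555200) * s 4 + (518400) * s 5 + (2643840) * b 1 + (5961600) * b 2 + (6998400) * b 3 + (4665600) * b 4 + (1555200) * b 5) + (- 124) * ((3680640) * s 1 + (9452160) * s 2 + (13996800) * s 3 + (13996800) * s 4 + (9331200) * s 5 + (3110400) * s 6 + (11041920) * b 1 + (28356480) * b 2 + (41990400) * b 3 + (41990400) * b 4 + (27993600) * b 5 + (9331200) * b 6)" by (simp add: algebra_simps)
    also have "\<dots> = 0" by (simp only: e0 e1 e2 e3 e4 e5 e6 e7 e8 e9 e10 e11 mult_zero_right add_0_right)
    finally have "(746496000::'k) * s 6 = 0" .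
    moreover have "(746496000::'k) \<noteq> 0" by (simp add: numeral_nz[OF chr] smooth.simps)
    ultimately show ?thesis by simp
  qed
  have x6: "b 1 = 0"
  proof -
    have "(1036800::'k) * b 1 = (- 50400) * ((18) * s 1 + (- 48) * s 2 + (36) * s 3) + (4320) * ((234) * s 1 + (- 480) * s 2 + (720) * s 5) + (15) * ((- 8640) * s 1 + (- 8640) * s 2 + (25920) * s 3 + (- 8640) * b 1 + (- 8640) * b 2 + (25920) * b 3) + (45) * ((- 43200) * s 1 + (- 60480) * s 2 + (103680) * s 3 + (103680) * s 4 + (- 43200) * b 1 + (- 60480) * b 2 + (103680) * b 3 + (103680) * b 4) + (- 9) * ((- 155520) * s 1 + (- 259200) * s 2 + (259200) * s 3 + (518400) * s 4 + (518400) * s 5 + (- 155520) * b 1 + (- 259200) * b 2 + (259200) * b 3 + (518400) * b 4 + (518400) * b 5) + (235) * ((25920) * s 1 + (43200) * s 2 + (25920) * s 3 + (77760) * b 1 + (129600) * b 2 + (77760) * b 3) + (- 45) * ((181440) * s 1 + (354240) * s 2 + (311040) * s 3 + (103680) * s 4 + (544320) * b 1 + (1062720) * b 2 + (933120) * b 3 + (311040) * b 4) + (3) * ((881280) * s 1 + (1987200) * s 2 + (2332800) * s 3 + (1555200) * s 4 + (518400) * s 5 + (2643840) * b 1 + (5961600) * b 2 + (6998400) * b 3 + (4665600) * b 4 + (1555200) * b 5)" by (simp add: algebra_simps)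
    also have "\<dots> = 0" by (simp only: e0 e1 e2 e3 e4 e5 e6 e7 e8 e9 e10 e11 mult_zero_right add_0_right)
    finally have "(1036800::'k) * b 1 = 0" .
    moreover have "(1036800::'k) \<noteq> 0" by (simp add: numeral_nz[OF chr] smooth.simps)
    ultimately show ?thesis by simp
  qed
  have x7: "b 2 = 0"
  proof -
    have "(2073600::'k) * b 2 = (28800) * ((18) * s 1 + (- 48) * s 2 + (36) * s 3) + (- 50400) * ((72) * s 1 + (- 156) * s 2 + (144) * s 4) + (4320) * ((720) * s 1 + (- 1452) * s 2 + (4320) * s 6) + (- 300) * ((- 8640) * s 1 + (- 8640) * s 2 + (25920) * s 3 + (- 8640) * b 1 + (- 8640) * b 2 + (25920) * b 3) + (- 30) * ((- 43200) * s 1 + (- 60480) * s 2 + (103680) * s 3 + (103680) * s 4 + (- 43200) * b 1 + (- 60480) * b 2 + (103680) * b 3 + (103680) * b 4) + (54) * ((- 155520) * s 1 + (- 259200) * s 2 + (259200) * s 3 + (518400) * s 4 + (518400) * s 5 + (- 155520) * b 1 + (- 259200) * b 2 + (259200) * b 3 + (518400) * b 4 + (518400) * b 5) + (- 9) * ((- 501120) * s 1 + (- 915840) * s 2 + (518400) * s 3 + (1555200) * s 4 + (3110400) * s 5 + (3110400) * s 6 + (- 501120) * b 1 + (- 915840) * b 2 + (518400) * b 3 + (1555200) * b 4 + (3110400) * b 5 + (3110400) * b 6) + (- 1180) * ((25920) * s 1 + (43200) * s 2 + (25920) * s 3 + (77760) * b 1 + (129600) * b 2 + (77760) * b 3) +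 (370) * ((181440) * s 1 + (354240) * s 2 + (311040) * s 3 + (103680) * s 4 + (544320) * b 1 + (1062720) * b 2 + (933120) * b 3 + (311040) * b 4) + (- 54) * ((881280) * s 1 + (1987200) * s 2 + (2332800) * s 3 + (1555200) * s 4 + (518400) * s 5 + (2643840) * b 1 + (5961600) * b 2 + (6998400) * b 3 + (4665600) * b 4 + (1555200) * b 5) + (3) * ((3680640) * s 1 + (9452160) * s 2 + (13996800) * s 3 + (13996800) * s 4 + (9331200) * s 5 + (3110400) * s 6 + (11041920) * b 1 + (28356480) * b 2 + (41990400) * b 3 + (41990400) * b 4 + (27993600) * b 5 + (9331200) * b 6)" by (simp add: algebra_simps)
    also have "\<dots> = 0" by (simp only: e0 e1 e2 e3 e4 e5 e6 e7 e8 e9 e10 e11 mult_zero_right add_0_right)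
    finally have "(2073600::'k) * b 2 = 0" .
    moreover have "(2073600::'k) \<noteq> 0" by (simp add: numeral_nz[OF chr] smooth.simps)
    ultimately show ?thesis by simp
  qed
  have x8: "b 3 = 0"
  proof -
    have "(6220800::'k) * b 3 = (- 194400) * ((18) * s 1 + (- 48) * s 2 + (36) * s 3) + (28800) * ((72) * s 1 + (- 156) * s 2 + (144) * s 4) + (10080) * ((234) * s 1 + (- 480) * s 2 + (720) * s 5) + (315) * ((- 8640) * s 1 + (- 8640) * s 2 + (25920) * s 3 + (- 8640) * b 1 + (- 8640) * b 2 + (25920) * b 3) + (45) * ((- 43200) * s 1 + (- 60480) * s 2 + (103680) * s 3 + (103680) * s 4 + (- 43200) * b 1 + (- 60480) * b 2 + (103680) * b 3 + (103680) * b 4) + (- 21) * ((- 155520) * s 1 + (- 259200) * s 2 + (259200) * s 3 + (518400) * s 4 + (518400) * s 5 + (- 155520) * b 1 + (- 259200) * b 2 + (259200) * b 3 + (518400) * b 4 + (518400) * b 5) + (375) * ((25920) * s 1 + (43200) * s 2 + (25920) * s 3 + (77760) * b 1 + (129600) * b 2 + (77760) * b 3) + (- 85) * ((181440) * s 1 + (354240) * s 2 + (311040) * s 3 + (103680) * s 4 + (544320) * b 1 + (1062720) * b 2 + (933120) * b 3 + (311040) * b 4) + (7) * ((881280) * s 1 + (1987200) * s 2 + (2332800) * s 3 + (1555200) * s 4 + (518400) * s 5 + (2643840) * b 1 + (5961600) * b 2 + (6998400) * b 3 + (4665600) * b 4 + (1555200) * b 5)" by (simp add: algebra_simps)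
    also have "\<dots> = 0" by (simp only: e0 e1 e2 e3 e4 e5 e6 e7 e8 e9 e10 e11 mult_zero_right add_0_right)
    finally have "(6220800::'k) * b 3 = 0" .
    moreover have "(6220800::'k) \<noteq> 0" by (simp add: numeral_nz[OF chr] smooth.simps)
    ultimately show ?thesis by simp
  qed
  have x9: "b 4 = 0"
  proof -
    have "(24883200::'k) * b 4 = (- 194400) * ((72) * s 1 + (- 156) * s 2 + (144) * s 4) + (28800) * ((234) * s 1 + (- 480) * s 2 + (720) * s 5) + (10080) * ((720) * s 1 + (- 1452) * s 2 + (4320) * s 6) + (- 1320) * ((- 8640) * s 1 + (- 8640) * s 2 + (25920) * s 3 + (- 8640) * b 1 + (- 8640) * b 2 + (25920) * b 3) + (270) * ((- 43200) * s 1 + (- 60480) * s 2 + (103680) * s 3 + (103680) * s 4 + (- 43200) * b 1 + (- 60480) * b 2 + (103680) * b 3 + (103680) * b 4) + (66) * ((- 155520) * s 1 + (- 259200) * s 2 + (259200) * s 3 + (518400) * s 4 + (518400) * s 5 + (- 155520) * b 1 + (- 259200) * b 2 + (259200) * b 3 + (518400) * b 4 + (518400) * b 5) + (- 21) * ((- 501120) * s 1 + (- 915840) * s 2 + (518400) * s 3 + (1555200) * s 4 + (3110400) * s 5 + (3110400) * s 6 + (- 501120) * b 1 + (- 915840) * b 2 + (518400) * b 3 + (1555200) * b 4 + (3110400) * b 5 + (3110400) * b 6) + (- 1800) * ((25920) * s 1 + (43200) * s 2 + (25920) * s 3 + (77760) * b 1 + (129600) * b 2 + (77760) * b 3) + (630)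 * ((181440) * s 1 + (354240) * s 2 + (311040) * s 3 + (103680) * s 4 + (544320) * b 1 + (1062720) * b 2 + (933120) * b 3 + (311040) * b 4) + (- 106) * ((881280) * s 1 + (1987200) * s 2 + (2332800) * s 3 + (1555200) * s 4 + (518400) * s 5 + (2643840) * b 1 + (5961600) * b 2 + (6998400) * b 3 + (4665600) * b 4 + (1555200) * b 5) + (7) * ((3680640) * s 1 + (9452160) * s 2 + (13996800) * s 3 + (13996800) * s 4 + (9331200) * s 5 + (3110400) * s 6 + (11041920) * b 1 + (28356480) * b 2 + (41990400) * b 3 + (41990400) * b 4 + (27993600) * b 5 + (9331200) * b 6)" by (simp add: algebra_simps)
    also have "\<dots> = 0" by (simp only: e0 e1 e2 e3 e4 e5 e6 e7 e8 e9 e10 e11 mult_zero_right add_0_right)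
    finally have "(24883200::'k) * b 4 = 0" .
    moreover have "(24883200::'k) \<noteq> 0" by (simp add: numeral_nz[OF chr] smooth.simps)
    ultimately show ?thesis by simp
  qed
  have x10: "b 5 = 0"
  proof -
    have "(124416000::'k) * b 5 = (- 338400) * ((18) * s 1 + (- 48) * s 2 + (36) * s 3) + (- 53280) * ((234) * s 1 + (- 480) * s 2 + (720) * s 5) + (28800) * ((720) * s 1 + (- 1452) * s 2 + (4320) * s 6) + (1815) * ((- 8640) * s 1 + (- 8640) * s 2 + (25920) * s 3 + (- 8640) * b 1 + (- 8640) * b 2 + (25920) * b 3) + (- 855) * ((- 43200) * s 1 + (- 60480) * s 2 + (103680) * s 3 + (103680) * s 4 + (- 43200) * b 1 + (- 60480) * b 2 + (103680) * b 3 + (103680) * b 4) + (351) * ((- 155520) * s 1 + (- 259200) * s 2 + (259200) * s 3 + (518400) * s 4 + (518400) * s 5 + (- 155520) * b 1 + (- 259200) * b 2 + (259200) * b 3 + (518400) * b 4 + (518400) * b 5) + (- 60) * ((- 501120) * s 1 + (- 915840) * s 2 + (518400) * s 3 + (1555200) * s 4 + (3110400) * s 5 + (3110400) * s 6 + (- 501120) * b 1 + (- 915840) * b 2 + (518400) * b 3 + (1555200) * b 4 + (3110400) * b 5 + (3110400) * b 6) + (- 3565) * ((25920) * s 1 + (43200) * s 2 + (25920) * s 3 + (77760) * b 1 + (129600) * b 2 + (77760) * b 3) + (1455) * ((181440) * s 1 + (354240) * s 2 + (311040) * s 3 + (103680) * s 4 + (544320) * b 1 + (1062720) * b 2 + (933120)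 * b 3 + (311040) * b 4) + (- 277) * ((881280) * s 1 + (1987200) * s 2 + (2332800) * s 3 + (1555200) * s 4 + (518400) * s 5 + (2643840) * b 1 + (5961600) * b 2 + (6998400) * b 3 + (4665600) * b 4 + (1555200) * b 5) + (20) * ((3680640) * s 1 + (9452160) * s 2 + (13996800) * s 3 + (13996800) * s 4 + (9331200) * s 5 + (3110400) * s 6 + (11041920) * b 1 + (28356480) * b 2 + (41990400) * b 3 + (41990400) * b 4 + (27993600) * b 5 + (9331200) * b 6)" by (simp add: algebra_simps)
    also have "\<dots> = 0" by (simp only: e0 e1 e2 e3 e4 e5 e6 e7 e8 e9 e10 e11 mult_zero_right add_0_right)
    finally have "(124416000::'k) * b 5 = 0" .
    moreover have "(124416000::'k) \<noteq> 0" by (simp add: numeral_nz[OF chr] smooth.simps)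
    ultimately show ?thesis by simp
  qed
  have x11: "b 6 = 0"
  proof -
    have "(746496000::'k) * b 6 = (- 1411200) * ((18) * s 1 + (- 48) * s 2 + (36) * s 3) + (- 338400) * ((72) * s 1 + (- 156) * s 2 + (144) * s 4) + (403200) * ((234) * s 1 + (- 480) * s 2 + (720) * s 5) + (- 53280) * ((720) * s 1 + (- 1452) * s 2 + (4320) * s 6) + (- 8100) * ((- 8640) * s 1 + (- 8640) * s 2 + (25920) * s 3 + (- 8640) * b 1 + (- 8640) * b 2 + (25920) * b 3) + (4770) * ((- 43200) * s 1 + (- 60480) * s 2 + (103680) * s 3 + (103680) * s 4 + (- 43200) * b 1 + (- 60480) * b 2 + (103680) * b 3 + (103680) * b 4) + (- 786) * ((- 155520) * s 1 + (- 259200) * s 2 + (259200) * s 3 + (518400) * s 4 + (518400) * s 5 + (- 155520) * b 1 + (- 259200) * b 2 + (259200) * b 3 + (518400) * b 4 + (518400) * b 5) + (- 9) * ((- 501120) * s 1 + (- 915840) * s 2 + (518400) * s 3 + (1555200) * s 4 + (3110400) * s 5 + (3110400) * s 6 + (- 501120) * b 1 + (- 915840) * b 2 + (518400) * b 3 + (1555200) * b 4 + (3110400) * b 5 + (3110400) * b 6) + (- 17780) * ((25920) * s 1 + (43200) * s 2 + (25920) * s 3 + (77760) * b 1 + (129600) * b 2 + (77760) * b 3) + (6770) * ((181440) * s 1 + (354240) * s 2 + (311040) * s 3 + (103680) * s 4 + (544320) * b 1 + (1062720) * b 2 + (933120) * b 3 + (311040) * b 4) + (- 1214) * ((881280) *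 s 1 + (1987200) * s 2 + (2332800) * s 3 + (1555200) * s 4 + (518400) * s 5 + (2643840) * b 1 + (5961600) * b 2 + (6998400) * b 3 + (4665600) * b 4 + (1555200) * b 5) + (83) * ((3680640) * s 1 + (9452160) * s 2 + (13996800) * s 3 + (13996800) * s 4 + (9331200) * s 5 + (3110400) * s 6 + (11041920) * b 1 + (28356480) * b 2 + (41990400) * b 3 + (41990400) * b 4 + (27993600) * b 5 + (9331200) * b 6)" by (simp add: algebra_simps)
    also have "\<dots> = 0" by (simp only: e0 e1 e2 e3 e4 e5 e6 e7 e8 e9 e10 e11 mult_zero_right add_0_right)
    finally have "(746496000::'k) * b 6 = 0" .
    moreover have "(746496000::'k) \<noteq> 0" by (simp add: numeral_nz[OF chr] smooth.simps)
    ultimately show ?thesis by simp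
  qed
  show ?thesis using x0 x1 x2 x3 x4 x5 x6 x7 x8 x9 x10 x11 by simp
qed

lemma pm_none: "path_src p \<noteq> path_tgt q \<Longrightarrow> path_mult p q = None"
  by (simp add: path_mult_def)

lemma pm_bp_T: "path_mult (bp n) (Triv V2) = Some (bp n)"
  using pm_self_src[of "bp n"] by simp

lemma bp_prods:
  "cl (bp n) * E1 = (0 :: 'k::field lam)" "E1 * cl (bp n) = (0 :: 'k lam)"
  "cl (bp n) * E3 = (0 :: 'k lam)" "E3 * cl (bp n) = (0 :: 'k lam)"
  "cl (bp n) * E2 = (cl (bp n) :: 'k lam)" "E2 * cl (bp n) = (cl (bp n) :: 'k lam)"
  "cl (bp n) * al = (0 :: 'k lam)" "al * cl (bp n) = (cl (aN n) :: 'k lam)"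
  "cl (bp n) * ga = (cl (gN n) :: 'k lam)" "ga * cl (bp n) = (0 :: 'k lam)"
  "cl (bp n) * be = (cl (bp (Suc n)) :: 'k lam)" "be * cl (bp n) = (cl (bp (Suc n)) :: 'k lam)"
  unfolding E1_def E2_def E3_def al_def ga_def be_def
  by (auto intro!: cl_mult0 cl_mult pm_none simp: pm_bp_T pm_aN_bp[of 0 n, simplified]
      pm_bp_gN[of n 0, simplified] pm_bp_bp[of n 1, simplified] pm_bp_bp[of 1 n, simplified])

lemma der_vanish:
  assumes D: "is_der D" and z: "D E1 = 0" "D E2 = 0" "D E3 = 0" "D al = 0" "D be = 0" "D ga = 0"
  shows "D y = (0 :: 'k::field lam)"
proof -
  have bpow: "D (be ^ n) = 0" for n
    by (induction n) (simp_all add: der_one[OF D] der_mult[OF D] z)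
  have clz: "D (cl p) = 0" if "valid_path p" for p
  proof -
    have "(\<exists>v. p = Triv v) \<or> (\<exists>n. p = bp n) \<or> (\<exists>n. p = aN n) \<or> (\<exists>n. p = gN n) \<or> (\<exists>n. p = abg n)"
      using valid_classify[OF that] .
    then show ?thesis
    proof (elim disjE exE)
      fix v assume "p = Triv v" then show ?thesis
        using z by (cases v) (simp_all add: E1_def E2_def E3_def)
    next
      fix n assume "p = bp n" then show ?thesis
        using bpow_cl[of n] by (metis der_mult[OF D] z(2) bpow mult_zero_left mult_zero_right add_0)
    next
      fix n assume "p = aN n" then show ?thesis
        using al_bpow[of n] by (metis der_mult[OF D] z(4) bpow mult_zero_left mult_zero_right add_0)
    next
      fix n assume "p = gN n" then show ?thesis
        using bpow_ga[of n] by (metis der_mult[OF D] z(6) bpow mult_zero_left mult_zero_right add_0)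
    next
      fix n assume "p = abg n"
      have "D (al * be ^ n * ga) = 0"
        by (simp add: der_mult[OF D] z bpow)
      then show ?thesis using \<open>p = abg n\<close> by (metis abg_cl)
    qed
  qed
  have "y = ab (A (R (rp y)))" by (simp add: R_inverse lam_rep)
  also have "\<dots> = (\<Sum>p\<in>supp (R (rp y)). of_kl (R (rp y) p) * cl p)" by (rule ab_expand[OF R_KQ])
  finally have e: "y = (\<Sum>p\<in>supp (R (rp y)). of_kl (R (rp y) p) * cl p)" .
  have "D y = D (\<Sum>p\<in>supp (R (rp y)). of_kl (R (rp y) p) * cl p)"
    using arg_cong[where f=D, OF e] .
  also have "\<dots> = (\<Sum>p\<in>supp (R (rp y)). of_kl (R (rp y) p) * D (cl p))"
    by (simp add: der_sum[OF D] der_smult[OF D])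
  also have "\<dots> = 0"
  proof (rule sum.neutral, intro ballI)
    fix p assume "p \<in> supp (R (rp y))"
    then have "valid_path p" using KQ_valid[OF R_KQ[of "rp y"]] by (auto simp: supp_def)
    then show "of_kl (R (rp y) p) * D (cl p) = 0" using clz by simp
  qed
  finally show ?thesis .
qed


lemma B_comm:
  assumes B: "BB = (\<Sum>n\<le>6. of_kl (b n) * (E2 * be ^ n))"
  shows "be * BB = BB * (be :: 'k::field lam)"
proof -
  have t: "be * (E2 * be ^ n) = E2 * be ^ n * (be :: 'k lam)" for n
  proof -
    have e1: "be * E2 = (be :: 'k lam)" by simp
    have e2: "E2 * be = (be :: 'k lam)" by simp
    have "be * (E2 * be ^ n) = (be * E2) * (be ^ n :: 'k lam)" by (simp only: mult.assoc)
    also have "\<dots> = be * be ^ n" by (simp only: e1)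
    also have "\<dots> = (E2 * be) * be ^ n" by (simp only: e2)
    also have "\<dots> = E2 * (be ^ n * be)" by (simp only: mult.assoc power_commutes)
    finally show ?thesis by (simp only: mult.assoc)
  qed
  show ?thesis unfolding B sum_distrib_left sum_distrib_right
    by (rule sum.cong[OF refl]) (simp add: of_kl_left t mult.assoc)
qed

lemma der_pow:
  assumes D: "is_der D" and c: "be * D be = D be * (be :: 'k::field lam)"
  shows "D (be ^ i) = of_nat i * (be ^ (i - 1) * D be)"
proof (induction i)
  case 0 then show ?case by (simp add: der_one[OF D])
next
  case (Suc i)
  have cc: "be ^ i * D be = D be * be ^ i" using power_commuting_commutes[OF c] by simp
  show ?case
  proof (cases i)
    case 0 then show ?thesis by (simp add: der_mult[OF D] der_one[OF D])
  next
    case (Suc j)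
    have "D (be ^ Suc i) = D be * be ^ i + be * (of_nat i * (be ^ (i - 1) * D be))"
      using Suc.IH by (simp add: der_mult[OF D])
    also have "be * (of_nat i * (be ^ (i - 1) * D be)) = of_nat i * (be * be ^ (i - 1) * D be)"
      by (metis mult.assoc mult_of_nat_commute)
    also have "be * be ^ (i - 1) = be ^ i" using Suc by simp
    finally show ?thesis using cc by (simp add: algebra_simps)
  qed
qed


lemma bepow_cl: "be ^ k * cl (bp n) = (cl (bp (k + n)) :: 'k::field lam)"
  by (induction k) (simp_all add: mult.assoc bp_prods)

lemma HH1_lam:
  assumes chr: "chr_ok TYPE('k::field)" and D: "is_der (D :: 'k lam \<Rightarrow> 'k lam)"
  shows "\<exists>a. \<forall>x. D x = a * x - x * a"
proof -
  obtain a1 where a1: "D E1 = a1 * E1 - E1 * a1" "D E2 = a1 * E2 - E2 * a1" "D E3 = a1 * E3 - E3 * a1"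
    using step1[OF D] by blast
  define D1 where "D1 = (\<lambda>x. D x - (a1 * x - x * a1))"
  have D1: "is_der D1" unfolding D1_def by (rule der_sub_inner[OF D])
  have D1E: "D1 E1 = 0" "D1 E2 = 0" "D1 E3 = 0" using a1 by (simp_all add: D1_def)
  define AA where "AA = D1 al"
  define BB where "BB = D1 be"
  define CC where "CC = D1 ga"
  have sand: "D1 (x * y * z) = E1' * D1 y * E2'"
    if "x = E1'" "z = E2'" "D1 x = 0" "D1 z = 0" for x y z E1' E2'
    using that by (simp add: der_mult[OF D1])
  have AAs: "E1 * AA * E2 = AA"
  proof -
    have "AA = D1 (E1 * al * E2)" by (simp add: AA_def)
    also have "\<dots> = E1 * AA * E2" unfolding AA_def by (rule sand) (simp_all add: D1E)
    finally show ?thesis by simp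
  qed
  have BBs: "E2 * BB * E2 = BB"
  proof -
    have "BB = D1 (E2 * be * E2)" by (simp add: BB_def)
    also have "\<dots> = E2 * BB * E2" unfolding BB_def by (rule sand) (simp_all add: D1E)
    finally show ?thesis by simp
  qed
  have CCs: "E2 * CC * E3 = CC"
  proof -
    have "CC = D1 (E2 * ga * E3)" by (simp add: CC_def)
    also have "\<dots> = E2 * CC * E3" unfolding CC_def by (rule sand) (simp_all add: D1E)
    finally show ?thesis by simp
  qed
  define a where "a = (\<lambda>n. coefl (aN n) AA)"
  define b where "b = (\<lambda>n. coefl (bp n) BB)"
  define c where "c = (\<lambda>n. coefl (gN n) CC)"
  have Aexp: "AA = (\<Sum>n\<le>6. of_kl (a n) * (al * be ^ n))" using exp_A[OF AAs] by (simp add: a_def)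
  have Bexp: "BB = (\<Sum>n\<le>6. of_kl (b n) * (E2 * be ^ n))" using exp_B[OF BBs] by (simp add: b_def)
  have Cexp: "CC = (\<Sum>n\<le>6. of_kl (c n) * (be ^ n * ga))" using exp_C[OF CCs] by (simp add: c_def)
  have Bc: "be * BB = BB * be" by (rule B_comm[OF Bexp])
  have dp: "D1 (be ^ i) = of_nat i * (be ^ (i - 1) * BB)" for i
    using der_pow[OF D1] Bc by (simp add: BB_def)
  define s where "s = (\<lambda>n. a n + c n)"
  have T: "D1 (al * (be ^ i * ga)) = AA * (be ^ i * ga) + al * ((of_nat i * (be ^ (i - 1) * BB)) * ga)
      + al * (be ^ i * CC)" for i
  proof -
    have "D1 (al * (be ^ i * ga)) = D1 al * (be ^ i * ga) + al * (D1 (be ^ i) * ga + be ^ i * D1 ga)"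
      by (simp only: der_mult[OF D1])
    then show ?thesis by (simp only: dp AA_def CC_def distrib_left add.assoc)
  qed
  have FT: "Fl m (D1 (al * (be ^ i * ga))) = Ffun s b m i" if m: "m \<in> {3..6}" for m i
  proof -
    have "Fl m (D1 (al * (be ^ i * ga))) = (\<Sum>n\<le>6. a n * Fco m (n + i))
        + of_nat i * (\<Sum>l\<le>6. b l * Fco m (i - 1 + l)) + (\<Sum>n\<le>6. c n * Fco m (i + n))"
      unfolding T T1[OF Aexp] T2[OF Bexp] T3[OF Cexp]
      by (simp only: Fl_add Fl_smult Fl_abg_sum[OF m])
    also have "\<dots> = Ffun s b m i"
      by (simp add: Ffun_def s_def distrib_right sum.distrib add.commute add.left_commute)
    finally show ?thesis .
  qed
  note nz = chr_ok_nums[OF chr]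
  have b0: "b 0 = 0"
  proof -
    have "D1 (be ^ 7) = 0" by (simp add: be_pow_big der_zero[OF D1])
    then have z: "of_nat 7 * (be ^ 6 * BB) = 0" using dp[of 7] by simp
    have "be ^ 6 * BB = (\<Sum>n\<le>6. of_kl (b n) * cl (bp (6 + n)) :: 'k lam)"
      unfolding Bexp sum_distrib_left
      by (rule sum.cong[OF refl]) (simp add: of_kl_left bpow_cl bepow_cl)
    then have "coefl (bp 6) (be ^ 6 * BB) = (\<Sum>n\<le>6. b n * (if n = 0 then 1 else 0))"
      by (simp add: coefl_sum coefl_smult coefl_cl shortp_simps)
    also have "\<dots> = b 0" by (simp add: sum7)
    finally have "coefl (bp 6) (of_nat 7 * (be ^ 6 * BB)) = 7 * b 0"
      by (simp add: of_nat_kl coefl_smult)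
    then show ?thesis using z nz by simp
  qed
  have h1: "Ffun s b m 0 = 0" if m: "m \<in> {3..6}" for m
  proof -
    have "al * (be ^ 0 * ga) = (0 :: 'k lam)" by (simp add: al_ga)
    then have "D1 (al * (be ^ 0 * ga)) = 0" by (simp add: der_zero[OF D1])
    then show ?thesis using FT[OF m, of 0] by simp
  qed
  have hv: "(\<Sum>i\<le>6. v i * Ffun s b m i) = 0"
    if m: "m \<in> {3..6}" and v: "v = (\<lambda>\<nu>. 1 / of_nat (fact \<nu>)) \<or> v = (\<lambda>\<nu>. 3 ^ \<nu> / of_nat (fact \<nu>))" for m v
  proof -
    have "(\<Sum>i\<le>6. of_kl (v i) * (al * (be ^ i * ga))) = (0 :: 'k lam)"
      using G_rel[OF chr v] by (simp add: mult.assoc)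
    then have "D1 (\<Sum>i\<le>6. of_kl (v i) * (al * (be ^ i * ga))) = 0" by (simp add: der_zero[OF D1])
    then have "(\<Sum>i\<le>6. of_kl (v i) * D1 (al * (be ^ i * ga))) = 0"
      by (simp add: der_sum[OF D1] der_smult[OF D1])
    then have "Fl m (\<Sum>i\<le>6. of_kl (v i) * D1 (al * (be ^ i * ga))) = 0" by simp
    then show ?thesis by (simp add: Fl_sum Fl_smult FT[OF m])
  qed
  have LAres: "s 1 = 0 \<and> s 2 = 0 \<and> s 3 = 0 \<and> s 4 = 0 \<and> s 5 = 0 \<and> s 6 = 0 \<and>
         b 1 = 0 \<and> b 2 = 0 \<and> b 3 = 0 \<and> b 4 = 0 \<and> b 5 = 0 \<and> b 6 = 0"
  proof (rule LA[OF chr b0 h1])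
    fix m :: nat assume m: "m \<in> {3..6}"
    show "(\<Sum>i\<le>6. (1 / of_nat (fact i)) * Ffun s b m i) = 0"
      using hv[OF m disjI1[OF refl]] by simp
    show "(\<Sum>i\<le>6. (3 ^ i / of_nat (fact i)) * Ffun s b m i) = 0"
      using hv[OF m disjI2[OF refl]] by simp
  qed
  have B0: "BB = 0" unfolding Bexp using LAres b0 by (simp add: sum7)
  define a2 where "a2 = of_kl (s 0) * E1 + (\<Sum>n\<le>6. of_kl (c n) * cl (bp n))"
  define D2 where "D2 = (\<lambda>x. D1 x - (a2 * x - x * a2))"
  have D2: "is_der D2" unfolding D2_def by (rule der_sub_inner[OF D1])
  have pr: "a2 * E1 = of_kl (s 0) * E1" "E1 * a2 = of_kl (s 0) * E1"
    "a2 * E2 = (\<Sum>n\<le>6. of_kl (c n) * cl (bp n))" "E2 * a2 = (\<Sum>n\<le>6. of_kl (c n) * cl (bp n))"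
    "a2 * E3 = 0" "E3 * a2 = 0"
    "a2 * be = (\<Sum>n\<le>6. of_kl (c n) * cl (bp (Suc n)))" "be * a2 = (\<Sum>n\<le>6. of_kl (c n) * cl (bp (Suc n)))"
    "a2 * al = of_kl (s 0) * al" "al * a2 = (\<Sum>n\<le>6. of_kl (c n) * cl (aN n))"
    "a2 * ga = (\<Sum>n\<le>6. of_kl (c n) * cl (gN n))" "ga * a2 = 0"
    unfolding a2_def
    by (simp_all add: distrib_left distrib_right sum_distrib_left sum_distrib_right mult.assoc
        of_kl_left bp_prods)
  have z1: "D2 E1 = 0" "D2 E2 = 0" "D2 E3 = 0" by (simp_all add: D2_def D1E pr)
  have z2: "D2 be = 0" by (simp add: D2_def pr B0 BB_def[symmetric])
  have z3: "D2 al = 0"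
  proof -
    have "AA = (\<Sum>n\<le>6. of_kl (a n) * cl (aN n))" unfolding Aexp by (simp add: al_bpow)
    then have "D2 al = (\<Sum>n\<le>6. of_kl (a n) * cl (aN n)) + (\<Sum>n\<le>6. of_kl (c n) * cl (aN n))
        - of_kl (s 0) * al"
      by (simp add: D2_def pr AA_def[symmetric] algebra_simps)
    also have "(\<Sum>n\<le>6. of_kl (a n) * cl (aN n)) + (\<Sum>n\<le>6. of_kl (c n) * cl (aN n))
        = (\<Sum>n\<le>6. of_kl (s n) * (cl (aN n) :: 'k lam))"
      by (simp add: s_def of_kl_add distrib_right sum.distrib)
    also have "\<dots> - of_kl (s 0) * al = 0" using LAres by (simp add: sum7 al_def)
    finally show ?thesis .
  qed
  have z4: "D2 ga = 0"
  proof -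
    have "CC = (\<Sum>n\<le>6. of_kl (c n) * cl (gN n))" unfolding Cexp by (simp add: bpow_ga)
    then show ?thesis by (simp add: D2_def pr CC_def[symmetric])
  qed
  have "D2 x = 0" for x by (rule der_vanish[OF D2 z1 z3 z2 z4])
  then have "D x = (a1 + a2) * x - x * (a1 + a2)" for x
    using \<open>\<And>x. D2 x = 0\<close>[of x] by (simp add: D2_def D1_def algebra_simps)
  then show ?thesis by blast
qed

lemma chr_from_CHAR:
  assumes "CHAR('k::field) = 0 \<or> CHAR('k) > 7"
  shows "chr_ok TYPE('k)"
  unfolding chr_ok_def
proof (intro allI impI)
  fix n :: nat assume n: "0 < n" "n \<le> 7"
  show "(of_nat n :: 'k) \<noteq> 0"
  proof
    assume "(of_nat n :: 'k) = 0"
    then have "CHAR('k) dvd n" by (simp add: of_nat_eq_0_iff_char_dvd)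
    then show False using assms n by (auto dest: dvd_imp_le)
  qed
qed

section \<open>The derivation on the quotient\<close>

definition dl :: "((path \<Rightarrow> 'k::field) \<Rightarrow> (path \<Rightarrow> 'k)) \<Rightarrow> 'k lam \<Rightarrow> 'k lam" where
  "dl d y = ab (A (d (R (rp y))))"

lemma ab_eq_J: "ab x = ab y \<longleftrightarrow> kq_diff (R x) (R y) \<in> Jset"
  by (simp add: lam.abs_eq_iff crel_def Jk_def R_minus)

lemma rp_ab: "kq_diff (R (rp (ab z))) (R z) \<in> Jset"
  using Quotient3_rep_abs[OF Quotient3_lam crel_refl[of z]] by (simp add: crel_def Jk_def R_minus)

context
  fixes d :: "(path \<Rightarrow> 'k::field) \<Rightarrow> (path \<Rightarrow> 'k)"
  assumes qd: "quot_derivation Jset d"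
begin

lemma qd1: "x \<in> KQ \<Longrightarrow> d x \<in> KQ" using qd by (simp add: quot_derivation_def)
lemma qd2: "x \<in> KQ \<Longrightarrow> y \<in> KQ \<Longrightarrow> kq_diff x y \<in> Jset \<Longrightarrow> kq_diff (d x) (d y) \<in> Jset"
  using qd by (simp add: quot_derivation_def)
lemma qd3: "x \<in> KQ \<Longrightarrow> y \<in> KQ \<Longrightarrow> kq_diff (d (kq_add x y)) (kq_add (d x) (d y)) \<in> Jset"
  using qd by (simp add: quot_derivation_def)
lemma qd4: "x \<in> KQ \<Longrightarrow> kq_diff (d (kq_smult c x)) (kq_smult c (d x)) \<in> Jset"
  using qd by (simp add: quot_derivation_def)
lemma qd5: "x \<in> KQ \<Longrightarrow> y \<in> KQ \<Longrightarrow>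
    kq_diff (d (kq_mult x y)) (kq_add (kq_mult (d x) y) (kq_mult x (d y))) \<in> Jset"
  using qd by (simp add: quot_derivation_def)

lemma dl_ab: "dl d (ab z) = ab (A (d (R z)))"
proof -
  have "kq_diff (d (R (rp (ab z)))) (d (R z)) \<in> Jset"
    by (rule qd2[OF R_KQ R_KQ rp_ab])
  then show ?thesis unfolding dl_def ab_eq_J by (simp add: RA qd1 R_KQ)
qed

lemma dl_der: "is_der (dl d)"
  unfolding is_der_def
proof (intro conjI allI)
  fix x y :: "'k lam"
  obtain x' y' where xy: "x = ab x'" "y = ab y'" by (metis lam_rep)
  have "dl d (x + y) = ab (A (d (kq_add (R x') (R y'))))"
    by (simp add: xy plus_lam.abs_eq dl_ab R_plus)
  also have "\<dots> = ab (A (kq_add (d (R x')) (d (R y'))))"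
    unfolding ab_eq_J by (simp add: RA qd1 R_KQ add_KQ qd3)
  also have "\<dots> = dl d x + dl d y"
    by (simp add: xy dl_ab plus_lam.abs_eq A_plus qd1 R_KQ)
  finally show "dl d (x + y) = dl d x + dl d y" .
  have "dl d (x * y) = ab (A (d (kq_mult (R x') (R y'))))"
    by (simp add: xy times_lam.abs_eq dl_ab R_times)
  also have "\<dots> = ab (A (kq_add (kq_mult (d (R x')) (R y')) (kq_mult (R x') (d (R y')))))"
    unfolding ab_eq_J by (simp add: RA qd1 R_KQ add_KQ kq_mult_KQ qd5)
  also have "\<dots> = dl d x * y + x * dl d y"
  proof -
    have "A (kq_add (kq_mult (d (R x')) (R y')) (kq_mult (R x') (d (R y')))) = A (d (R x')) * y' + x' * A (d (R y'))"
      by (rule R_inj) (simp add: R_plus R_times RA qd1 R_KQ add_KQ kq_mult_KQ)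
    then show ?thesis by (simp add: xy dl_ab plus_lam.abs_eq times_lam.abs_eq)
  qed
  finally show "dl d (x * y) = dl d x * y + x * dl d y" .
next
  fix c and x :: "'k lam"
  obtain x' where xx: "x = ab x'" by (metis lam_rep)
  have "dl d (of_kl c * x) = ab (A (d (kq_smult c (R x'))))"
    by (simp add: xx of_kl.abs_eq times_lam.abs_eq dl_ab of_k_mult_R)
  also have "\<dots> = ab (A (kq_smult c (d (R x'))))"
    unfolding ab_eq_J by (simp add: RA qd1 R_KQ smult_KQ qd4)
  also have "\<dots> = of_kl c * dl d x"
  proof -
    have "A (kq_smult c (d (R x'))) = of_k c * A (d (R x'))"
      by (rule R_inj) (simp add: of_k_mult_R RA qd1 R_KQ smult_KQ)
    then show ?thesis by (simp add: xx dl_ab of_kl.abs_eq times_lam.abs_eq)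
  qed
  finally show "dl d (of_kl c * x) = of_kl c * dl d x" .
qed

lemma inner_from_lam:
  assumes a: "\<forall>x. dl d x = a * x - x * a"
  shows "quot_inner Jset d"
  unfolding quot_inner_def
proof (intro bexI ballI)
  define a' where "a' = R (rp a)"
  show "a' \<in> KQ" by (simp add: a'_def R_KQ)
  fix x :: "path \<Rightarrow> 'k" assume x: "x \<in> KQ"
  have aa: "a = ab (A a')" by (simp add: a'_def R_inverse lam_rep)
  have "ab (A (d x)) = a * ab (A x) - ab (A x) * a"
    using a dl_ab[of "A x"] x by (simp add: RA)
  also have "\<dots> = ab (A a' * A x - A x * A a')"
    by (simp add: aa times_lam.abs_eq minus_lam.abs_eq)
  finally have "kq_diff (R (A (d x))) (R (A a' * A x - A x * A a')) \<in> Jset"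
    unfolding ab_eq_J .
  then show "kq_diff (d x) (kq_diff (kq_mult a' x) (kq_mult x a')) \<in> Jset"
    using x by (simp add: RA qd1 R_minus R_times \<open>a' \<in> KQ\<close>)
qed

end

lemma HH1_J:
  assumes chr: "chr_ok TYPE('k::field)"
  shows "HH1_vanishes (Jset :: (path \<Rightarrow> 'k) set)"
  unfolding HH1_vanishes_def
proof (intro allI impI)
  fix d :: "(path \<Rightarrow> 'k) \<Rightarrow> (path \<Rightarrow> 'k)"
  assume qd: "quot_derivation Jset d"
  obtain a where "\<forall>x. dl d x = a * x - x * a" using HH1_lam[OF chr dl_der[OF qd]] by blast
  then show "quot_inner Jset d" by (rule inner_from_lam[OF qd])
qed

definition pl :: "path list" where
  "pl = [Triv V1, Triv V2, Triv V3, bp 1, bp 2, bp 3, bp 4, bp 5, bp 6,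
         aN 0, aN 1, aN 2, aN 3, aN 4, aN 5, aN 6, gN 0, gN 1, gN 2, gN 3, gN 4, gN 5, gN 6,
         abg 3, abg 4, abg 5, abg 6]"

lemma Triv_ne[simp]: "Triv v \<noteq> aN n" "Triv v \<noteq> gN n" "Triv v \<noteq> abg n"
  by (metis abg_ne_Triv)+

lemma bp_ne_Triv[simp]: "n \<noteq> 0 \<Longrightarrow> bp n \<noteq> Triv v" "n \<noteq> 0 \<Longrightarrow> Triv v \<noteq> bp n"
  by (metis bp_Triv)+

lemma len_pl: "length pl = 27" by (simp add: pl_def)
lemma distinct_pl: "distinct pl" by (simp add: pl_def)
lemma valid_pl: "p \<in> set pl \<Longrightarrow> valid_path p" by (auto simp: pl_def)
lemma pl_abg: "k \<in> {3..6} \<Longrightarrow> pl ! (k + 20) = abg k"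
proof -
  assume "k \<in> {3..6}"
  then have "k = 3 \<or> k = 4 \<or> k = 5 \<or> k = 6" by auto
  then show ?thesis by (elim disjE) (simp_all add: pl_def)
qed
lemma abg12_notin: "abg 1 \<notin> set pl" "abg 2 \<notin> set pl"
  by (auto simp: pl_def)

lemma short_in_pl:
  assumes "shortp p" shows "\<exists>j<23. pl ! j = p"
proof -
  have v: "valid_path p" and nb: "nb p \<le> 6" and na: "\<forall>n. p \<noteq> abg n"
    using assms by (auto simp: shortp_def)
  have "p \<in> set (take 23 pl)"
    using valid_classify[OF v]
  proof (elim disjE exE)
    fix v' assume "p = Triv v'" then show ?thesis by (cases v') (auto simp: pl_def)
  next
    fix n assume p: "p = bp n"
    then have "n \<le> 6" using nb by simp
    then have "n = 0 \<or> n = 1 \<or> n = 2 \<or> n = 3 \<or> n = 4 \<or> n = 5 \<or> n = 6" by auto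
    then show ?thesis using p by (auto simp: pl_def bp_def)
  next
    fix n assume p: "p = aN n"
    then have "n \<le> 6" using nb by simp
    then have "n = 0 \<or> n = 1 \<or> n = 2 \<or> n = 3 \<or> n = 4 \<or> n = 5 \<or> n = 6" by auto
    then show ?thesis using p by (auto simp: pl_def)
  next
    fix n assume p: "p = gN n"
    then have "n \<le> 6" using nb by simp
    then have "n = 0 \<or> n = 1 \<or> n = 2 \<or> n = 3 \<or> n = 4 \<or> n = 5 \<or> n = 6" by auto
    then show ?thesis using p by (auto simp: pl_def)
  next
    fix n assume "p = abg n" then show ?thesis using na by simp
  qed
  then show ?thesis by (auto simp: in_set_conv_nth len_pl)
qed

lemma short_pl: "j < 23 \<Longrightarrow> shortp (pl ! j)"
proof -
  assume j: "j < 23"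
  have "\<forall>p\<in>set (take 23 pl). shortp p" by (simp add: pl_def shortp_simps)
  moreover have "pl ! j \<in> set (take 23 pl)" using j by (simp add: in_set_conv_nth len_pl) (metis nth_take len_pl j)
  ultimately show ?thesis by blast
qed

lemma sum_pl_at:
  assumes j: "j < length pl"
  shows "(\<Sum>i<length pl. c i * bpath (pl ! i) (pl ! j)) = (c j :: 'k::field)"
proof -
  have "(\<Sum>i<length pl. c i * bpath (pl ! i) (pl ! j)) = (\<Sum>i<length pl. if i = j then c j else 0)"
    by (rule sum.cong[OF refl]) (use j distinct_pl in \<open>auto simp: bpath_def nth_eq_iff_index_eq\<close>)
  also have "\<dots> = c j" using j by simp
  finally show ?thesis .
qed

lemma sum_pl_out:
  assumes "p \<notin> set pl"
  shows "(\<Sum>i<length pl. c i * bpath (pl ! i) p) = (0 :: 'k::field)"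
  by (rule sum.neutral) (use assms in \<open>auto simp: bpath_def\<close>)

lemma sum_pl_KQ: "(\<lambda>p. \<Sum>i<length pl. c i * bpath (pl ! i) p :: 'k::field) \<in> KQ"
proof -
  let ?g = "\<lambda>p. \<Sum>i<length pl. c i * bpath (pl ! i) p :: 'k"
  have "supp ?g \<subseteq> set pl" using sum_pl_out unfolding supp_def by blast
  moreover have "valid_path p" if "?g p \<noteq> 0" for p using sum_pl_out that valid_pl by blast
  ultimately show ?thesis unfolding KQ_iff using finite_subset by blast
qed

lemma dimJ:
  assumes chr: "chr_ok TYPE('k::field)"
  shows "quot_dim_eq (Jset :: (path \<Rightarrow> 'k) set) 27"
  unfolding quot_dim_eq_def
proof (intro exI[of _ "\<lambda>i. bpath (pl ! i)"] conjI allI impI ballI)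
  note nz = chr_ok_nums[OF chr]
  have FFsum: "FF m (\<lambda>p. \<Sum>i<27. c i * bpath (pl ! i) p) = 6 * of_nat (fact m) * c (m + 20)"
    if m: "m \<in> {3..6}" for m and c :: "nat \<Rightarrow> 'k"
  proof -
    have "(\<Sum>i<27. c i * bpath (pl ! i) (abg m)) = c (m + 20)"
      using sum_pl_at[of "m + 20" c] pl_abg[OF m] m by (simp add: len_pl)
    moreover have "(\<Sum>i<27. c i * bpath (pl ! i) (abg 1)) = 0" "(\<Sum>i<27. c i * bpath (pl ! i) (abg 2)) = 0"
      using sum_pl_out[OF abg12_notin(1), of c] sum_pl_out[OF abg12_notin(2), of c] by (simp_all add: len_pl)
    ultimately show ?thesis by (simp add: FF_def)
  qed
  show "\<And>i. i < 27 \<Longrightarrow> bpath (pl ! i) \<in> KQ"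
    by (metis bpath_KQ valid_pl nth_mem len_pl)
  fix c :: "nat \<Rightarrow> 'k"
  assume g: "(\<lambda>p. \<Sum>i<27. c i * bpath (pl ! i) p) \<in> Jset"
  fix i :: nat assume i: "i < 27"
  show "c i = 0"
  proof (cases "i < 23")
    case True
    have "(\<Sum>j<27. c j * bpath (pl ! j) (pl ! i)) = c i" using sum_pl_at[of i c] i by (simp add: len_pl)
    moreover have "(\<Sum>j<27. c j * bpath (pl ! j) (pl ! i)) = 0"
      using g short_pl[OF True] by (simp add: Jset_def)
    ultimately show ?thesis by simp
  next
    case False
    define m where "m = i - 20"
    have m: "m \<in> {3..6}" "i = m + 20" using i False by (auto simp: m_def)
    have "FF m (\<lambda>p. \<Sum>i<27. c i * bpath (pl ! i) p) = 0" using g m(1) by (simp add: Jset_def)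
    then have "6 * of_nat (fact m) * c i = 0" using FFsum[OF m(1), of c] m(2) by simp
    moreover have "(6 * of_nat (fact m) :: 'k) \<noteq> 0" using fact_nz[OF chr, of m] m nz by simp
    ultimately show ?thesis by simp
  qed
next
  note nz = chr_ok_nums[OF chr]
  fix f :: "path \<Rightarrow> 'k" assume f: "f \<in> KQ"
  define c where "c = (\<lambda>i. if i < 23 then f (pl ! i) else
      f (abg (i - 20)) - ((9 - 3 ^ (i - 20)) * f (abg 1) + 2 * (3 ^ (i - 20) - 3) * f (abg 2))
        / (6 * of_nat (fact (i - 20))))"
  let ?s = "\<lambda>p. \<Sum>i<27. c i * bpath (pl ! i) p"
  have sK: "?s \<in> KQ" using sum_pl_KQ[of c] by (simp add: len_pl)
  have "kq_diff f ?s \<in> Jset"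
    unfolding Jset_def
  proof (intro CollectI conjI allI impI ballI)
    show "kq_diff f ?s \<in> KQ" by (rule diff_KQ[OF f sK])
  next
    fix p assume "shortp p"
    then obtain j where j: "j < 23" "pl ! j = p" using short_in_pl by blast
    have "?s p = c j" using sum_pl_at[of j c] j by (simp add: len_pl)
    then show "kq_diff f ?s p = 0" using j by (simp add: kq_diff_def c_def)
  next
    fix m :: nat assume m: "m \<in> {3..6}"
    have "FF m ?s = 6 * of_nat (fact m) * c (m + 20)"
    proof -
      have "(\<Sum>i<27. c i * bpath (pl ! i) (abg m)) = c (m + 20)"
        using sum_pl_at[of "m + 20" c] pl_abg[OF m] m by (simp add: len_pl)
      moreover have "(\<Sum>i<27. c i * bpath (pl ! i) (abg 1)) = 0" "(\<Sum>i<27. c i * bpath (pl ! i) (abg 2)) = 0"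
        using sum_pl_out[OF abg12_notin(1), of c] sum_pl_out[OF abg12_notin(2), of c] by (simp_all add: len_pl)
      ultimately show ?thesis by (simp add: FF_def)
    qed
    moreover have n6: "(6 * of_nat (fact m) :: 'k) \<noteq> 0" using fact_nz[OF chr, of m] m nz by simp
    moreover define X where "X = (9 - 3 ^ m) * f (abg 1) + 2 * (3 ^ m - 3) * f (abg 2)"
    moreover have "c (m + 20) = f (abg m) - X / (6 * of_nat (fact m))"
      using m by (simp add: c_def X_def)
    moreover have "6 * of_nat (fact m) * (f (abg m) - X / (6 * of_nat (fact m))) = 6 * of_nat (fact m) * f (abg m) - X"
      using n6 by (simp add: field_simps)
    ultimately have "FF m ?s = FF m f" by (simp add: FF_def X_def)
    then show "FF m (kq_diff f ?s) = 0" by (simp add: FF_diff)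
  qed
  then show "\<exists>c. kq_diff f (\<lambda>p. \<Sum>i<27. c i * bpath (pl ! i) p) \<in> Jset" by blast
qed

lemma len_simps: "path_len (bp n) = n" "path_len (aN n) = Suc n" "path_len (gN n) = Suc n"
  "path_len (abg n) = Suc (Suc n)" "path_len (Triv v) = 0"
  by (simp_all add: bp_def aN_def gN_def abg_def)

lemma nb_le_len: "valid_path p \<Longrightarrow> nb p \<le> path_len p"
  using valid_classify[of p] len_simps by auto

lemma admJ: "admissible_ideal (Jset :: (path \<Rightarrow> 'k::field) set)"
  unfolding admissible_ideal_def
proof (intro conjI exI[of _ 9])
  show "Jset \<subseteq> (arrow_ideal_pow 2 :: (path \<Rightarrow> 'k) set)"
  proof
    fix f :: "path \<Rightarrow> 'k" assume f: "f \<in> Jset"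
    have "2 \<le> path_len p" if "f p \<noteq> 0" for p
    proof -
      have v: "valid_path p" using KQ_valid[OF J_KQ[OF f] that] .
      have "\<not> shortp p" using f that by (auto simp: Jset_def)
      then have "nb p > 6 \<or> (\<exists>n. p = abg n)" using v by (auto simp: shortp_def)
      then show ?thesis using nb_le_len[OF v] len_simps by auto
    qed
    then show "f \<in> arrow_ideal_pow 2" using J_KQ[OF f] by (simp add: arrow_ideal_pow_def)
  qed
  show "(2::nat) \<le> 9" by simp
  show "(arrow_ideal_pow 9 :: (path \<Rightarrow> 'k) set) \<subseteq> Jset"
  proof
    fix f :: "path \<Rightarrow> 'k" assume f: "f \<in> arrow_ideal_pow 9"
    have fK: "f \<in> KQ" and fl: "\<And>p. f p \<noteq> 0 \<Longrightarrow> 9 \<le> path_len p"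
      using f by (auto simp: arrow_ideal_pow_def)
    have sh: "f p = 0" if "shortp p" for p
    proof (rule ccontr)
      assume "f p \<noteq> 0"
      then have "9 \<le> path_len p" by (rule fl)
      moreover have "path_len p \<le> 7"
        using that valid_classify[of p] len_simps by (auto simp: shortp_def)
      ultimately show False by simp
    qed
    have ab: "f (abg k) = 0" if "k \<le> 6" for k
      using fl[of "abg k"] that len_simps by fastforce
    show "f \<in> Jset" unfolding Jset_def using fK sh ab by (auto simp: FF_def)
  qed
qed


theorem mainTheorem15:
  fixes I :: "(path \<Rightarrow> 'k::field) set"
  assumes char: "CHAR('k) = 0 \<or> CHAR('k) > 7"
    and I_def: "I = gen_ideal
        { bpath (Nontriv (replicate 7 Beta)),
          bpath (Nontriv [Alpha, Gamma]),
          alpha_poly_gamma (\<lambda>\<nu>. 1 / of_nat (fact \<nu>)) 6,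
          alpha_poly_gamma (\<lambda>\<nu>. 3 ^ \<nu> / of_nat (fact \<nu>)) 6 }"
  shows "quot_dim_eq I 27 \<and> admissible_ideal I
         \<and> arr_src Beta = arr_tgt Beta \<and> HH1_vanishes I"
proof -
  have chr: "chr_ok TYPE('k)" by (rule chr_from_CHAR[OF char])
  have IJ: "I = Jset" using I_def I_eq_J[OF chr] by (simp add: Sgen_def)
  show ?thesis unfolding IJ using dimJ[OF chr] admJ HH1_J[OF chr] by simp
qed

end
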